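(* Let $A$ be a commutative ring. Then there is an exact sequence of abelian groups $$0\longrightarrow \mathfrak{C}(A)\longrightarrow \mathfrak{C}(A_{\mathrm{red}})\longrightarrow \mathfrak{C}\big(T(A)_{\mathrm{red}},T(A_{\mathrm{red}})\big),$$ where $T(A)_{\mathrm{red}}$ is regarded as a subring of $T(A_{\mathrm{red}})$ via the injective map induced by $a/s\mapsto (a+\mathfrak N)/(s+\mathfrak N)$ ($\mathfrak N$ the nilradical of $A$), the first map is induced by the ring map $T(A)\to T(A_{\mathrm{red}})$, $a/s\mapsto (a+\mathfrak N)/(s+\mathfrak N)$, and the second map is induced by $L\mapsto L\,T(A)_{\mathrm{red}}$ for the tower $A_{\mathrm{red}}\subseteq T(A)_{\mathrm{red}}\subseteq T(A_{\mathrm{red}})$.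
   Context: All rings are commutative with identity; $R_{\mathrm{red}}$ is $R$ modulo its nilradical, and $T(R)$ is the total ring of fractions of $R$. For an extension of rings $R\subseteq S$ and $R$-submodules $L,L'$ of $S$, $LL'$ is the $R$-submodule of finite sums $\sum x_ky_k$. An $R$-submodule $L$ of $S$ is an invertible ideal of $R\subseteq S$ if $LL'=R$ for some $R$-submodule $L'$ of $S$; these form an abelian group $\mathscr{G}(R,S)$ and $\mathfrak{C}(R,S)=\mathscr{G}(R,S)/\{Rx:x\in S^\ast\}$. Also $\mathfrak{C}(R)=\mathfrak{C}(R,T(R))$. A morphism of extensions $\phi:(R,S)\to(R',S')$ (a ring map $\phi:S\to S'$ with $\phi(R)\subseteq R'$) induces $\mathfrak{C}(R,S)\to\mathfrak{C}(R',S')$ via $L\mapsto \phi(L)R'$. *)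

theory Defs
  imports "HOL-Algebra.Algebra"
begin

definition nilradical :: "('a, 'm) ring_scheme \<Rightarrow> 'a set" where
  "nilradical R = {a \<in> carrier R. \<exists>n::nat. a [^]\<^bsub>R\<^esub> n = \<zero>\<^bsub>R\<^esub>}"

definition reduced_ring :: "('a, 'm) ring_scheme \<Rightarrow> 'a set ring" where
  "reduced_ring R = R Quot nilradical R"

definition nzd :: "('a, 'm) ring_scheme \<Rightarrow> 'a set" where
  "nzd R = {s \<in> carrier R. \<forall>a \<in> carrier R. a \<otimes>\<^bsub>R\<^esub> s = \<zero>\<^bsub>R\<^esub> \<longrightarrow> a = \<zero>\<^bsub>R\<^esub>}"

(* (T, i) is a total ring of fractions of R: T is (up to isomorphism) the
   localization of R at its set of non-zero-divisors, with i : R -> T the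
   canonical (injective) map a |-> a/1. *)
definition total_ring_of_fractions ::
    "('a, 'm) ring_scheme \<Rightarrow> ('b, 'n) ring_scheme \<Rightarrow> ('a \<Rightarrow> 'b) \<Rightarrow> bool" where
  "total_ring_of_fractions R T i \<longleftrightarrow>
     cring T \<and> i \<in> ring_hom R T \<and> inj_on i (carrier R) \<and>
     (\<forall>s \<in> nzd R. i s \<in> Units T) \<and>
     (\<forall>x \<in> carrier T. \<exists>a \<in> carrier R. \<exists>s \<in> nzd R. x = i a \<otimes>\<^bsub>T\<^esub> inv\<^bsub>T\<^esub> (i s))"

(* Extension R \<subseteq> S, where R is a subset (subring) of carrier S. *)

definition rsubmodule :: "('b, 'n) ring_scheme \<Rightarrow> 'b set \<Rightarrow> 'b set \<Rightarrow> bool" where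
  "rsubmodule S R L \<longleftrightarrow> L \<subseteq> carrier S \<and> \<zero>\<^bsub>S\<^esub> \<in> L \<and>
     (\<forall>x \<in> L. \<forall>y \<in> L. x \<oplus>\<^bsub>S\<^esub> y \<in> L) \<and>
     (\<forall>x \<in> L. \<ominus>\<^bsub>S\<^esub> x \<in> L) \<and>
     (\<forall>r \<in> R. \<forall>x \<in> L. r \<otimes>\<^bsub>S\<^esub> x \<in> L)"

definition ideal_prod :: "('b, 'n) ring_scheme \<Rightarrow> 'b set \<Rightarrow> 'b set \<Rightarrow> 'b set" where
  "ideal_prod S L L' = {finsum S (\<lambda>k. f k \<otimes>\<^bsub>S\<^esub> g k) {..<(n::nat)} | n f g.
                     (\<forall>k<n. f k \<in> L \<and> g k \<in> L')}"

definition invertible_ideals :: "('b, 'n) ring_scheme \<Rightarrow> 'b set \<Rightarrow> 'b set set" where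
  "invertible_ideals S R =
     {L. rsubmodule S R L \<and> (\<exists>L'. rsubmodule S R L' \<and> ideal_prod S L L' = R)}"

definition inv_group :: "('b, 'n) ring_scheme \<Rightarrow> 'b set \<Rightarrow> 'b set monoid" where
  "inv_group S R = \<lparr>carrier = invertible_ideals S R, monoid.mult = ideal_prod S, monoid.one = R\<rparr>"

definition principal_ideals :: "('b, 'n) ring_scheme \<Rightarrow> 'b set \<Rightarrow> 'b set set" where
  "principal_ideals S R = {(\<lambda>r. r \<otimes>\<^bsub>S\<^esub> x) ` R | x. x \<in> Units S}"

definition class_group :: "('b, 'n) ring_scheme \<Rightarrow> 'b set \<Rightarrow> 'b set set monoid" where
  "class_group S R = inv_group S R Mod principal_ideals S R"

definition ideal_class :: "('b, 'n) ring_scheme \<Rightarrow> 'b set \<Rightarrow> 'b set \<Rightarrow> 'b set set" where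
  "ideal_class S R L = principal_ideals S R #>\<^bsub>inv_group S R\<^esub> L"

definition induced_ideal :: "('c, 'o) ring_scheme \<Rightarrow> 'c set \<Rightarrow> ('b \<Rightarrow> 'c) \<Rightarrow> 'b set \<Rightarrow> 'c set" where
  "induced_ideal S' R' \<phi> L = ideal_prod S' (\<phi> ` L) R'"

end

theory Submission
  imports Defs
begin

definition lprod :: "('b, 'n) ring_scheme \<Rightarrow> 'b list \<Rightarrow> 'b" where
  "lprod S xs = foldr (\<lambda>x y. x \<otimes>\<^bsub>S\<^esub> y) xs \<one>\<^bsub>S\<^esub>"

definition filt :: "('b, 'n) ring_scheme \<Rightarrow> 'b set \<Rightarrow> nat \<Rightarrow> 'b set" where
  "filt S E r = genideal S {lprod S xs | xs. set xs \<subseteq> E \<and> r \<le> length xs}"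

definition nilp :: "('b, 'n) ring_scheme \<Rightarrow> 'b \<Rightarrow> bool" where
  "nilp S x \<longleftrightarrow> (\<exists>m::nat. x [^]\<^bsub>S\<^esub> m = \<zero>\<^bsub>S\<^esub>)"

context cring begin

lemma lprod_Nil[simp]: "lprod R [] = \<one>" by (simp add: lprod_def)
lemma lprod_Cons[simp]: "lprod R (x # xs) = x \<otimes> lprod R xs" by (simp add: lprod_def)

lemma lprod_carrier[simp]: "set xs \<subseteq> carrier R \<Longrightarrow> lprod R xs \<in> carrier R"
  by (induction xs) auto

lemma lprod_append: "set xs \<subseteq> carrier R \<Longrightarrow> set ys \<subseteq> carrier R \<Longrightarrow>
   lprod R (xs @ ys) = lprod R xs \<otimes> lprod R ys"
  by (induction xs) (auto simp: m_assoc)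

lemma lprod_count: "set xs \<subseteq> carrier R \<Longrightarrow> x \<in> carrier R \<Longrightarrow>
   lprod R xs = x [^] count_list xs x \<otimes> lprod R (filter (\<lambda>y. y \<noteq> x) xs)"
proof (induction xs)
  case Nil then show ?case by simp
next
  case (Cons y xs)
  then have IH: "lprod R xs = x [^] count_list xs x \<otimes> lprod R (filter (\<lambda>y. y \<noteq> x) xs)" by auto
  have c: "set (filter (\<lambda>y. y \<noteq> x) xs) \<subseteq> carrier R" using Cons by auto
  show ?case
  proof (cases "y = x")
    case True
    then show ?thesis using Cons IH c
      by (simp add: nat_pow_Suc2 m_assoc m_lcomm)
  next
    case False
    then show ?thesis using Cons IH c
      by (simp add: m_lcomm)
  qed
qed

lemma nilp_pow_ge: "x \<in> carrier R \<Longrightarrow> x [^] (m::nat) = \<zero> \<Longrightarrow> m \<le> k \<Longrightarrow> x [^] k = \<zero>"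
proof -
  assume a: "x \<in> carrier R" "x [^] m = \<zero>" "m \<le> k"
  have "x [^] m \<otimes> x [^] (k - m) = x [^] k" using nat_pow_mult[of x m "k - m"] a(1,3) by simp
  then show ?thesis using a by simp
qed

lemma lprod_zero:
  assumes E: "E \<subseteq> carrier R" "finite E" and p: "\<And>e. e \<in> E \<Longrightarrow> e [^] (p::nat) = \<zero>"
    and xs: "set xs \<subseteq> E" "card E * p < length xs"
  shows "lprod R xs = \<zero>"
proof -
  have "\<exists>x\<in>E. p \<le> count_list xs x"
  proof (rule ccontr)
    assume "\<not> ?thesis"
    then have "\<forall>x\<in>E. count_list xs x < p" by auto
    then have "sum (count_list xs) E \<le> card E * p"
      using sum_mono[of E "count_list xs" "\<lambda>_. p"] E by fastforce
    moreover have "sum (count_list xs) E = length xs" using sum_count_set xs E by blast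
    ultimately show False using xs by auto
  qed
  then obtain x where x: "x \<in> E" "p \<le> count_list xs x" by blast
  have "x [^] count_list xs x = \<zero>" using nilp_pow_ge[OF _ p x(2)] x E by auto
  moreover have "set xs \<subseteq> carrier R" using xs E by auto
  moreover have "x \<in> carrier R" using x E by auto
  moreover have "lprod R (filter (\<lambda>y. y \<noteq> x) xs) \<in> carrier R"
    using \<open>set xs \<subseteq> carrier R\<close> by (intro lprod_carrier) auto
  ultimately show ?thesis using lprod_count[of xs x] by simp
qed

lemma filt_ideal: "E \<subseteq> carrier R \<Longrightarrow> ideal (filt R E r) R"
  unfolding filt_def by (rule genideal_ideal) auto

lemma filt_gen: "E \<subseteq> carrier R \<Longrightarrow> set xs \<subseteq> E \<Longrightarrow> r \<le> length xs \<Longrightarrow> lprod R xs \<in> filt R E r"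
proof -
  assume a: "E \<subseteq> carrier R" "set xs \<subseteq> E" "r \<le> length xs"
  have "{lprod R xs | xs. set xs \<subseteq> E \<and> r \<le> length xs} \<subseteq> carrier R"
    using a(1) by (auto intro!: lprod_carrier)
  from genideal_self[OF this] show ?thesis unfolding filt_def using a by blast
qed

lemma filt_carrier: "E \<subseteq> carrier R \<Longrightarrow> filt R E r \<subseteq> carrier R"
  using ideal.Icarr[OF filt_ideal] by blast

lemma filt_mono: assumes "E \<subseteq> carrier R" "r \<le> s" shows "filt R E s \<subseteq> filt R E r"
  unfolding filt_def[of _ _ s]
proof (rule genideal_minimal[OF filt_ideal[OF assms(1)]])
  show "{lprod R xs |xs. set xs \<subseteq> E \<and> s \<le> length xs} \<subseteq> filt R E r"
  proof
    fix x assume "x \<in> {lprod R xs |xs. set xs \<subseteq> E \<and> s \<le> length xs}"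
    then obtain xs where "x = lprod R xs" "set xs \<subseteq> E" "s \<le> length xs" by blast
    then show "x \<in> filt R E r" using filt_gen[OF assms(1), of xs r] assms(2) by simp
  qed
qed

lemma colon_ideal:
  assumes I: "ideal I R" and y: "y \<in> carrier R"
  shows "ideal {x \<in> carrier R. x \<otimes> y \<in> I} R"
proof (rule idealI)
  show "ring R" by (rule ring_axioms)
  show "subgroup {x \<in> carrier R. x \<otimes> y \<in> I} (add_monoid R)"
  proof (rule add.subgroupI)
    show "{x \<in> carrier R. x \<otimes> y \<in> I} \<subseteq> carrier R" by auto
    show "{x \<in> carrier R. x \<otimes> y \<in> I} \<noteq> {}"
    proof -
      have "\<zero> \<otimes> y = \<zero>" using y by simp
      moreover have "\<zero> \<in> I" using I by (simp add: additive_subgroup.zero_closed ideal.axioms(1))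
      ultimately show ?thesis by force
    qed
    show "\<And>a. a \<in> {x \<in> carrier R. x \<otimes> y \<in> I} \<Longrightarrow> \<ominus> a \<in> {x \<in> carrier R. x \<otimes> y \<in> I}"
      using y I by (simp add: l_minus additive_subgroup.a_inv_closed[OF ideal.axioms(1)[OF I]])
    show "\<And>a b. a \<in> {x \<in> carrier R. x \<otimes> y \<in> I} \<Longrightarrow> b \<in> {x \<in> carrier R. x \<otimes> y \<in> I} \<Longrightarrow> a \<oplus> b \<in> {x \<in> carrier R. x \<otimes> y \<in> I}"
      using y I by (simp add: l_distr additive_subgroup.a_closed[OF ideal.axioms(1)[OF I]])
  qed
  show "\<And>a x. a \<in> {x \<in> carrier R. x \<otimes> y \<in> I} \<Longrightarrow> x \<in> carrier R \<Longrightarrow> x \<otimes> a \<in> {x \<in> carrier R. x \<otimes> y \<in> I}"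
    using y I by (simp add: m_assoc ideal.I_l_closed)
  then show "\<And>a x. a \<in> {x \<in> carrier R. x \<otimes> y \<in> I} \<Longrightarrow> x \<in> carrier R \<Longrightarrow> a \<otimes> x \<in> {x \<in> carrier R. x \<otimes> y \<in> I}"
    using m_comm by simp
qed

lemma filt_mult:
  assumes E: "E \<subseteq> carrier R" and a: "a \<in> filt R E r" and b: "b \<in> filt R E s"
  shows "a \<otimes> b \<in> filt R E (r + s)"
proof -
  let ?I = "filt R E (r+s)"
  have I: "ideal ?I R" using filt_ideal E by blast
  have gen: "lprod R xs \<otimes> lprod R ys \<in> ?I"
    if xs: "set xs \<subseteq> E" "r \<le> length xs" and ys: "set ys \<subseteq> E" "s \<le> length ys" for xs ys
  proof -
    have "lprod R (xs @ ys) \<in> ?I" using xs ys by (intro filt_gen[OF E]) auto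
    moreover have "lprod R (xs @ ys) = lprod R xs \<otimes> lprod R ys"
      using xs ys E by (intro lprod_append) auto
    ultimately show ?thesis by simp
  qed
  have step1: "a \<otimes> lprod R ys \<in> ?I" if ys: "set ys \<subseteq> E" "s \<le> length ys" for ys
  proof -
    have yc: "lprod R ys \<in> carrier R" using ys E by auto
    have "filt R E r \<subseteq> {x \<in> carrier R. x \<otimes> lprod R ys \<in> ?I}"
      unfolding filt_def[of _ _ r]
      by (rule genideal_minimal[OF colon_ideal[OF I yc]]) (use gen ys E in auto)
    then show "a \<otimes> lprod R ys \<in> ?I" using a by auto
  qed
  have ac: "a \<in> carrier R" using a filt_carrier E by auto
  have "filt R E s \<subseteq> {y \<in> carrier R. y \<otimes> a \<in> ?I}"
    unfolding filt_def[of _ _ s]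
    by (rule genideal_minimal[OF colon_ideal[OF I ac]]) (use step1 E ac in \<open>auto simp: m_comm\<close>)
  then show ?thesis using b ac m_comm by auto
qed

lemma filt_zero:
  assumes E: "E \<subseteq> carrier R" "finite E" and p: "\<And>e. e \<in> E \<Longrightarrow> e [^] (p::nat) = \<zero>"
  shows "filt R E (Suc (card E * p)) = {\<zero>}"
proof -
  have "filt R E (Suc (card E * p)) \<subseteq> {\<zero>}"
    unfolding filt_def
    by (rule genideal_minimal[OF zeroideal]) (use lprod_zero[OF E p] in auto)
  moreover have "\<zero> \<in> filt R E (Suc (card E * p))"
    using filt_ideal[OF E(1)] additive_subgroup.zero_closed ideal.axioms(1) by blast
  ultimately show ?thesis by auto
qed

lemma filt_self: "E \<subseteq> carrier R \<Longrightarrow> e \<in> E \<Longrightarrow> e \<in> filt R E 1"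
  using filt_gen[of E "[e]" 1] by auto

lemma filt_pow: "E \<subseteq> carrier R \<Longrightarrow> x \<in> filt R E 1 \<Longrightarrow> x [^] (k::nat) \<in> filt R E k"
proof (induction k)
  case 0 then show ?case using filt_gen[of E "[]" 0] by simp
next
  case (Suc k)
  then show ?case using filt_mult[of E "x [^] k" k x 1] by simp
qed

lemma filt_nilp:
  assumes E: "E \<subseteq> carrier R" "finite E" and p: "\<And>e. e \<in> E \<Longrightarrow> e [^] (p::nat) = \<zero>"
    and x: "x \<in> filt R E 1"
  shows "x [^] (Suc (card E * p)) = \<zero>"
  using filt_pow[OF E(1) x, of "Suc (card E * p)"] filt_zero[OF E p] by auto

end

context cring begin

lemma nilp_mult:
  assumes x: "x \<in> carrier R" "x [^] (m::nat) = \<zero>" and a: "a \<in> carrier R"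
  shows "(a \<otimes> x) [^] m = \<zero>"
  using pow_mult_distrib[of a x m] x a m_comm by simp

lemma geom_sum: "y \<in> carrier R \<Longrightarrow>
  (\<one> \<ominus> y) \<otimes> finsum R (\<lambda>i. y [^] i) {..<(m::nat)} = \<one> \<ominus> y [^] m"
proof (induction m)
  case 0 then show ?case by (simp add: minus_eq r_neg)
next
  case (Suc m)
  have c: "finsum R (\<lambda>i. y [^] i) {..<m} \<in> carrier R" using Suc by (intro finsum_closed) auto
  have "finsum R (\<lambda>i. y [^] i) {..<Suc m} = y [^] m \<oplus> finsum R (\<lambda>i. y [^] i) {..<m}"
    using Suc by (simp add: lessThan_Suc finsum_insert)
  then have "(\<one> \<ominus> y) \<otimes> finsum R (\<lambda>i. y [^] i) {..<Suc m} =
     (\<one> \<ominus> y) \<otimes> y [^] m \<oplus> (\<one> \<ominus> y) \<otimes> finsum R (\<lambda>i. y [^] i) {..<m}" using Suc c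
    by (simp add: r_distr)
  also have "\<dots> = (\<one> \<ominus> y) \<otimes> y [^] m \<oplus> (\<one> \<ominus> y [^] m)" using Suc by simp
  also have "\<dots> = \<one> \<ominus> y [^] m \<otimes> y"
  proof -
    have "y [^] m \<in> carrier R" using Suc by simp
    then show ?thesis using Suc by algebra
  qed
  finally show ?case using Suc by (simp add: nat_pow_Suc)
qed

lemma nilp_one_plus_unit:
  assumes x: "x \<in> carrier R" and m: "x [^] (m::nat) = \<zero>"
  shows "\<one> \<oplus> x \<in> Units R"
proof -
  let ?y = "\<ominus> x"
  have y: "?y \<in> carrier R" using x by simp
  have "((\<ominus> \<one>) \<otimes> x) [^] m = \<zero>" using nilp_mult[OF x m, of "\<ominus> \<one>"] by simp
  then have ym: "?y [^] m = \<zero>" using x by (simp add: l_minus)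
  let ?s = "finsum R (\<lambda>i. ?y [^] i) {..<m}"
  have s: "?s \<in> carrier R" using y by (intro finsum_closed) auto
  have "(\<one> \<ominus> ?y) \<otimes> ?s = \<one>" using geom_sum[OF y, of m] ym by (simp add: minus_eq)
  moreover have "\<one> \<ominus> ?y = \<one> \<oplus> x" using x by (simp add: minus_eq)
  ultimately have e: "(\<one> \<oplus> x) \<otimes> ?s = \<one>" by simp
  then have "?s \<otimes> (\<one> \<oplus> x) = \<one>" using s x m_comm by simp
  then show ?thesis using e s x unfolding Units_def by auto
qed

lemma nilp_sum:
  assumes x: "x \<in> carrier R" "x [^] (m::nat) = \<zero>" and y: "y \<in> carrier R" "y [^] (m'::nat) = \<zero>"
  shows "\<exists>k::nat. (x \<oplus> y) [^] k = \<zero>"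
proof -
  let ?E = "{x, y}"
  have E: "?E \<subseteq> carrier R" "finite ?E" using x y by auto
  have p: "\<And>e. e \<in> ?E \<Longrightarrow> e [^] (m + m') = \<zero>"
    using nilp_pow_ge x y by auto
  have I: "ideal (filt R ?E 1) R" using filt_ideal E by blast
  have "x \<oplus> y \<in> filt R ?E 1" using filt_self[OF E(1)] I
    by (simp add: additive_subgroup.a_closed ideal.axioms(1))
  then show ?thesis using filt_nilp[OF E p] by blast
qed

lemma nilradical_ideal: "ideal (nilradical R) R"
proof (rule idealI)
  show "ring R" by (rule ring_axioms)
  show "subgroup (nilradical R) (add_monoid R)"
  proof (rule add.subgroupI)
    show "nilradical R \<subseteq> carrier R" unfolding nilradical_def by auto
    show "nilradical R \<noteq> {}"
    proof -
      have "\<zero> [^] (1::nat) = \<zero>" by simp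
      then have "\<zero> \<in> nilradical R" unfolding nilradical_def by blast
      then show ?thesis by blast
    qed
    show "\<ominus> a \<in> nilradical R" if aN: "a \<in> nilradical R" for a
    proof -
      obtain m where "a \<in> carrier R" "a [^] (m::nat) = \<zero>" using aN unfolding nilradical_def by blast
      then have "((\<ominus> \<one>) \<otimes> a) [^] m = \<zero>" using nilp_mult by simp
      moreover have "(\<ominus> \<one>) \<otimes> a = \<ominus> a" using \<open>a \<in> carrier R\<close> by (simp add: l_minus)
      ultimately show ?thesis unfolding nilradical_def using \<open>a \<in> carrier R\<close> by auto
    qed
    show "a \<oplus> b \<in> nilradical R" if "a \<in> nilradical R" "b \<in> nilradical R" for a b
      using that nilp_sum unfolding nilradical_def by auto
  qed
  show "x \<otimes> a \<in> nilradical R" if "a \<in> nilradical R" "x \<in> carrier R" for a x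
    using that nilp_mult unfolding nilradical_def by auto
  then show "a \<otimes> x \<in> nilradical R" if "a \<in> nilradical R" "x \<in> carrier R" for a x
    using that m_comm unfolding nilradical_def by auto
qed

lemma nilradical_one_plus:
  assumes "n \<in> nilradical R" shows "\<one> \<oplus> n \<in> Units R"
  using assms nilp_one_plus_unit unfolding nilradical_def by auto

lemma IP_mem: "z \<in> ideal_prod R U V \<longleftrightarrow>
  (\<exists>n f g. z = finsum R (\<lambda>k. f k \<otimes> g k) {..<(n::nat)} \<and> (\<forall>k<n. f k \<in> U \<and> g k \<in> V))"
  unfolding ideal_prod_def by blast

lemma IP_zero: "\<zero> \<in> ideal_prod R U V"
  unfolding IP_mem by (rule exI[of _ 0]) simp

lemma IP_add_prod:
  assumes UV: "U \<subseteq> carrier R" "V \<subseteq> carrier R"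
    and a: "a \<in> ideal_prod R U V" and x: "x \<in> U" and y: "y \<in> V"
  shows "a \<oplus> x \<otimes> y \<in> ideal_prod R U V"
proof -
  obtain n f g where a: "a = finsum R (\<lambda>k. f k \<otimes> g k) {..<(n::nat)}" and fg: "\<forall>k<n. f k \<in> U \<and> g k \<in> V"
    using a unfolding IP_mem by blast
  let ?f = "f(n := x)" and ?g = "g(n := y)"
  have fg': "\<forall>k<Suc n. ?f k \<in> U \<and> ?g k \<in> V" using fg x y by auto
  have cf: "(\<lambda>k. ?f k \<otimes> ?g k) \<in> {..<n} \<rightarrow> carrier R" using fg UV by (auto simp: subsetD)
  have cf2: "(\<lambda>k. f k \<otimes> g k) \<in> {..<n} \<rightarrow> carrier R" using fg UV by (auto simp: subsetD)
  have xy: "x \<otimes> y \<in> carrier R" using x y UV by (simp add: subsetD)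
  have "finsum R (\<lambda>k. ?f k \<otimes> ?g k) {..<Suc n} = ?f n \<otimes> ?g n \<oplus> finsum R (\<lambda>k. ?f k \<otimes> ?g k) {..<n}"
    using cf xy by (simp add: lessThan_Suc finsum_insert)
  also have "finsum R (\<lambda>k. ?f k \<otimes> ?g k) {..<n} = a"
    unfolding a by (rule finsum_cong) (use cf2 in auto)
  finally have "finsum R (\<lambda>k. ?f k \<otimes> ?g k) {..<Suc n} = a \<oplus> x \<otimes> y"
    using xy a cf2 by (simp add: a_comm finsum_closed)
  then show ?thesis unfolding IP_mem using fg' by metis
qed

lemma IP_induct:
  assumes UV: "U \<subseteq> carrier R" "V \<subseteq> carrier R" and z: "z \<in> ideal_prod R U V"
    and P0: "P \<zero>"
    and PS: "\<And>a x y. a \<in> ideal_prod R U V \<Longrightarrow> P a \<Longrightarrow> x \<in> U \<Longrightarrow> y \<in> V \<Longrightarrow> P (a \<oplus> x \<otimes> y)"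
  shows "P z"
proof -
  obtain n f g where zz: "z = finsum R (\<lambda>k. f k \<otimes> g k) {..<(n::nat)}" and fg: "\<forall>k<n. f k \<in> U \<and> g k \<in> V"
    using z unfolding IP_mem by blast
  have "\<forall>k<n. f k \<in> U \<and> g k \<in> V \<Longrightarrow> finsum R (\<lambda>k. f k \<otimes> g k) {..<n} \<in> ideal_prod R U V \<and> P (finsum R (\<lambda>k. f k \<otimes> g k) {..<n})"
  proof (induction n)
    case 0 then show ?case using P0 IP_zero by simp
  next
    case (Suc n)
    then have IH: "finsum R (\<lambda>k. f k \<otimes> g k) {..<n} \<in> ideal_prod R U V \<and> P (finsum R (\<lambda>k. f k \<otimes> g k) {..<n})" by auto
    have fn: "f n \<in> U" "g n \<in> V" using Suc by auto
    have cf: "(\<lambda>k. f k \<otimes> g k) \<in> {..<n} \<rightarrow> carrier R" using Suc.prems UV by (auto simp: subsetD)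
    have fnc: "f n \<otimes> g n \<in> carrier R" using fn UV by (simp add: subsetD)
    have cs: "finsum R (\<lambda>k. f k \<otimes> g k) {..<n} \<in> carrier R" using cf by (intro finsum_closed)
    have "finsum R (\<lambda>k. f k \<otimes> g k) {..<Suc n} = finsum R (\<lambda>k. f k \<otimes> g k) {..<n} \<oplus> f n \<otimes> g n"
      using cf fnc cs by (simp add: lessThan_Suc finsum_insert a_comm)
    then show ?case using IH fn PS IP_add_prod[OF UV] by simp
  qed
  then show ?thesis using fg zz by simp
qed

lemma IP_carrier: assumes UV: "U \<subseteq> carrier R" "V \<subseteq> carrier R" shows "ideal_prod R U V \<subseteq> carrier R"
proof
  fix z assume z: "z \<in> ideal_prod R U V"
  show "z \<in> carrier R"
    by (rule IP_induct[OF UV z, where P = "\<lambda>z. z \<in> carrier R"]) (use UV in \<open>auto simp: subsetD\<close>)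
qed

lemma IP_minimal:
  assumes UV: "U \<subseteq> carrier R" "V \<subseteq> carrier R"
    and W0: "\<zero> \<in> W" and WS: "\<And>a x y. a \<in> W \<Longrightarrow> x \<in> U \<Longrightarrow> y \<in> V \<Longrightarrow> a \<oplus> x \<otimes> y \<in> W"
  shows "ideal_prod R U V \<subseteq> W"
proof
  fix z assume z: "z \<in> ideal_prod R U V"
  show "z \<in> W"
    by (rule IP_induct[OF UV z, where P = "\<lambda>z. z \<in> W"]) (use W0 WS in auto)
qed

lemma IP_prod:
  assumes UV: "U \<subseteq> carrier R" "V \<subseteq> carrier R" and x: "x \<in> U" and y: "y \<in> V"
  shows "x \<otimes> y \<in> ideal_prod R U V"
proof -
  have "\<zero> \<oplus> x \<otimes> y \<in> ideal_prod R U V" by (rule IP_add_prod[OF UV IP_zero x y])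
  moreover have "x \<otimes> y \<in> carrier R" using UV x y by (simp add: subsetD)
  ultimately show ?thesis by simp
qed

lemma IP_add:
  assumes UV: "U \<subseteq> carrier R" "V \<subseteq> carrier R"
    and a: "a \<in> ideal_prod R U V" and b: "b \<in> ideal_prod R U V"
  shows "a \<oplus> b \<in> ideal_prod R U V"
proof -
  have ac: "a \<in> carrier R" using a IP_carrier[OF UV] by auto
  show ?thesis
  proof (rule IP_induct[OF UV b, where P = "\<lambda>b. a \<oplus> b \<in> ideal_prod R U V"])
    show "a \<oplus> \<zero> \<in> ideal_prod R U V" using ac a by simp
  next
    fix b x y assume st: "b \<in> ideal_prod R U V" "a \<oplus> b \<in> ideal_prod R U V" "x \<in> U" "y \<in> V"
    have bc: "b \<in> carrier R" using st IP_carrier[OF UV] by auto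
    have "a \<oplus> (b \<oplus> x \<otimes> y) = (a \<oplus> b) \<oplus> x \<otimes> y" using ac bc st UV by (simp add: a_assoc subsetD)
    then show "a \<oplus> (b \<oplus> x \<otimes> y) \<in> ideal_prod R U V" using IP_add_prod[OF UV st(2) st(3) st(4)] by simp
  qed
qed

lemma IP_minimal2:
  assumes UV: "U \<subseteq> carrier R" "V \<subseteq> carrier R"
    and W0: "\<zero> \<in> W" and Wadd: "\<And>a b. a \<in> W \<Longrightarrow> b \<in> W \<Longrightarrow> a \<oplus> b \<in> W"
    and Wp: "\<And>x y. x \<in> U \<Longrightarrow> y \<in> V \<Longrightarrow> x \<otimes> y \<in> W"
  shows "ideal_prod R U V \<subseteq> W"
  using IP_minimal[OF UV W0] Wadd Wp by blast

lemma IP_mono: "U \<subseteq> U' \<Longrightarrow> V \<subseteq> V' \<Longrightarrow> ideal_prod R U V \<subseteq> ideal_prod R U' V'"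
  unfolding ideal_prod_def by blast

lemma IP_comm_sub: assumes UV: "U \<subseteq> carrier R" "V \<subseteq> carrier R"
  shows "ideal_prod R U V \<subseteq> ideal_prod R V U"
proof (rule IP_minimal2[OF UV])
  show "\<zero> \<in> ideal_prod R V U" by (rule IP_zero)
  show "a \<oplus> b \<in> ideal_prod R V U" if "a \<in> ideal_prod R V U" "b \<in> ideal_prod R V U" for a b
    using IP_add[OF UV(2,1) that] .
  show "x \<otimes> y \<in> ideal_prod R V U" if "x \<in> U" "y \<in> V" for x y
    using IP_prod[OF UV(2,1) that(2,1)] that UV by (simp add: m_comm subsetD)
qed

lemma IP_comm: "U \<subseteq> carrier R \<Longrightarrow> V \<subseteq> carrier R \<Longrightarrow> ideal_prod R U V = ideal_prod R V U"
  using IP_comm_sub by blast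

lemma IP_assoc_sub:
  assumes UVW: "U \<subseteq> carrier R" "V \<subseteq> carrier R" "W \<subseteq> carrier R"
  shows "ideal_prod R (ideal_prod R U V) W \<subseteq> ideal_prod R U (ideal_prod R V W)"
proof -
  have VW: "ideal_prod R V W \<subseteq> carrier R" using IP_carrier UVW by auto
  have UV: "ideal_prod R U V \<subseteq> carrier R" using IP_carrier UVW by auto
  have key: "w \<otimes> z \<in> ideal_prod R U (ideal_prod R V W)" if w: "w \<in> ideal_prod R U V" and z: "z \<in> W" for w z
  proof (rule IP_induct[OF UVW(1,2) w, where P = "\<lambda>w. w \<otimes> z \<in> ideal_prod R U (ideal_prod R V W)"])
    show "\<zero> \<otimes> z \<in> ideal_prod R U (ideal_prod R V W)" using z UVW by (simp add: subsetD IP_zero)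
  next
    fix a x y assume st: "a \<in> ideal_prod R U V" "a \<otimes> z \<in> ideal_prod R U (ideal_prod R V W)" "x \<in> U" "y \<in> V"
    have ac: "a \<in> carrier R" using st UV by auto
    have "(a \<oplus> x \<otimes> y) \<otimes> z = a \<otimes> z \<oplus> x \<otimes> (y \<otimes> z)"
      using ac st z UVW by (simp add: l_distr m_assoc subsetD)
    moreover have "y \<otimes> z \<in> ideal_prod R V W" using IP_prod UVW st z by auto
    ultimately show "(a \<oplus> x \<otimes> y) \<otimes> z \<in> ideal_prod R U (ideal_prod R V W)"
      using IP_add_prod[OF UVW(1) VW st(2) st(3)] by simp
  qed
  show ?thesis
  proof (rule IP_minimal2[OF UV UVW(3)])
    show "\<zero> \<in> ideal_prod R U (ideal_prod R V W)" by (rule IP_zero)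
    show "a \<oplus> b \<in> ideal_prod R U (ideal_prod R V W)" if "a \<in> ideal_prod R U (ideal_prod R V W)" "b \<in> ideal_prod R U (ideal_prod R V W)" for a b
      using IP_add[OF UVW(1) VW that] .
    show "x \<otimes> y \<in> ideal_prod R U (ideal_prod R V W)" if "x \<in> ideal_prod R U V" "y \<in> W" for x y
      using key that .
  qed
qed

lemma IP_assoc:
  assumes UVW: "U \<subseteq> carrier R" "V \<subseteq> carrier R" "W \<subseteq> carrier R"
  shows "ideal_prod R (ideal_prod R U V) W = ideal_prod R U (ideal_prod R V W)"
proof
  show "ideal_prod R (ideal_prod R U V) W \<subseteq> ideal_prod R U (ideal_prod R V W)" using IP_assoc_sub UVW by blast
  have c: "ideal_prod R V W \<subseteq> carrier R" "ideal_prod R W V \<subseteq> carrier R" "ideal_prod R U V \<subseteq> carrier R"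
     "ideal_prod R V U \<subseteq> carrier R" using IP_carrier UVW by auto
  have "ideal_prod R U (ideal_prod R V W) = ideal_prod R (ideal_prod R W V) U"
    using IP_comm[OF UVW(1) c(1)] IP_comm[OF UVW(2,3)] by simp
  also have "\<dots> \<subseteq> ideal_prod R W (ideal_prod R V U)" using IP_assoc_sub UVW by blast
  also have "\<dots> = ideal_prod R (ideal_prod R U V) W"
    using IP_comm[OF UVW(3) c(4)] IP_comm[OF UVW(1,2)] by simp
  finally show "ideal_prod R U (ideal_prod R V W) \<subseteq> ideal_prod R (ideal_prod R U V) W" .
qed

lemma IP_rsub:
  assumes K: "K \<subseteq> carrier R" and U: "rsubmodule R K U" and V: "V \<subseteq> carrier R"
  shows "rsubmodule R K (ideal_prod R U V)"
proof -
  have Uc: "U \<subseteq> carrier R" using U unfolding rsubmodule_def by auto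
  have Un: "\<And>x. x \<in> U \<Longrightarrow> \<ominus> x \<in> U" and Uk: "\<And>r x. r \<in> K \<Longrightarrow> x \<in> U \<Longrightarrow> r \<otimes> x \<in> U"
    using U unfolding rsubmodule_def by auto
  have C: "ideal_prod R U V \<subseteq> carrier R" using IP_carrier Uc V by auto
  have neg: "\<ominus> z \<in> ideal_prod R U V" if z: "z \<in> ideal_prod R U V" for z
  proof (rule IP_induct[OF Uc V z, where P = "\<lambda>z. \<ominus> z \<in> ideal_prod R U V"])
    show "\<ominus> \<zero> \<in> ideal_prod R U V" using IP_zero by simp
  next
    fix a x y assume st: "a \<in> ideal_prod R U V" "\<ominus> a \<in> ideal_prod R U V" "x \<in> U" "y \<in> V"
    have ac: "a \<in> carrier R" using st C by auto
    have "\<ominus> (a \<oplus> x \<otimes> y) = \<ominus> a \<oplus> (\<ominus> x) \<otimes> y" using ac st Uc V by (simp add: minus_add l_minus subsetD)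
    then show "\<ominus> (a \<oplus> x \<otimes> y) \<in> ideal_prod R U V"
      using IP_add_prod[OF Uc V st(2) Un[OF st(3)] st(4)] by simp
  qed
  have sc: "r \<otimes> z \<in> ideal_prod R U V" if r: "r \<in> K" and z: "z \<in> ideal_prod R U V" for r z
  proof (rule IP_induct[OF Uc V z, where P = "\<lambda>z. r \<otimes> z \<in> ideal_prod R U V"])
    show "r \<otimes> \<zero> \<in> ideal_prod R U V" using IP_zero r K by (simp add: subsetD)
  next
    fix a x y assume st: "a \<in> ideal_prod R U V" "r \<otimes> a \<in> ideal_prod R U V" "x \<in> U" "y \<in> V"
    have ac: "a \<in> carrier R" using st C by auto
    have "r \<otimes> (a \<oplus> x \<otimes> y) = r \<otimes> a \<oplus> (r \<otimes> x) \<otimes> y" using ac st Uc V r K by (simp add: r_distr m_assoc subsetD)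
    then show "r \<otimes> (a \<oplus> x \<otimes> y) \<in> ideal_prod R U V"
      using IP_add_prod[OF Uc V st(2) Uk[OF r st(3)] st(4)] by simp
  qed
  show ?thesis unfolding rsubmodule_def using C IP_zero IP_add[OF Uc V] neg sc by blast
qed

lemma IP_rsub2:
  assumes K: "K \<subseteq> carrier R" and U: "U \<subseteq> carrier R" and V: "rsubmodule R K V"
  shows "rsubmodule R K (ideal_prod R U V)"
proof -
  have Vc: "V \<subseteq> carrier R" using V unfolding rsubmodule_def by auto
  show ?thesis using IP_rsub[OF K V U] IP_comm[OF U Vc] by simp
qed

lemma rsub_IP_sub:
  assumes K: "subring K R" and U: "rsubmodule R K U"
  shows "ideal_prod R K U \<subseteq> U"
proof (rule IP_minimal2)
  show "K \<subseteq> carrier R" using subringE(1)[OF K] .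
  show "U \<subseteq> carrier R" "\<zero> \<in> U" using U unfolding rsubmodule_def by auto
  show "a \<oplus> b \<in> U" if "a \<in> U" "b \<in> U" for a b using U that unfolding rsubmodule_def by auto
  show "x \<otimes> y \<in> U" if "x \<in> K" "y \<in> U" for x y using U that unfolding rsubmodule_def by auto
qed

lemma rsub_IP:
  assumes K: "subring K R" and U: "rsubmodule R K U"
  shows "ideal_prod R K U = U"
proof
  show "ideal_prod R K U \<subseteq> U" using rsub_IP_sub[OF assms] .
  show "U \<subseteq> ideal_prod R K U"
  proof
    fix x assume x: "x \<in> U"
    have Kc: "K \<subseteq> carrier R" "\<one> \<in> K" using subringE[OF K] by auto
    have Uc: "U \<subseteq> carrier R" using U unfolding rsubmodule_def by auto
    have "\<one> \<otimes> x \<in> ideal_prod R K U" using IP_prod[OF Kc(1) Uc Kc(2) x] .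
    then show "x \<in> ideal_prod R K U" using x Uc by (simp add: subsetD)
  qed
qed

lemma subring_rsub: "subring K R \<Longrightarrow> rsubmodule R K K"
  using subringE[of K R] unfolding rsubmodule_def by auto

end

definition qmap :: "('x, 'm1) monoid_scheme \<Rightarrow> 'x set \<Rightarrow> ('y, 'm2) monoid_scheme \<Rightarrow> 'y set \<Rightarrow> ('x \<Rightarrow> 'y) \<Rightarrow> 'x set \<Rightarrow> 'y set"
  where "qmap G H G' H' \<psi> Q1 = r_coset G' H' (\<psi> (SOME a. a \<in> carrier G \<and> Q1 = r_coset G H a))"

lemma qmap_eval:
  assumes G: "group G" and G': "group G'" and H: "subgroup H G" and H': "subgroup H' G'"
    and psi: "\<psi> \<in> hom G G'" and HH: "\<psi> ` H \<subseteq> H'" and a: "a \<in> carrier G"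
  shows "qmap G H G' H' \<psi> (H #>\<^bsub>G\<^esub> a) = H' #>\<^bsub>G'\<^esub> \<psi> a"
proof -
  interpret gh: group_hom G G' \<psi> using G G' psi by (simp add: group_hom.intro group_hom_axioms.intro)
  define b where "b = (SOME b. b \<in> carrier G \<and> H #>\<^bsub>G\<^esub> a = H #>\<^bsub>G\<^esub> b)"
  have "\<exists>b. b \<in> carrier G \<and> H #>\<^bsub>G\<^esub> a = H #>\<^bsub>G\<^esub> b" using a by blast
  then have b: "b \<in> carrier G" "H #>\<^bsub>G\<^esub> a = H #>\<^bsub>G\<^esub> b" unfolding b_def by (metis (mono_tags, lifting) someI_ex)+
  have "a \<in> H #>\<^bsub>G\<^esub> b" using b group.rcos_self[OF G a H] by simp
  then have "a \<otimes>\<^bsub>G\<^esub> inv\<^bsub>G\<^esub> b \<in> H" using subgroup.rcos_module_imp[OF H G b(1)] by simp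
  then have "\<psi> (a \<otimes>\<^bsub>G\<^esub> inv\<^bsub>G\<^esub> b) \<in> H'" using HH by auto
  then have "\<psi> a \<otimes>\<^bsub>G'\<^esub> inv\<^bsub>G'\<^esub> \<psi> b \<in> H'" using a b by simp
  then have "\<psi> a \<in> H' #>\<^bsub>G'\<^esub> \<psi> b" using subgroup.rcos_module_rev[OF H' G'] a b by simp
  then have "H' #>\<^bsub>G'\<^esub> \<psi> b = H' #>\<^bsub>G'\<^esub> \<psi> a" using group.repr_independence[OF G' _ _ H'] b by simp
  then show ?thesis unfolding qmap_def b_def by simp
qed

lemma qmap_hom:
  assumes G: "comm_group G" and G': "comm_group G'" and H: "subgroup H G" and H': "subgroup H' G'"
    and psi: "\<psi> \<in> hom G G'" and HH: "\<psi> ` H \<subseteq> H'"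
  shows "qmap G H G' H' \<psi> \<in> hom (G Mod H) (G' Mod H')"
proof -
  interpret G: comm_group G by fact
  interpret G': comm_group G' by fact
  have nH: "H \<lhd> G" using G.subgroup_imp_normal H by blast
  have nH': "H' \<lhd> G'" using G'.subgroup_imp_normal H' by blast
  interpret gh: group_hom G G' \<psi> using psi by (simp add: group_hom.intro group_hom_axioms.intro G.is_group G'.is_group)
  have ev: "\<And>a. a \<in> carrier G \<Longrightarrow> qmap G H G' H' \<psi> (H #>\<^bsub>G\<^esub> a) = H' #>\<^bsub>G'\<^esub> \<psi> a"
    using qmap_eval[OF G.is_group G'.is_group H H' psi HH] by blast
  show ?thesis
  proof (rule homI)
    fix Q1 assume "Q1 \<in> carrier (G Mod H)"
    then obtain a where a: "a \<in> carrier G" "Q1 = H #>\<^bsub>G\<^esub> a" unfolding FactGroup_def RCOSETS_def by auto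
    then show "qmap G H G' H' \<psi> Q1 \<in> carrier (G' Mod H')"
      using ev a G'.rcosetsI[OF subgroup.subset[OF H'] gh.hom_closed[OF a(1)]] by (simp add: FactGroup_def)
  next
    fix Q1 Q2 assume "Q1 \<in> carrier (G Mod H)" "Q2 \<in> carrier (G Mod H)"
    then obtain a b where a: "a \<in> carrier G" "Q1 = H #>\<^bsub>G\<^esub> a" and b: "b \<in> carrier G" "Q2 = H #>\<^bsub>G\<^esub> b"
      unfolding FactGroup_def RCOSETS_def by auto
    have "Q1 \<otimes>\<^bsub>G Mod H\<^esub> Q2 = H #>\<^bsub>G\<^esub> (a \<otimes>\<^bsub>G\<^esub> b)" using a b normal.rcos_sum[OF nH] by (simp add: FactGroup_def)
    then have "qmap G H G' H' \<psi> (Q1 \<otimes>\<^bsub>G Mod H\<^esub> Q2) = H' #>\<^bsub>G'\<^esub> \<psi> (a \<otimes>\<^bsub>G\<^esub> b)" using ev a b by simp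
    also have "\<dots> = (H' #>\<^bsub>G'\<^esub> \<psi> a) <#>\<^bsub>G'\<^esub> (H' #>\<^bsub>G'\<^esub> \<psi> b)"
      using a b normal.rcos_sum[OF nH'] by simp
    finally show "qmap G H G' H' \<psi> (Q1 \<otimes>\<^bsub>G Mod H\<^esub> Q2) = qmap G H G' H' \<psi> Q1 \<otimes>\<^bsub>G' Mod H'\<^esub> qmap G H G' H' \<psi> Q2"
      using ev a b by (simp add: FactGroup_def)
  qed
qed

lemma qmap_inj:
  assumes G: "comm_group G" and G': "comm_group G'" and H: "subgroup H G" and H': "subgroup H' G'"
    and psi: "\<psi> \<in> hom G G'" and HH: "\<psi> ` H \<subseteq> H'"
    and ker: "\<And>a. a \<in> carrier G \<Longrightarrow> \<psi> a \<in> H' \<Longrightarrow> a \<in> H"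
  shows "inj_on (qmap G H G' H' \<psi>) (carrier (G Mod H))"
proof -
  interpret G: comm_group G by fact
  interpret G': comm_group G' by fact
  interpret gh: group_hom G G' \<psi> using psi by (simp add: group_hom.intro group_hom_axioms.intro G.is_group G'.is_group)
  have ev: "\<And>a. a \<in> carrier G \<Longrightarrow> qmap G H G' H' \<psi> (H #>\<^bsub>G\<^esub> a) = H' #>\<^bsub>G'\<^esub> \<psi> a"
    using qmap_eval[OF G.is_group G'.is_group H H' psi HH] by blast
  show ?thesis
  proof (rule inj_onI)
    fix Q1 Q2 assume "Q1 \<in> carrier (G Mod H)" "Q2 \<in> carrier (G Mod H)"
      and e: "qmap G H G' H' \<psi> Q1 = qmap G H G' H' \<psi> Q2"
    then obtain a b where a: "a \<in> carrier G" "Q1 = H #>\<^bsub>G\<^esub> a" and b: "b \<in> carrier G" "Q2 = H #>\<^bsub>G\<^esub> b"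
      unfolding FactGroup_def RCOSETS_def by auto
    have "H' #>\<^bsub>G'\<^esub> \<psi> a = H' #>\<^bsub>G'\<^esub> \<psi> b" using e ev a b by simp
    then have "\<psi> a \<in> H' #>\<^bsub>G'\<^esub> \<psi> b" using G'.rcos_self[OF _ H'] a by (metis gh.hom_closed)
    then have "\<psi> a \<otimes>\<^bsub>G'\<^esub> inv\<^bsub>G'\<^esub> \<psi> b \<in> H'" using subgroup.rcos_module_imp[OF H' G'.is_group] b by simp
    then have "\<psi> (a \<otimes>\<^bsub>G\<^esub> inv\<^bsub>G\<^esub> b) \<in> H'" using a b by simp
    then have "a \<otimes>\<^bsub>G\<^esub> inv\<^bsub>G\<^esub> b \<in> H" using ker a b by simp
    then have "a \<in> H #>\<^bsub>G\<^esub> b" using subgroup.rcos_module_rev[OF H G.is_group] a b by simp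
    then show "Q1 = Q2" using G.repr_independence[OF _ _ H] a b by metis
  qed
qed

lemma rcos_eq_H:
  assumes G: "group G" and H: "subgroup H G" and c: "c \<in> carrier G"
  shows "H #>\<^bsub>G\<^esub> c = H \<longleftrightarrow> c \<in> H"
  using group.rcos_self[OF G c H] subgroup.rcos_const[OF H G] by auto

context cring begin

lemma IP_swap:
  assumes "A \<subseteq> carrier R" "B \<subseteq> carrier R" "C \<subseteq> carrier R" "D \<subseteq> carrier R"
  shows "ideal_prod R (ideal_prod R A B) (ideal_prod R C D) = ideal_prod R (ideal_prod R A C) (ideal_prod R B D)"
proof -
  have c: "ideal_prod R Q1 Q2 \<subseteq> carrier R" if "Q1 \<subseteq> carrier R" "Q2 \<subseteq> carrier R" for Q1 Q2 using IP_carrier that by blast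
  have "ideal_prod R (ideal_prod R A B) (ideal_prod R C D) = ideal_prod R A (ideal_prod R B (ideal_prod R C D))"
    using IP_assoc assms c by simp
  also have "ideal_prod R B (ideal_prod R C D) = ideal_prod R (ideal_prod R B C) D" using IP_assoc assms by simp
  also have "ideal_prod R B C = ideal_prod R C B" using IP_comm assms by simp
  also have "ideal_prod R (ideal_prod R C B) D = ideal_prod R C (ideal_prod R B D)" using IP_assoc assms by simp
  also have "ideal_prod R A (ideal_prod R C (ideal_prod R B D)) = ideal_prod R (ideal_prod R A C) (ideal_prod R B D)"
    using IP_assoc assms c by simp
  finally show ?thesis .
qed

lemma inv_group_simps[simp]:
  "carrier (inv_group R K) = invertible_ideals R K"
  "monoid.mult (inv_group R K) = ideal_prod R"
  "one (inv_group R K) = K"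
  unfolding inv_group_def by simp_all

lemma invertible_rsub: "L \<in> invertible_ideals R K \<Longrightarrow> rsubmodule R K L"
  unfolding inv_group_simps invertible_ideals_def by auto

lemma rsub_carrier: "rsubmodule R K L \<Longrightarrow> L \<subseteq> carrier R"
  unfolding rsubmodule_def by auto

lemma inv_carrier: "L \<in> invertible_ideals R K \<Longrightarrow> L \<subseteq> carrier R"
  unfolding invertible_ideals_def rsubmodule_def by auto

lemma inv_group_comm:
  assumes K: "subring K R"
  shows "comm_group (inv_group R K)"
proof (rule comm_groupI)
  have Kc: "K \<subseteq> carrier R" using subringE(1)[OF K] .
  show "x \<otimes>\<^bsub>inv_group R K\<^esub> y \<in> carrier (inv_group R K)"
    if x: "x \<in> carrier (inv_group R K)" and y: "y \<in> carrier (inv_group R K)" for x y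
  proof -
    obtain x' where x': "rsubmodule R K x'" "ideal_prod R x x' = K" using x unfolding inv_group_simps invertible_ideals_def by auto
    obtain y' where y': "rsubmodule R K y'" "ideal_prod R y y' = K" using y unfolding inv_group_simps invertible_ideals_def by auto
    have xs: "rsubmodule R K x" "rsubmodule R K y" using x y unfolding inv_group_simps invertible_ideals_def by auto
    have cs: "x \<subseteq> carrier R" "y \<subseteq> carrier R" "x' \<subseteq> carrier R" "y' \<subseteq> carrier R"
      using xs x' y' rsub_carrier by auto
    have "ideal_prod R (ideal_prod R x y) (ideal_prod R x' y') = ideal_prod R K K"
      using IP_swap[OF cs(1,2,3,4)] x' y' by simp
    also have "\<dots> = K" using rsub_IP[OF K subring_rsub[OF K]] .
    finally show ?thesis
      using IP_rsub[OF Kc xs(1) cs(2)] IP_rsub[OF Kc x'(1) cs(4)] unfolding inv_group_simps invertible_ideals_def by auto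
  qed
  show "\<one>\<^bsub>inv_group R K\<^esub> \<in> carrier (inv_group R K)"
    using subring_rsub[OF K] rsub_IP[OF K subring_rsub[OF K]] unfolding inv_group_simps invertible_ideals_def by auto
  show "x \<otimes>\<^bsub>inv_group R K\<^esub> y \<otimes>\<^bsub>inv_group R K\<^esub> z = x \<otimes>\<^bsub>inv_group R K\<^esub> (y \<otimes>\<^bsub>inv_group R K\<^esub> z)"
    if "x \<in> carrier (inv_group R K)" "y \<in> carrier (inv_group R K)" "z \<in> carrier (inv_group R K)" for x y z
    using that IP_assoc[OF inv_carrier inv_carrier inv_carrier] by simp
  show "x \<otimes>\<^bsub>inv_group R K\<^esub> y = y \<otimes>\<^bsub>inv_group R K\<^esub> x"
    if "x \<in> carrier (inv_group R K)" "y \<in> carrier (inv_group R K)" for x y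
    using that IP_comm[OF inv_carrier inv_carrier] by simp
  show "\<one>\<^bsub>inv_group R K\<^esub> \<otimes>\<^bsub>inv_group R K\<^esub> x = x" if "x \<in> carrier (inv_group R K)" for x
    using that rsub_IP[OF K] invertible_rsub by simp
  show "\<exists>y\<in>carrier (inv_group R K). y \<otimes>\<^bsub>inv_group R K\<^esub> x = \<one>\<^bsub>inv_group R K\<^esub>"
    if x: "x \<in> carrier (inv_group R K)" for x
  proof -
    obtain x' where x': "rsubmodule R K x'" "ideal_prod R x x' = K" using x unfolding inv_group_simps invertible_ideals_def by auto
    have xs: "rsubmodule R K x" using x unfolding inv_group_simps invertible_ideals_def by auto
    have e: "ideal_prod R x' x = K" using x' IP_comm rsub_carrier xs by metis
    then have "x' \<in> invertible_ideals R K" using x' xs unfolding inv_group_simps invertible_ideals_def by auto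
    then show ?thesis using e by auto
  qed
qed

definition (in cring) prin :: "'a set \<Rightarrow> 'a \<Rightarrow> 'a set" where
  "prin K x = (\<lambda>r. r \<otimes> x) ` K"

lemma prin_rsub:
  assumes K: "subring K R" and x: "x \<in> carrier R"
  shows "rsubmodule R K (prin K x)"
proof -
  note KE = subringE[OF K]
  have "\<zero> \<in> prin K x" unfolding prin_def using KE x by (auto intro!: image_eqI[of _ _ \<zero>])
  moreover have "a \<oplus> b \<in> prin K x" if ab: "a \<in> prin K x" "b \<in> prin K x" for a b
  proof -
    obtain r s where "r \<in> K" "s \<in> K" "a = r \<otimes> x" "b = s \<otimes> x" using ab unfolding prin_def by auto
    then show ?thesis unfolding prin_def using KE x
      by (auto intro!: image_eqI[of _ _ "r \<oplus> s"] simp: l_distr subsetD)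
  qed
  moreover have "\<ominus> a \<in> prin K x" if ab: "a \<in> prin K x" for a
  proof -
    obtain r where "r \<in> K" "a = r \<otimes> x" using ab unfolding prin_def by auto
    then show ?thesis unfolding prin_def using KE x
      by (auto intro!: image_eqI[of _ _ "\<ominus> r"] simp: l_minus subsetD)
  qed
  moreover have "k \<otimes> a \<in> prin K x" if ab: "k \<in> K" "a \<in> prin K x" for k a
  proof -
    obtain r where "r \<in> K" "a = r \<otimes> x" using ab unfolding prin_def by auto
    then show ?thesis unfolding prin_def using KE x ab
      by (auto intro!: image_eqI[of _ _ "k \<otimes> r"] simp: m_assoc subsetD)
  qed
  moreover have "prin K x \<subseteq> carrier R" unfolding prin_def using KE x by auto
  ultimately show ?thesis unfolding rsubmodule_def by blast
qed

lemma prin_carrier: "subring K R \<Longrightarrow> x \<in> carrier R \<Longrightarrow> prin K x \<subseteq> carrier R"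
  using prin_rsub rsub_carrier by blast

lemma prin_one: "subring K R \<Longrightarrow> prin K \<one> = K"
  unfolding prin_def using subringE(1)[of K R] by (auto simp: subsetD image_def)

lemma prin_mult:
  assumes K: "subring K R" and x: "x \<in> carrier R" and y: "y \<in> carrier R"
  shows "ideal_prod R (prin K x) (prin K y) = prin K (x \<otimes> y)"
proof
  note KE = subringE[OF K]
  have c: "prin K x \<subseteq> carrier R" "prin K y \<subseteq> carrier R" using prin_carrier K x y by auto
  have rs: "rsubmodule R K (prin K (x \<otimes> y))" using prin_rsub K x y by simp
  show "ideal_prod R (prin K x) (prin K y) \<subseteq> prin K (x \<otimes> y)"
  proof (rule IP_minimal2[OF c])
    show "\<zero> \<in> prin K (x \<otimes> y)" using rs unfolding rsubmodule_def by auto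
    show "a \<oplus> b \<in> prin K (x \<otimes> y)" if "a \<in> prin K (x \<otimes> y)" "b \<in> prin K (x \<otimes> y)" for a b
      using rs that unfolding rsubmodule_def by auto
    show "a \<otimes> b \<in> prin K (x \<otimes> y)" if ab: "a \<in> prin K x" "b \<in> prin K y" for a b
    proof -
      obtain r s where "r \<in> K" "s \<in> K" "a = r \<otimes> x" "b = s \<otimes> y" using ab unfolding prin_def by auto
      moreover have "(r \<otimes> x) \<otimes> (s \<otimes> y) = (r \<otimes> s) \<otimes> (x \<otimes> y)"
        using calculation KE x y by (simp add: subsetD m_ac)
      ultimately show ?thesis unfolding prin_def using KE by auto
    qed
  qed
  show "prin K (x \<otimes> y) \<subseteq> ideal_prod R (prin K x) (prin K y)"
  proof
    fix z assume "z \<in> prin K (x \<otimes> y)"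
    then obtain r where r: "r \<in> K" "z = r \<otimes> (x \<otimes> y)" unfolding prin_def by auto
    have "r \<otimes> x \<in> prin K x" "\<one> \<otimes> y \<in> prin K y" using r KE unfolding prin_def by auto
    moreover have "z = (r \<otimes> x) \<otimes> (\<one> \<otimes> y)" using r KE x y by (simp add: subsetD m_assoc)
    ultimately show "z \<in> ideal_prod R (prin K x) (prin K y)" using IP_prod[OF c] by simp
  qed
qed

lemma prin_inv:
  assumes K: "subring K R" and x: "x \<in> Units R"
  shows "prin K x \<in> invertible_ideals R K"
proof -
  have "ideal_prod R (prin K x) (prin K (inv x)) = K" using prin_mult[OF K] prin_one[OF K] x by (simp add: Units_closed)
  moreover have "inv x \<in> carrier R" "x \<in> carrier R" using x by auto
  ultimately show ?thesis using prin_rsub[OF K] unfolding inv_group_simps invertible_ideals_def by blast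
qed

lemma principal_ideals_eq: "principal_ideals R K = {prin K x | x. x \<in> Units R}"
  unfolding principal_ideals_def prin_def by simp

lemma principal_subgroup:
  assumes K: "subring K R"
  shows "subgroup (principal_ideals R K) (inv_group R K)"
proof -
  interpret G: comm_group "inv_group R K" using inv_group_comm[OF K] .
  show ?thesis
  proof (rule G.subgroupI)
    show "principal_ideals R K \<subseteq> carrier (inv_group R K)"
      unfolding principal_ideals_eq using prin_inv[OF K] by auto
    show "principal_ideals R K \<noteq> {}" unfolding principal_ideals_eq by blast
    show "inv\<^bsub>inv_group R K\<^esub> a \<in> principal_ideals R K" if ab: "a \<in> principal_ideals R K" for a
    proof -
      obtain x where x: "x \<in> Units R" "a = prin K x" using ab unfolding principal_ideals_eq by auto
      have "prin K (inv x) \<otimes>\<^bsub>inv_group R K\<^esub> a = \<one>\<^bsub>inv_group R K\<^esub>"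
      proof -
        have "inv x \<in> carrier R" "x \<in> carrier R" "inv x \<otimes> x = \<one>" using x by auto
        then show ?thesis using x prin_mult[OF K] prin_one[OF K] by simp
      qed
      then have "inv\<^bsub>inv_group R K\<^esub> a = prin K (inv x)"
      proof (rule G.inv_equality)
        show "a \<in> carrier (inv_group R K)" using prin_inv[OF K] x by simp
        show "prin K (inv x) \<in> carrier (inv_group R K)" using prin_inv[OF K] x by simp
      qed
      then show ?thesis using x unfolding principal_ideals_eq by auto
    qed
    show "a \<otimes>\<^bsub>inv_group R K\<^esub> b \<in> principal_ideals R K" if ab: "a \<in> principal_ideals R K" "b \<in> principal_ideals R K" for a b
    proof -
      obtain x y where "x \<in> Units R" "a = prin K x" "y \<in> Units R" "b = prin K y" using ab unfolding principal_ideals_eq by auto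
      moreover have "x \<in> carrier R" "y \<in> carrier R" "x \<otimes> y \<in> Units R" using calculation by auto
      ultimately show ?thesis using prin_mult[OF K] unfolding principal_ideals_eq by auto
    qed
  qed
qed

end

lemma (in cring) IP_image:
  assumes R2: "cring R2" and h: "h \<in> ring_hom R R2" and UV: "U \<subseteq> carrier R" "V \<subseteq> carrier R"
  shows "h ` ideal_prod R U V = ideal_prod R2 (h ` U) (h ` V)"
proof
  interpret R2: cring R2 by fact
  interpret hh: ring_hom_cring R R2 h using h R2 by (simp add: ring_hom_cring_axioms_def ring_hom_cring_def is_cring)
  have hU: "h ` U \<subseteq> carrier R2" "h ` V \<subseteq> carrier R2" using UV by auto
  show "h ` ideal_prod R U V \<subseteq> ideal_prod R2 (h ` U) (h ` V)"
  proof
    fix w assume "w \<in> h ` ideal_prod R U V"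
    then obtain z where z: "z \<in> ideal_prod R U V" "w = h z" by auto
    have "h z \<in> ideal_prod R2 (h ` U) (h ` V)"
    proof (rule IP_induct[OF UV z(1), where P = "\<lambda>z. h z \<in> ideal_prod R2 (h ` U) (h ` V)"])
      show "h \<zero> \<in> ideal_prod R2 (h ` U) (h ` V)" using R2.IP_zero by simp
    next
      fix a x y assume st: "a \<in> ideal_prod R U V" "h a \<in> ideal_prod R2 (h ` U) (h ` V)" "x \<in> U" "y \<in> V"
      have ac: "a \<in> carrier R" using st IP_carrier UV by auto
      have "h (a \<oplus> x \<otimes> y) = h a \<oplus>\<^bsub>R2\<^esub> h x \<otimes>\<^bsub>R2\<^esub> h y" using ac st UV by (simp add: subsetD)
      then show "h (a \<oplus> x \<otimes> y) \<in> ideal_prod R2 (h ` U) (h ` V)"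
        using R2.IP_add_prod[OF hU st(2)] st by simp
    qed
    then show "w \<in> ideal_prod R2 (h ` U) (h ` V)" using z by simp
  qed
  show "ideal_prod R2 (h ` U) (h ` V) \<subseteq> h ` ideal_prod R U V"
  proof (rule R2.IP_minimal[OF hU])
    show "\<zero>\<^bsub>R2\<^esub> \<in> h ` ideal_prod R U V" using IP_zero by (auto intro!: image_eqI[of _ _ \<zero>])
    fix a x y assume a: "a \<in> h ` ideal_prod R U V" and x: "x \<in> h ` U" and y: "y \<in> h ` V"
    then obtain a0 x0 y0 where "a0 \<in> ideal_prod R U V" "x0 \<in> U" "y0 \<in> V" "a = h a0" "x = h x0" "y = h y0" by auto
    moreover have "a0 \<in> carrier R" using calculation IP_carrier UV by auto
    ultimately show "a \<oplus>\<^bsub>R2\<^esub> x \<otimes>\<^bsub>R2\<^esub> y \<in> h ` ideal_prod R U V"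
      using IP_add_prod[OF UV] UV by (auto simp: subsetD intro!: image_eqI[of _ _ "a0 \<oplus> x0 \<otimes> y0"])
  qed
qed


locale liftctx = cring R for R (structure) +
  fixes K E and p :: nat
  assumes K: "subring K R"
    and E: "E \<subseteq> carrier R" "finite E" "\<And>e. e \<in> E \<Longrightarrow> e [^] p = \<zero>"
    and Ku: "\<And>r. r \<in> K \<Longrightarrow> r \<in> filt R E 1 \<Longrightarrow> \<one> \<oplus> r \<in> Units R \<and> inv (\<one> \<oplus> r) \<in> K"
begin

lemma alg1: "u1 \<in> carrier R \<Longrightarrow> p1 \<in> carrier R \<Longrightarrow> q1 \<in> carrier R \<Longrightarrow> t1 \<in> carrier R \<Longrightarrow> w1 \<in> carrier R \<Longrightarrow>
  (u1 \<oplus> p1 \<oplus> q1 \<oplus> t1) \<oplus> \<ominus> (p1 \<oplus> t1) \<oplus> \<ominus> (q1 \<oplus> t1) \<oplus> w1 = u1 \<oplus> (\<ominus> t1 \<oplus> w1)"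
  by algebra

abbreviation "D \<equiv> filt R E"
definition "RD r = {a \<oplus> d | a d. a \<in> K \<and> d \<in> D r}"

lemma Kc: "K \<subseteq> carrier R" using subringE(1)[OF K] .
lemma K1: "\<one> \<in> K" using subringE(3)[OF K] .
lemma K0: "\<zero> \<in> K" using subringE(2)[OF K] .
lemma Kadd: "a \<in> K \<Longrightarrow> b \<in> K \<Longrightarrow> a \<oplus> b \<in> K" using subringE(7)[OF K] .
lemma Kmult: "a \<in> K \<Longrightarrow> b \<in> K \<Longrightarrow> a \<otimes> b \<in> K" using subringE(6)[OF K] .
lemma Kneg: "a \<in> K \<Longrightarrow> \<ominus> a \<in> K" using subringE(5)[OF K] .
lemma Kminus: "a \<in> K \<Longrightarrow> b \<in> K \<Longrightarrow> a \<ominus> b \<in> K" using Kadd Kneg by (simp add: minus_eq)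
lemma Kcarr: "a \<in> K \<Longrightarrow> a \<in> carrier R" using Kc by auto

lemma D_ideal: "ideal (D r) R" by (rule filt_ideal[OF E(1)])
lemma Dc: "d \<in> D r \<Longrightarrow> d \<in> carrier R" using filt_carrier[OF E(1)] by blast
lemma D0: "\<zero> \<in> D r" by (rule additive_subgroup.zero_closed[OF ideal.axioms(1)[OF D_ideal]])
lemma Dadd: "a \<in> D r \<Longrightarrow> b \<in> D r \<Longrightarrow> a \<oplus> b \<in> D r"
  by (rule additive_subgroup.a_closed[OF ideal.axioms(1)[OF D_ideal]])
lemma Dneg: "a \<in> D r \<Longrightarrow> \<ominus> a \<in> D r"
  by (rule additive_subgroup.a_inv_closed[OF ideal.axioms(1)[OF D_ideal]])
lemma Dminus: "a \<in> D r \<Longrightarrow> b \<in> D r \<Longrightarrow> a \<ominus> b \<in> D r"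
  using Dadd Dneg by (simp add: minus_eq)
lemma Dl: "x \<in> carrier R \<Longrightarrow> d \<in> D r \<Longrightarrow> x \<otimes> d \<in> D r"
  by (rule ideal.I_l_closed[OF D_ideal])
lemma Dr: "x \<in> carrier R \<Longrightarrow> d \<in> D r \<Longrightarrow> d \<otimes> x \<in> D r"
  by (rule ideal.I_r_closed[OF D_ideal])
lemma Danti: "r \<le> s \<Longrightarrow> d \<in> D s \<Longrightarrow> d \<in> D r"
  using filt_mono[OF E(1)] by blast
lemma Dmult: "a \<in> D r \<Longrightarrow> b \<in> D s \<Longrightarrow> a \<otimes> b \<in> D (r + s)"
  by (rule filt_mult[OF E(1)])
lemma Dsq: "1 \<le> r \<Longrightarrow> a \<in> D r \<Longrightarrow> b \<in> D r \<Longrightarrow> a \<otimes> b \<in> D (Suc r)"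
  using Dmult Danti[of "Suc r" "r + r"] by simp
lemma Dtop: "D (Suc (card E * p)) = {\<zero>}"
  using filt_zero[OF E] .

lemma D_finsum: "(\<And>k. k < n \<Longrightarrow> f k \<in> D r) \<Longrightarrow> finsum R f {..<(n::nat)} \<in> D r"
proof (induction n)
  case 0 then show ?case using D0 by simp
next
  case (Suc n)
  have c: "f \<in> {..<n} \<rightarrow> carrier R"
  proof (rule funcsetI)
    fix k assume "k \<in> {..<n}" then have "f k \<in> D r" using Suc.prems by simp
    then show "f k \<in> carrier R" by (rule Dc)
  qed
  have fn: "f n \<in> carrier R" using Suc.prems Dc by blast
  have "finsum R f {..<Suc n} = f n \<oplus> finsum R f {..<n}"
    using c fn by (simp add: lessThan_Suc finsum_insert)
  then show ?case using Suc Dadd by simp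
qed

lemma D_finsum_diff: "(\<And>k. k < n \<Longrightarrow> f k \<in> carrier R) \<Longrightarrow> (\<And>k. k < n \<Longrightarrow> g k \<in> carrier R) \<Longrightarrow>
   (\<And>k. k < n \<Longrightarrow> f k \<ominus> g k \<in> D r) \<Longrightarrow> finsum R f {..<(n::nat)} \<ominus> finsum R g {..<n} \<in> D r"
proof (induction n)
  case 0 then show ?case using D0 by (simp add: minus_eq)
next
  case (Suc n)
  have c: "f \<in> {..<n} \<rightarrow> carrier R" "g \<in> {..<n} \<rightarrow> carrier R" using Suc by auto
  have cs: "finsum R f {..<n} \<in> carrier R" "finsum R g {..<n} \<in> carrier R" using c by (auto intro: finsum_closed)
  have fn: "f n \<in> carrier R" "g n \<in> carrier R" using Suc by auto
  have e1: "finsum R f {..<Suc n} = f n \<oplus> finsum R f {..<n}" using c fn by (simp add: lessThan_Suc finsum_insert)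
  have e2: "finsum R g {..<Suc n} = g n \<oplus> finsum R g {..<n}" using c fn by (simp add: lessThan_Suc finsum_insert)
  have "finsum R f {..<Suc n} \<ominus> finsum R g {..<Suc n} = (f n \<ominus> g n) \<oplus> (finsum R f {..<n} \<ominus> finsum R g {..<n})"
    unfolding e1 e2 using fn cs by algebra
  moreover have "finsum R f {..<n} \<ominus> finsum R g {..<n} \<in> D r" using Suc by simp
  ultimately show ?case using Suc Dadd by simp
qed

lemma RDc: "x \<in> RD r \<Longrightarrow> x \<in> carrier R"
  unfolding RD_def using Kcarr Dc by auto
lemma RD_K: assumes "a \<in> K" shows "a \<in> RD r"
proof -
  have "a = a \<oplus> \<zero>" using Kcarr assms by simp
  then show ?thesis unfolding RD_def using assms D0 by blast
qed
lemma RD_D: assumes "d \<in> D r" shows "d \<in> RD r"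
proof -
  have "d = \<zero> \<oplus> d" using Dc assms by simp
  then show ?thesis unfolding RD_def using assms K0 by blast
qed
lemma RD_add: assumes "x \<in> RD r" "y \<in> RD r" shows "x \<oplus> y \<in> RD r"
proof -
  obtain a d b e where "a \<in> K" "d \<in> D r" "x = a \<oplus> d" "b \<in> K" "e \<in> D r" "y = b \<oplus> e"
    using assms unfolding RD_def by auto
  moreover have "x \<oplus> y = (a \<oplus> b) \<oplus> (d \<oplus> e)" using calculation Kcarr Dc by (simp add: a_ac)
  ultimately show ?thesis unfolding RD_def using Kadd Dadd by blast
qed
lemma RD_neg: assumes "x \<in> RD r" shows "\<ominus> x \<in> RD r"
proof -
  obtain a d where "a \<in> K" "d \<in> D r" "x = a \<oplus> d" using assms unfolding RD_def by auto
  moreover have "\<ominus> x = (\<ominus> a) \<oplus> (\<ominus> d)" using calculation Kcarr Dc by (simp add: minus_add)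
  ultimately show ?thesis unfolding RD_def using Kneg Dneg by blast
qed
lemma RD_minus: "x \<in> RD r \<Longrightarrow> y \<in> RD r \<Longrightarrow> x \<ominus> y \<in> RD r"
  using RD_add RD_neg by (simp add: minus_eq)
lemma RD_mult: assumes "x \<in> RD r" "y \<in> RD r" shows "x \<otimes> y \<in> RD r"
proof -
  obtain a d b e where ab: "a \<in> K" "d \<in> D r" "x = a \<oplus> d" "b \<in> K" "e \<in> D r" "y = b \<oplus> e"
    using assms unfolding RD_def by auto
  have c: "a \<in> carrier R" "b \<in> carrier R" "d \<in> carrier R" "e \<in> carrier R" using ab Kcarr Dc by auto
  have "x \<otimes> y = (a \<otimes> b) \<oplus> (a \<otimes> e \<oplus> d \<otimes> y)" using ab c by simp algebra
  moreover have "a \<otimes> e \<oplus> d \<otimes> y \<in> D r" using Dadd Dl Dr ab c by simp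
  ultimately show ?thesis unfolding RD_def using Kmult ab by blast
qed
lemma RD_anti: "r \<le> s \<Longrightarrow> x \<in> RD s \<Longrightarrow> x \<in> RD r"
  unfolding RD_def using Danti by blast
lemma RD_top: "x \<in> RD (Suc (card E * p)) \<Longrightarrow> x \<in> K"
  unfolding RD_def using Dtop Kcarr by auto
lemma RD_finsum: "(\<And>k. k < n \<Longrightarrow> f k \<in> RD r) \<Longrightarrow> finsum R f {..<(n::nat)} \<in> RD r"
proof (induction n)
  case 0 then show ?case using RD_K K0 by simp
next
  case (Suc n)
  have c: "f \<in> {..<n} \<rightarrow> carrier R"
  proof (rule funcsetI)
    fix k assume "k \<in> {..<n}" then have "f k \<in> RD r" using Suc.prems by simp
    then show "f k \<in> carrier R" by (rule RDc)
  qed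
  have fn: "f n \<in> carrier R" using Suc.prems RDc by blast
  have "finsum R f {..<Suc n} = f n \<oplus> finsum R f {..<n}"
    using c fn by (simp add: lessThan_Suc finsum_insert)
  then show ?case using Suc RD_add by simp
qed

lemma D1_unit: assumes "d \<in> D 1" shows "\<one> \<oplus> d \<in> Units R"
  using nilp_one_plus_unit[OF Dc[OF assms] filt_nilp[OF E assms]] .

lemma RD_inv:
  assumes r: "1 \<le> r" and c: "c \<in> RD r" and c1: "c \<ominus> \<one> \<in> D 1"
  shows "c \<in> Units R \<and> inv c \<in> RD r \<and> inv c \<ominus> \<one> \<in> D 1"
proof -
  have cc: "c \<in> carrier R" using c RDc by auto
  have "\<one> \<oplus> (c \<ominus> \<one>) = c" using cc by algebra
  then have cu: "c \<in> Units R" using D1_unit[OF c1] by simp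
  obtain a e where ae: "a \<in> K" "e \<in> D r" "c = a \<oplus> e" using c unfolding RD_def by auto
  have ac: "a \<in> carrier R" "e \<in> carrier R" using ae Kcarr Dc by auto
  have "a \<ominus> \<one> = (c \<ominus> \<one>) \<ominus> e" using ae ac by simp algebra
  moreover have "e \<in> D 1" using Danti[OF r ae(2)] .
  ultimately have a1: "a \<ominus> \<one> \<in> D 1" using Dminus c1 by simp
  have a1K: "a \<ominus> \<one> \<in> K" using Kminus ae K1 by simp
  have "\<one> \<oplus> (a \<ominus> \<one>) = a" using ac by algebra
  then have au: "a \<in> Units R" "inv a \<in> K" using Ku[OF a1K a1] by auto
  have ic: "inv c \<in> carrier R" "inv a \<in> carrier R" using cu au by auto
  have "inv c \<otimes> (a \<ominus> c) \<otimes> inv a = (inv c \<otimes> c) \<otimes> (\<ominus> (inv a)) \<oplus> inv c \<otimes> (a \<otimes> inv a)"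
    using ic ac cc by algebra
  also have "\<dots> = inv c \<ominus> inv a" using cu au ic by (simp add: minus_eq a_comm)
  finally have eq1: "inv c \<ominus> inv a = inv c \<otimes> (a \<ominus> c) \<otimes> inv a" by simp
  have "a \<ominus> c = \<ominus> e" using ae ac by simp algebra
  then have "a \<ominus> c \<in> D r" using Dneg ae by simp
  then have "inv c \<ominus> inv a \<in> D r" using eq1 Dl Dr ic ac cc by simp
  moreover have "inv c = inv a \<oplus> (inv c \<ominus> inv a)" using ic by algebra
  ultimately have "inv c \<in> RD r" unfolding RD_def using au by blast
  moreover have "inv c \<ominus> \<one> = inv c \<otimes> (\<ominus> (c \<ominus> \<one>))"
  proof -
    have "inv c \<otimes> (\<ominus> (c \<ominus> \<one>)) = \<ominus> (inv c \<otimes> c) \<oplus> inv c" using ic cc by algebra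
    then show ?thesis using cu ic by (simp add: minus_eq a_comm)
  qed
  then have "inv c \<ominus> \<one> \<in> D 1" using Dl Dneg c1 ic by simp
  ultimately show ?thesis using cu by simp
qed


lemma K_finsum: "(\<And>k. k < n \<Longrightarrow> f k \<in> K) \<Longrightarrow> finsum R f {..<(n::nat)} \<in> K"
proof (induction n)
  case 0 then show ?case using K0 by simp
next
  case (Suc n)
  have c: "f \<in> {..<n} \<rightarrow> carrier R"
  proof (rule funcsetI)
    fix k assume "k \<in> {..<n}" then have "f k \<in> K" using Suc.prems by simp
    then show "f k \<in> carrier R" by (rule Kcarr)
  qed
  have fn: "f n \<in> carrier R" using Suc.prems Kcarr by blast
  have "finsum R f {..<Suc n} = f n \<oplus> finsum R f {..<n}"
    using c fn by (simp add: lessThan_Suc finsum_insert)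
  then show ?case using Suc Kadd by simp
qed

definition Inv :: "nat \<Rightarrow> (nat \<Rightarrow> 'a) \<Rightarrow> (nat \<Rightarrow> 'a) \<Rightarrow> nat \<Rightarrow> (nat \<Rightarrow> 'a) \<Rightarrow> (nat \<Rightarrow> 'a) \<Rightarrow> bool" where
  "Inv n xt yt r X1 Y1 \<longleftrightarrow> (\<forall>k<n. X1 k \<in> carrier R \<and> Y1 k \<in> carrier R \<and> X1 k \<ominus> xt k \<in> D 1 \<and> Y1 k \<ominus> yt k \<in> D 1)
     \<and> (\<forall>l<n. \<forall>k<n. X1 l \<otimes> Y1 k \<in> RD r) \<and> finsum R (\<lambda>k. X1 k \<otimes> Y1 k) {..<n} = \<one>"

lemma normalize:
  assumes r: "1 \<le> r"
    and XY: "\<And>k. k < n \<Longrightarrow> X1 k \<in> carrier R \<and> Y1 k \<in> carrier R \<and> X1 k \<ominus> xt k \<in> D 1 \<and> Y1 k \<ominus> yt k \<in> D 1"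
    and xtc: "\<And>k. k < n \<Longrightarrow> xt k \<in> carrier R"
    and pr: "\<And>l k. l < n \<Longrightarrow> k < n \<Longrightarrow> X1 l \<otimes> Y1 k \<in> RD r"
    and c1: "finsum R (\<lambda>k. X1 k \<otimes> Y1 k) {..<n} \<ominus> \<one> \<in> D 1"
  shows "\<exists>X2. Inv n xt yt r X2 Y1"
proof -
  define c where "c = finsum R (\<lambda>k. X1 k \<otimes> Y1 k) {..<n}"
  have cRD: "c \<in> RD r" unfolding c_def using pr by (intro RD_finsum) auto
  obtain cu: "c \<in> Units R" and ci: "inv c \<in> RD r" and ci1: "inv c \<ominus> \<one> \<in> D 1"
    using RD_inv[OF r cRD] c1 unfolding c_def by auto
  have icc: "inv c \<in> carrier R" using cu by auto
  have cc: "c \<in> carrier R" using cu by auto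
  define X2 where "X2 l = X1 l \<otimes> inv c" for l
  have A: "\<forall>k<n. X2 k \<in> carrier R \<and> Y1 k \<in> carrier R \<and> X2 k \<ominus> xt k \<in> D 1 \<and> Y1 k \<ominus> yt k \<in> D 1"
  proof (intro allI impI conjI)
    fix k assume k: "k < n"
    have xk: "X1 k \<in> carrier R" "xt k \<in> carrier R" using XY[OF k] xtc[OF k] by auto
    show "X2 k \<in> carrier R" unfolding X2_def using xk icc by simp
    show "Y1 k \<in> carrier R" "Y1 k \<ominus> yt k \<in> D 1" using XY[OF k] by auto
    have "X2 k \<ominus> xt k = (X1 k \<ominus> xt k) \<oplus> X1 k \<otimes> (inv c \<ominus> \<one>)" unfolding X2_def using xk icc by algebra
    then show "X2 k \<ominus> xt k \<in> D 1" using XY[OF k] Dadd Dl ci1 xk by simp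
  qed
  have B: "\<forall>l<n. \<forall>k<n. X2 l \<otimes> Y1 k \<in> RD r"
  proof (intro allI impI)
    fix l k assume lk: "l < n" "k < n"
    have "X2 l \<otimes> Y1 k = (X1 l \<otimes> Y1 k) \<otimes> inv c" unfolding X2_def using XY lk icc by (simp add: m_ac)
    then show "X2 l \<otimes> Y1 k \<in> RD r" using RD_mult pr[OF lk] ci by simp
  qed
  have "finsum R (\<lambda>k. X2 k \<otimes> Y1 k) {..<n} = finsum R (\<lambda>k. (X1 k \<otimes> Y1 k) \<otimes> inv c) {..<n}"
    by (rule finsum_cong) (use XY icc in \<open>auto simp: X2_def m_ac\<close>)
  also have "\<dots> = c \<otimes> inv c" using XY icc unfolding c_def by (intro finsum_ldistr[symmetric]) auto
  also have "\<dots> = \<one>" using cu by simp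
  finally show ?thesis unfolding Inv_def using A B by blast
qed

lemma step:
  assumes r: "1 \<le> r" and I: "Inv n xt yt r X1 Y1"
    and xtc: "\<And>k. k < n \<Longrightarrow> xt k \<in> carrier R" and ytc: "\<And>k. k < n \<Longrightarrow> yt k \<in> carrier R"
  shows "\<exists>X2 Y2. Inv n xt yt (Suc r) X2 Y2"
proof -
  have XY: "\<And>k. k < n \<Longrightarrow> X1 k \<in> carrier R \<and> Y1 k \<in> carrier R \<and> X1 k \<ominus> xt k \<in> D 1 \<and> Y1 k \<ominus> yt k \<in> D 1"
    and pr: "\<And>l k. l < n \<Longrightarrow> k < n \<Longrightarrow> X1 l \<otimes> Y1 k \<in> RD r"
    and s1: "finsum R (\<lambda>k. X1 k \<otimes> Y1 k) {..<n} = \<one>" using I unfolding Inv_def by auto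
  have Xc: "\<And>k. k < n \<Longrightarrow> X1 k \<in> carrier R" and Yc: "\<And>k. k < n \<Longrightarrow> Y1 k \<in> carrier R" using XY by auto
  define a where "a l k = (SOME a. a \<in> K \<and> X1 l \<otimes> Y1 k \<ominus> a \<in> D r)" for l k
  define e where "e l k = X1 l \<otimes> Y1 k \<ominus> a l k" for l k
  have ae: "a l k \<in> K \<and> e l k \<in> D r" if lk0: "l < n" "k < n" for l k
  proof -
    obtain a0 d where "a0 \<in> K" "d \<in> D r" "X1 l \<otimes> Y1 k = a0 \<oplus> d" using pr[OF lk0] unfolding RD_def by auto
    moreover have "X1 l \<otimes> Y1 k \<ominus> a0 = d"
    proof -
      have "a0 \<in> carrier R" "d \<in> carrier R" using calculation Kcarr Dc by auto
      then show ?thesis using calculation(3) by algebra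
    qed
    ultimately have "\<exists>a0. a0 \<in> K \<and> X1 l \<otimes> Y1 k \<ominus> a0 \<in> D r" by auto
    then show ?thesis unfolding a_def e_def by (metis (mono_tags, lifting) someI_ex)
  qed
  have aK: "\<And>l k. l < n \<Longrightarrow> k < n \<Longrightarrow> a l k \<in> K" and eD: "\<And>l k. l < n \<Longrightarrow> k < n \<Longrightarrow> e l k \<in> D r"
    using ae by auto
  have ac: "\<And>l k. l < n \<Longrightarrow> k < n \<Longrightarrow> a l k \<in> carrier R" using aK Kcarr by blast
  have ec: "\<And>l k. l < n \<Longrightarrow> k < n \<Longrightarrow> e l k \<in> carrier R" using eD Dc by blast
  have XYae: "X1 l \<otimes> Y1 k = a l k \<oplus> e l k" if "l < n" "k < n" for l k
  proof -
    have "a l k \<in> carrier R" "X1 l \<in> carrier R" "Y1 k \<in> carrier R" using ac[OF that] Xc Yc that by auto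
    then show ?thesis unfolding e_def by algebra
  qed
  define \<xi> where "\<xi> l = \<ominus> finsum R (\<lambda>j. e l j \<otimes> X1 j) {..<n}" for l
  define \<eta> where "\<eta> k = \<ominus> finsum R (\<lambda>j. Y1 j \<otimes> e j k) {..<n}" for k
  have \<xi>D: "\<xi> l \<in> D r" if "l < n" for l
    unfolding \<xi>_def using that eD Xc by (intro Dneg D_finsum Dr) auto
  have \<eta>D: "\<eta> k \<in> D r" if "k < n" for k
    unfolding \<eta>_def using that eD Yc by (intro Dneg D_finsum Dl) auto
  have \<xi>c: "\<And>l. l < n \<Longrightarrow> \<xi> l \<in> carrier R" using \<xi>D Dc by blast
  have \<eta>c: "\<And>k. k < n \<Longrightarrow> \<eta> k \<in> carrier R" using \<eta>D Dc by blast
  define X2 where "X2 l = X1 l \<oplus> \<xi> l" for l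
  define Y2 where "Y2 k = Y1 k \<oplus> \<eta> k" for k
  have key: "X2 l \<otimes> Y2 k \<in> RD (Suc r)" if lk: "l < n" "k < n" for l k
  proof -
    define U where "U = finsum R (\<lambda>j. a l j \<otimes> a j k) {..<n}"
    define P where "P = finsum R (\<lambda>j. e l j \<otimes> a j k) {..<n}"
    define Q where "Q = finsum R (\<lambda>j. a l j \<otimes> e j k) {..<n}"
    define T where "T = finsum R (\<lambda>j. e l j \<otimes> e j k) {..<n}"
    have Uc: "U \<in> carrier R" "P \<in> carrier R" "Q \<in> carrier R" "T \<in> carrier R"
      unfolding U_def P_def Q_def T_def using lk ac ec by (auto intro!: finsum_closed)
    have I1: "X1 l \<otimes> Y1 k = finsum R (\<lambda>j. (X1 l \<otimes> Y1 j) \<otimes> (X1 j \<otimes> Y1 k)) {..<n}"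
    proof -
      have "finsum R (\<lambda>j. (X1 l \<otimes> Y1 j) \<otimes> (X1 j \<otimes> Y1 k)) {..<n} = finsum R (\<lambda>j. (X1 l \<otimes> Y1 k) \<otimes> (X1 j \<otimes> Y1 j)) {..<n}"
        by (rule finsum_cong) (use lk Xc Yc in \<open>auto simp: m_ac\<close>)
      also have "\<dots> = (X1 l \<otimes> Y1 k) \<otimes> finsum R (\<lambda>j. X1 j \<otimes> Y1 j) {..<n}"
        using lk Xc Yc by (intro finsum_rdistr[symmetric]) auto
      also have "\<dots> = X1 l \<otimes> Y1 k" using s1 lk Xc Yc by simp
      finally show ?thesis by simp
    qed
    have I2: "finsum R (\<lambda>j. (X1 l \<otimes> Y1 j) \<otimes> (X1 j \<otimes> Y1 k)) {..<n} = U \<oplus> P \<oplus> Q \<oplus> T"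
    proof -
      have "finsum R (\<lambda>j. (X1 l \<otimes> Y1 j) \<otimes> (X1 j \<otimes> Y1 k)) {..<n} =
          finsum R (\<lambda>j. ((a l j \<otimes> a j k \<oplus> e l j \<otimes> a j k) \<oplus> a l j \<otimes> e j k) \<oplus> e l j \<otimes> e j k) {..<n}"
      proof (rule finsum_cong'[OF refl])
        show "(\<lambda>j. ((a l j \<otimes> a j k \<oplus> e l j \<otimes> a j k) \<oplus> a l j \<otimes> e j k) \<oplus> e l j \<otimes> e j k) \<in> {..<n} \<rightarrow> carrier R"
          using lk ac ec by auto
        fix j assume "j \<in> {..<n}"
        then have j: "j < n" by simp
        have "(X1 l \<otimes> Y1 j) \<otimes> (X1 j \<otimes> Y1 k) = (a l j \<oplus> e l j) \<otimes> (a j k \<oplus> e j k)" using XYae j lk by simp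
        also have "\<dots> = ((a l j \<otimes> a j k \<oplus> e l j \<otimes> a j k) \<oplus> a l j \<otimes> e j k) \<oplus> e l j \<otimes> e j k"
          using ac ec j lk by algebra
        finally show "(X1 l \<otimes> Y1 j) \<otimes> (X1 j \<otimes> Y1 k) = ((a l j \<otimes> a j k \<oplus> e l j \<otimes> a j k) \<oplus> a l j \<otimes> e j k) \<oplus> e l j \<otimes> e j k" .
      qed
      also have "\<dots> = U \<oplus> P \<oplus> Q \<oplus> T"
        unfolding U_def P_def Q_def T_def using lk ac ec by (simp add: finsum_addf Pi_def)
      finally show ?thesis .
    qed
    have I3: "\<xi> l \<otimes> Y1 k = \<ominus> (P \<oplus> T)"
    proof -
      have fc: "finsum R (\<lambda>j. e l j \<otimes> X1 j) {..<n} \<in> carrier R" using lk ec Xc by (auto intro!: finsum_closed)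
      have "\<xi> l \<otimes> Y1 k = \<ominus> (finsum R (\<lambda>j. e l j \<otimes> X1 j) {..<n} \<otimes> Y1 k)"
        unfolding \<xi>_def using fc lk Yc by (simp add: l_minus)
      also have "finsum R (\<lambda>j. e l j \<otimes> X1 j) {..<n} \<otimes> Y1 k = finsum R (\<lambda>j. (e l j \<otimes> X1 j) \<otimes> Y1 k) {..<n}"
        using lk ec Xc Yc by (intro finsum_ldistr) auto
      also have "\<dots> = finsum R (\<lambda>j. e l j \<otimes> a j k \<oplus> e l j \<otimes> e j k) {..<n}"
      proof (rule finsum_cong'[OF refl])
        show "(\<lambda>j. e l j \<otimes> a j k \<oplus> e l j \<otimes> e j k) \<in> {..<n} \<rightarrow> carrier R" using lk ac ec by auto
        fix j assume "j \<in> {..<n}"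
        then have j: "j < n" by simp
        have "(e l j \<otimes> X1 j) \<otimes> Y1 k = e l j \<otimes> (X1 j \<otimes> Y1 k)" using lk j ec Xc Yc by (simp add: m_assoc)
        also have "\<dots> = e l j \<otimes> (a j k \<oplus> e j k)" using XYae j lk by simp
        also have "\<dots> = e l j \<otimes> a j k \<oplus> e l j \<otimes> e j k" using j lk ac ec by (simp add: r_distr)
        finally show "(e l j \<otimes> X1 j) \<otimes> Y1 k = e l j \<otimes> a j k \<oplus> e l j \<otimes> e j k" .
      qed
      also have "\<dots> = P \<oplus> T" unfolding P_def T_def using lk ac ec by (simp add: finsum_addf Pi_def)
      finally show ?thesis .
    qed
    have I4: "X1 l \<otimes> \<eta> k = \<ominus> (Q \<oplus> T)"
    proof -
      have fc: "finsum R (\<lambda>j. Y1 j \<otimes> e j k) {..<n} \<in> carrier R" using lk ec Yc by (auto intro!: finsum_closed)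
      have "X1 l \<otimes> \<eta> k = \<ominus> (X1 l \<otimes> finsum R (\<lambda>j. Y1 j \<otimes> e j k) {..<n})"
        unfolding \<eta>_def using fc lk Xc by (simp add: r_minus)
      also have "X1 l \<otimes> finsum R (\<lambda>j. Y1 j \<otimes> e j k) {..<n} = finsum R (\<lambda>j. X1 l \<otimes> (Y1 j \<otimes> e j k)) {..<n}"
        using lk ec Xc Yc by (intro finsum_rdistr) auto
      also have "\<dots> = finsum R (\<lambda>j. a l j \<otimes> e j k \<oplus> e l j \<otimes> e j k) {..<n}"
      proof (rule finsum_cong'[OF refl])
        show "(\<lambda>j. a l j \<otimes> e j k \<oplus> e l j \<otimes> e j k) \<in> {..<n} \<rightarrow> carrier R" using lk ac ec by auto
        fix j assume "j \<in> {..<n}"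
        then have j: "j < n" by simp
        have "X1 l \<otimes> (Y1 j \<otimes> e j k) = (X1 l \<otimes> Y1 j) \<otimes> e j k" using lk j ec Xc Yc by (simp add: m_assoc)
        also have "\<dots> = (a l j \<oplus> e l j) \<otimes> e j k" using XYae j lk by simp
        also have "\<dots> = a l j \<otimes> e j k \<oplus> e l j \<otimes> e j k" using j lk ac ec by (simp add: l_distr)
        finally show "X1 l \<otimes> (Y1 j \<otimes> e j k) = a l j \<otimes> e j k \<oplus> e l j \<otimes> e j k" .
      qed
      also have "\<dots> = Q \<oplus> T" unfolding Q_def T_def using lk ac ec by (simp add: finsum_addf Pi_def)
      finally show ?thesis .
    qed
    have xyc: "X1 l \<in> carrier R" "Y1 k \<in> carrier R" "\<xi> l \<in> carrier R" "\<eta> k \<in> carrier R"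
      using lk Xc Yc \<xi>c \<eta>c by auto
    have "X2 l \<otimes> Y2 k = X1 l \<otimes> Y1 k \<oplus> \<xi> l \<otimes> Y1 k \<oplus> X1 l \<otimes> \<eta> k \<oplus> \<xi> l \<otimes> \<eta> k"
      unfolding X2_def Y2_def using xyc by algebra
    also have "\<dots> = (U \<oplus> P \<oplus> Q \<oplus> T) \<oplus> \<ominus> (P \<oplus> T) \<oplus> \<ominus> (Q \<oplus> T) \<oplus> \<xi> l \<otimes> \<eta> k"
      using I1 I2 I3 I4 by simp
    also have "\<dots> = U \<oplus> (\<ominus> T \<oplus> \<xi> l \<otimes> \<eta> k)" using alg1[OF Uc, of "\<xi> l \<otimes> \<eta> k"] xyc by simp
    finally have eq: "X2 l \<otimes> Y2 k = U \<oplus> (\<ominus> T \<oplus> \<xi> l \<otimes> \<eta> k)" .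
    have "U \<in> K" unfolding U_def using lk aK by (intro K_finsum Kmult) auto
    moreover have "T \<in> D (Suc r)" unfolding T_def using lk eD by (intro D_finsum Dsq[OF r]) auto
    moreover have "\<xi> l \<otimes> \<eta> k \<in> D (Suc r)" using Dsq[OF r \<xi>D[OF lk(1)] \<eta>D[OF lk(2)]] .
    ultimately show ?thesis unfolding eq RD_def using Dneg Dadd by blast
  qed
  have XY2: "X2 k \<in> carrier R \<and> Y2 k \<in> carrier R \<and> X2 k \<ominus> xt k \<in> D 1 \<and> Y2 k \<ominus> yt k \<in> D 1" if k: "k < n" for k
  proof -
    have c: "X1 k \<in> carrier R" "Y1 k \<in> carrier R" "xt k \<in> carrier R" "\<xi> k \<in> carrier R" "\<eta> k \<in> carrier R"
      using k Xc Yc xtc \<xi>c \<eta>c by auto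
    have yt: "yt k \<in> carrier R" using ytc k by simp
    have "X2 k \<ominus> xt k = (X1 k \<ominus> xt k) \<oplus> \<xi> k" unfolding X2_def using c by algebra
    moreover have "Y2 k \<ominus> yt k = (Y1 k \<ominus> yt k) \<oplus> \<eta> k" unfolding Y2_def using c yt by algebra
    moreover have "\<xi> k \<in> D 1" "\<eta> k \<in> D 1" using Danti[OF r] \<xi>D[OF k] \<eta>D[OF k] by auto
    ultimately show ?thesis using XY[OF k] Dadd c unfolding X2_def Y2_def by simp
  qed
  have c1: "finsum R (\<lambda>k. X2 k \<otimes> Y2 k) {..<n} \<ominus> \<one> \<in> D 1"
  proof -
    have "finsum R (\<lambda>k. X2 k \<otimes> Y2 k) {..<n} \<ominus> finsum R (\<lambda>k. X1 k \<otimes> Y1 k) {..<n} \<in> D 1"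
    proof (rule D_finsum_diff)
      fix k assume k: "k < n"
      have c: "X1 k \<in> carrier R" "Y1 k \<in> carrier R" "\<xi> k \<in> carrier R" "\<eta> k \<in> carrier R"
        using k Xc Yc \<xi>c \<eta>c by auto
      show "X2 k \<otimes> Y2 k \<in> carrier R" "X1 k \<otimes> Y1 k \<in> carrier R" using XY2[OF k] c by auto
      have "X2 k \<otimes> Y2 k \<ominus> X1 k \<otimes> Y1 k = \<xi> k \<otimes> Y2 k \<oplus> X1 k \<otimes> \<eta> k"
        unfolding X2_def Y2_def using c by algebra
      moreover have "\<xi> k \<in> D 1" "\<eta> k \<in> D 1" using Danti[OF r] \<xi>D[OF k] \<eta>D[OF k] by auto
      moreover have "Y2 k \<in> carrier R" using XY2[OF k] by simp
      ultimately show "X2 k \<otimes> Y2 k \<ominus> X1 k \<otimes> Y1 k \<in> D 1" using Dadd Dl Dr c by simp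
    qed
    then show ?thesis using s1 by simp
  qed
  have "\<exists>X3. Inv n xt yt (Suc r) X3 Y2"
    by (rule normalize[of "Suc r"]) (use XY2 xtc key c1 in auto)
  then show ?thesis by blast
qed

lemma lift_exists:
  fixes n :: nat
  assumes xtc: "\<And>k. k < n \<Longrightarrow> xt k \<in> carrier R" and ytc: "\<And>k. k < n \<Longrightarrow> yt k \<in> carrier R"
    and pr: "\<And>l k. l < n \<Longrightarrow> k < n \<Longrightarrow> xt l \<otimes> yt k \<in> RD 1"
    and c1: "finsum R (\<lambda>k. xt k \<otimes> yt k) {..<n} \<ominus> \<one> \<in> D 1"
  shows "\<exists>X1 Y1. (\<forall>k<n. X1 k \<in> carrier R \<and> Y1 k \<in> carrier R \<and> X1 k \<ominus> xt k \<in> D 1 \<and> Y1 k \<ominus> yt k \<in> D 1)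
     \<and> (\<forall>l<n. \<forall>k<n. X1 l \<otimes> Y1 k \<in> K) \<and> finsum R (\<lambda>k. X1 k \<otimes> Y1 k) {..<n} = \<one>"
proof -
  have base: "\<exists>X2 Y2. Inv n xt yt 1 X2 Y2"
  proof -
    have "\<exists>X2. Inv n xt yt 1 X2 yt"
    proof (rule normalize)
      fix k assume k: "k < n"
      show "xt k \<in> carrier R \<and> yt k \<in> carrier R \<and> xt k \<ominus> xt k \<in> D 1 \<and> yt k \<ominus> yt k \<in> D 1"
        using xtc[OF k] ytc[OF k] D0 by (simp add: r_neg minus_eq)
    qed (use xtc pr c1 in auto)
    then show ?thesis by blast
  qed
  have "\<exists>X2 Y2. Inv n xt yt (Suc m) X2 Y2" for m
  proof (induction m)
    case 0 then show ?case using base by simp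
  next
    case (Suc m)
    then obtain X2 Y2 where "Inv n xt yt (Suc m) X2 Y2" by blast
    then show ?case using step[of "Suc m"] xtc ytc by simp
  qed
  then obtain X2 Y2 where I: "Inv n xt yt (Suc (card E * p)) X2 Y2" by blast
  then show ?thesis unfolding Inv_def using RD_top by blast
qed

end

context cring begin

lemma unit_char: assumes u: "u \<in> carrier R" and v: "v \<in> carrier R" and uv: "u \<otimes> v = \<one>"
  shows "u \<in> Units R" "inv u = v"
proof -
  have "v \<otimes> u = \<one>" using uv u v m_comm by simp
  then show uU: "u \<in> Units R" using u v uv unfolding Units_def by auto
  have iu: "inv u \<in> carrier R" using uU by simp
  have "inv u = inv u \<otimes> \<one>" using iu by simp
  also have "\<dots> = inv u \<otimes> (u \<otimes> v)" using uv by simp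
  also have "\<dots> = (inv u \<otimes> u) \<otimes> v" using iu u v by (simp add: m_assoc)
  also have "\<dots> = v" using uU v by simp
  finally show "inv u = v" .
qed

lemma inv_mult_units: assumes "u \<in> Units R" "v \<in> Units R"
  shows "inv (u \<otimes> v) = inv u \<otimes> inv v"
proof -
  have c: "u \<in> carrier R" "v \<in> carrier R" "inv u \<in> carrier R" "inv v \<in> carrier R" using assms by auto
  have "(u \<otimes> v) \<otimes> (inv u \<otimes> inv v) = (u \<otimes> inv u) \<otimes> (v \<otimes> inv v)" using c by (simp add: m_ac)
  also have "\<dots> = \<one>" using assms by simp
  finally show ?thesis using unit_char(2)[of "u \<otimes> v" "inv u \<otimes> inv v"] c by simp
qed

lemma frac_eq: assumes u: "u \<in> Units R" and v: "v \<in> Units R" and x: "x \<in> carrier R" and y: "y \<in> carrier R"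
  shows "x \<otimes> inv u = y \<otimes> inv v \<longleftrightarrow> x \<otimes> v = y \<otimes> u"
proof
  have c: "u \<in> carrier R" "v \<in> carrier R" "inv u \<in> carrier R" "inv v \<in> carrier R" using u v by auto
  assume e: "x \<otimes> inv u = y \<otimes> inv v"
  have "x \<otimes> v = (x \<otimes> inv u) \<otimes> (u \<otimes> v)"
  proof -
    have "(x \<otimes> inv u) \<otimes> (u \<otimes> v) = x \<otimes> (inv u \<otimes> u) \<otimes> v" using c x by (simp add: m_ac)
    then show ?thesis using u c x by simp
  qed
  also have "\<dots> = (y \<otimes> inv v) \<otimes> (u \<otimes> v)" using e by simp
  also have "\<dots> = y \<otimes> (inv v \<otimes> v) \<otimes> u" using c y by (simp add: m_ac)
  finally show "x \<otimes> v = y \<otimes> u" using v c y by simp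
next
  have c: "u \<in> carrier R" "v \<in> carrier R" "inv u \<in> carrier R" "inv v \<in> carrier R" using u v by auto
  assume e: "x \<otimes> v = y \<otimes> u"
  have "x \<otimes> inv u = (x \<otimes> v) \<otimes> (inv u \<otimes> inv v)"
  proof -
    have "(x \<otimes> v) \<otimes> (inv u \<otimes> inv v) = x \<otimes> inv u \<otimes> (v \<otimes> inv v)" using c x by (simp add: m_ac)
    then show ?thesis using v c x by simp
  qed
  also have "\<dots> = (y \<otimes> u) \<otimes> (inv u \<otimes> inv v)" using e by simp
  also have "\<dots> = y \<otimes> inv v \<otimes> (u \<otimes> inv u)" using c y by (simp add: m_ac)
  finally show "x \<otimes> inv u = y \<otimes> inv v" using u c y by simp
qed

lemma frac_mult: assumes u: "u \<in> Units R" and v: "v \<in> Units R" and x: "x \<in> carrier R" and y: "y \<in> carrier R"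
  shows "(x \<otimes> inv u) \<otimes> (y \<otimes> inv v) = (x \<otimes> y) \<otimes> inv (u \<otimes> v)"
  using inv_mult_units[OF u v] u v x y by (simp add: m_ac)

lemma frac_add: assumes u: "u \<in> Units R" and v: "v \<in> Units R" and x: "x \<in> carrier R" and y: "y \<in> carrier R"
  shows "(x \<otimes> inv u) \<oplus> (y \<otimes> inv v) = (x \<otimes> v \<oplus> y \<otimes> u) \<otimes> inv (u \<otimes> v)"
proof -
  have c: "u \<in> carrier R" "v \<in> carrier R" "inv u \<in> carrier R" "inv v \<in> carrier R" using u v by auto
  have "(x \<otimes> v \<oplus> y \<otimes> u) \<otimes> inv (u \<otimes> v) = x \<otimes> inv u \<otimes> (v \<otimes> inv v) \<oplus> y \<otimes> inv v \<otimes> (u \<otimes> inv u)"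
    using inv_mult_units[OF u v] c x y by simp algebra
  then show ?thesis using u v c x y by simp
qed

end

lemma hom_units:
  assumes R: "cring R" and S: "cring S" and h: "h \<in> ring_hom R S" and u: "u \<in> Units R"
  shows "h u \<in> Units S" "h (inv\<^bsub>R\<^esub> u) = inv\<^bsub>S\<^esub> (h u)"
proof -
  interpret R: cring R by fact
  interpret S: cring S by fact
  have c: "u \<in> carrier R" "inv\<^bsub>R\<^esub> u \<in> carrier R" using u by auto
  have "h u \<otimes>\<^bsub>S\<^esub> h (inv\<^bsub>R\<^esub> u) = \<one>\<^bsub>S\<^esub>"
    using ring_hom_memE(2)[OF h c] ring_hom_memE(4)[OF h] u by simp
  moreover have "h u \<in> carrier S" "h (inv\<^bsub>R\<^esub> u) \<in> carrier S" using ring_hom_memE(1)[OF h] c by auto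
  ultimately show "h u \<in> Units S" "h (inv\<^bsub>R\<^esub> u) = inv\<^bsub>S\<^esub> (h u)"
    using S.unit_char by auto
qed

lemma loc_univ:
  assumes A: "cring A" and T: "cring T" and T': "cring T'"
    and i: "i \<in> ring_hom A T" and ii: "inj_on i (carrier A)"
    and W: "W \<subseteq> carrier A" "\<one>\<^bsub>A\<^esub> \<in> W" "\<And>s t. s \<in> W \<Longrightarrow> t \<in> W \<Longrightarrow> s \<otimes>\<^bsub>A\<^esub> t \<in> W"
    and iW: "\<And>s. s \<in> W \<Longrightarrow> i s \<in> Units T"
    and rep: "\<And>x. x \<in> carrier T \<Longrightarrow> \<exists>a\<in>carrier A. \<exists>s\<in>W. x = i a \<otimes>\<^bsub>T\<^esub> inv\<^bsub>T\<^esub> (i s)"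
    and psi: "\<psi> \<in> ring_hom A T'" and psiW: "\<And>s. s \<in> W \<Longrightarrow> \<psi> s \<in> Units T'"
  shows "\<exists>\<phi>. \<phi> \<in> ring_hom T T' \<and> (\<forall>a\<in>carrier A. \<phi> (i a) = \<psi> a)"
proof -
  interpret A: cring A by fact
  interpret T: cring T by fact
  interpret T': cring T' by fact
  note iE = ring_hom_memE[OF i] and pE = ring_hom_memE[OF psi]
  have Wc: "\<And>s. s \<in> W \<Longrightarrow> s \<in> carrier A" using W by auto
  have wd: "\<psi> a \<otimes>\<^bsub>T'\<^esub> inv\<^bsub>T'\<^esub> (\<psi> s) = \<psi> b \<otimes>\<^bsub>T'\<^esub> inv\<^bsub>T'\<^esub> (\<psi> t)"
    if ab: "a \<in> carrier A" "b \<in> carrier A" "s \<in> W" "t \<in> W"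
      and e: "i a \<otimes>\<^bsub>T\<^esub> inv\<^bsub>T\<^esub> (i s) = i b \<otimes>\<^bsub>T\<^esub> inv\<^bsub>T\<^esub> (i t)" for a b s t
  proof -
    have "i a \<otimes>\<^bsub>T\<^esub> i t = i b \<otimes>\<^bsub>T\<^esub> i s" using T.frac_eq[OF iW iW] e ab iE(1) Wc by blast
    then have "i (a \<otimes>\<^bsub>A\<^esub> t) = i (b \<otimes>\<^bsub>A\<^esub> s)" using iE(2) ab Wc by simp
    then have "a \<otimes>\<^bsub>A\<^esub> t = b \<otimes>\<^bsub>A\<^esub> s" using ii ab Wc inj_onD by (metis A.m_closed)
    then have "\<psi> a \<otimes>\<^bsub>T'\<^esub> \<psi> t = \<psi> b \<otimes>\<^bsub>T'\<^esub> \<psi> s" using pE(2) ab Wc by metis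
    then show ?thesis using T'.frac_eq[OF psiW psiW] ab pE(1) Wc by blast
  qed
  define rp where "rp x = (SOME p. fst p \<in> carrier A \<and> snd p \<in> W \<and> x = i (fst p) \<otimes>\<^bsub>T\<^esub> inv\<^bsub>T\<^esub> (i (snd p)))" for x
  have rp: "fst (rp x) \<in> carrier A \<and> snd (rp x) \<in> W \<and> x = i (fst (rp x)) \<otimes>\<^bsub>T\<^esub> inv\<^bsub>T\<^esub> (i (snd (rp x)))"
    if x: "x \<in> carrier T" for x
  proof -
    obtain a s where "a \<in> carrier A" "s \<in> W" "x = i a \<otimes>\<^bsub>T\<^esub> inv\<^bsub>T\<^esub> (i s)" using rep[OF x] by blast
    then have "\<exists>p. fst p \<in> carrier A \<and> snd p \<in> W \<and> x = i (fst p) \<otimes>\<^bsub>T\<^esub> inv\<^bsub>T\<^esub> (i (snd p))"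
      by (intro exI[of _ "(a, s)"]) simp
    then show ?thesis unfolding rp_def by (rule someI_ex)
  qed
  define \<phi> where "\<phi> x = \<psi> (fst (rp x)) \<otimes>\<^bsub>T'\<^esub> inv\<^bsub>T'\<^esub> (\<psi> (snd (rp x)))" for x
  have ev: "\<phi> (i a \<otimes>\<^bsub>T\<^esub> inv\<^bsub>T\<^esub> (i s)) = \<psi> a \<otimes>\<^bsub>T'\<^esub> inv\<^bsub>T'\<^esub> (\<psi> s)"
    if a: "a \<in> carrier A" and s: "s \<in> W" for a s
  proof -
    let ?x = "i a \<otimes>\<^bsub>T\<^esub> inv\<^bsub>T\<^esub> (i s)"
    have xc: "?x \<in> carrier T" using iE(1) a iW[OF s] by auto
    show ?thesis unfolding \<phi>_def using wd[of "fst (rp ?x)" a "snd (rp ?x)" s] rp[OF xc] a s by simp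
  qed
  have ev1: "\<phi> (i a) = \<psi> a" if a: "a \<in> carrier A" for a
  proof -
    have "i a = i a \<otimes>\<^bsub>T\<^esub> inv\<^bsub>T\<^esub> (i \<one>\<^bsub>A\<^esub>)" using iE a by simp
    then show ?thesis using ev[OF a W(2)] pE a by simp
  qed
  have hom: "\<phi> \<in> ring_hom T T'"
  proof (rule ring_hom_memI)
    fix x assume x: "x \<in> carrier T"
    show "\<phi> x \<in> carrier T'" unfolding \<phi>_def using rp[OF x] pE(1) psiW Wc by auto
  next
    fix x y assume x: "x \<in> carrier T" and y: "y \<in> carrier T"
    obtain a s where as: "a \<in> carrier A" "s \<in> W" "x = i a \<otimes>\<^bsub>T\<^esub> inv\<^bsub>T\<^esub> (i s)" using rp[OF x] by blast
    obtain b t where bt: "b \<in> carrier A" "t \<in> W" "y = i b \<otimes>\<^bsub>T\<^esub> inv\<^bsub>T\<^esub> (i t)" using rp[OF y] by blast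
    have c: "i a \<in> carrier T" "i b \<in> carrier T" "\<psi> a \<in> carrier T'" "\<psi> b \<in> carrier T'"
      using as bt iE pE by auto
    have st: "s \<otimes>\<^bsub>A\<^esub> t \<in> W" using W as bt by simp
    have "x \<otimes>\<^bsub>T\<^esub> y = i (a \<otimes>\<^bsub>A\<^esub> b) \<otimes>\<^bsub>T\<^esub> inv\<^bsub>T\<^esub> (i (s \<otimes>\<^bsub>A\<^esub> t))"
      using T.frac_mult[OF iW[OF as(2)] iW[OF bt(2)] c(1,2)] as bt iE Wc by simp
    then have "\<phi> (x \<otimes>\<^bsub>T\<^esub> y) = \<psi> (a \<otimes>\<^bsub>A\<^esub> b) \<otimes>\<^bsub>T'\<^esub> inv\<^bsub>T'\<^esub> (\<psi> (s \<otimes>\<^bsub>A\<^esub> t))"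
      using ev as bt st by simp
    also have "\<dots> = (\<psi> a \<otimes>\<^bsub>T'\<^esub> inv\<^bsub>T'\<^esub> (\<psi> s)) \<otimes>\<^bsub>T'\<^esub> (\<psi> b \<otimes>\<^bsub>T'\<^esub> inv\<^bsub>T'\<^esub> (\<psi> t))"
      using T'.frac_mult[OF psiW[OF as(2)] psiW[OF bt(2)] c(3,4)] as bt pE Wc by simp
    finally show "\<phi> (x \<otimes>\<^bsub>T\<^esub> y) = \<phi> x \<otimes>\<^bsub>T'\<^esub> \<phi> y" using ev as bt by simp
  next
    fix x y assume x: "x \<in> carrier T" and y: "y \<in> carrier T"
    obtain a s where as: "a \<in> carrier A" "s \<in> W" "x = i a \<otimes>\<^bsub>T\<^esub> inv\<^bsub>T\<^esub> (i s)" using rp[OF x] by blast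
    obtain b t where bt: "b \<in> carrier A" "t \<in> W" "y = i b \<otimes>\<^bsub>T\<^esub> inv\<^bsub>T\<^esub> (i t)" using rp[OF y] by blast
    have c: "i a \<in> carrier T" "i b \<in> carrier T" "\<psi> a \<in> carrier T'" "\<psi> b \<in> carrier T'"
      using as bt iE pE by auto
    have st: "s \<otimes>\<^bsub>A\<^esub> t \<in> W" using W as bt by simp
    have n: "a \<otimes>\<^bsub>A\<^esub> t \<oplus>\<^bsub>A\<^esub> b \<otimes>\<^bsub>A\<^esub> s \<in> carrier A" using as bt Wc by simp
    have "x \<oplus>\<^bsub>T\<^esub> y = i (a \<otimes>\<^bsub>A\<^esub> t \<oplus>\<^bsub>A\<^esub> b \<otimes>\<^bsub>A\<^esub> s) \<otimes>\<^bsub>T\<^esub> inv\<^bsub>T\<^esub> (i (s \<otimes>\<^bsub>A\<^esub> t))"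
      using T.frac_add[OF iW[OF as(2)] iW[OF bt(2)] c(1,2)] as bt iE Wc by simp
    then have "\<phi> (x \<oplus>\<^bsub>T\<^esub> y) = \<psi> (a \<otimes>\<^bsub>A\<^esub> t \<oplus>\<^bsub>A\<^esub> b \<otimes>\<^bsub>A\<^esub> s) \<otimes>\<^bsub>T'\<^esub> inv\<^bsub>T'\<^esub> (\<psi> (s \<otimes>\<^bsub>A\<^esub> t))"
      using ev n st by simp
    also have "\<dots> = (\<psi> a \<otimes>\<^bsub>T'\<^esub> inv\<^bsub>T'\<^esub> (\<psi> s)) \<oplus>\<^bsub>T'\<^esub> (\<psi> b \<otimes>\<^bsub>T'\<^esub> inv\<^bsub>T'\<^esub> (\<psi> t))"
      using T'.frac_add[OF psiW[OF as(2)] psiW[OF bt(2)] c(3,4)] as bt pE Wc by simp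
    finally show "\<phi> (x \<oplus>\<^bsub>T\<^esub> y) = \<phi> x \<oplus>\<^bsub>T'\<^esub> \<phi> y" using ev as bt by simp
  next
    show "\<phi> \<one>\<^bsub>T\<^esub> = \<one>\<^bsub>T'\<^esub>" using ev1[of "\<one>\<^bsub>A\<^esub>"] iE pE by simp
  qed
  show ?thesis using hom ev1 by blast
qed


lemma nzd_facts:
  assumes A: "cring A"
  shows "nzd A \<subseteq> carrier A" "\<one>\<^bsub>A\<^esub> \<in> nzd A"
    "\<And>s t. s \<in> nzd A \<Longrightarrow> t \<in> nzd A \<Longrightarrow> s \<otimes>\<^bsub>A\<^esub> t \<in> nzd A"
    "\<And>s m. s \<in> nzd A \<Longrightarrow> s [^]\<^bsub>A\<^esub> (m::nat) \<in> nzd A"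
proof -
  interpret A: cring A by fact
  show "nzd A \<subseteq> carrier A" unfolding nzd_def by auto
  show one: "\<one>\<^bsub>A\<^esub> \<in> nzd A" unfolding nzd_def by auto
  show mult: "s \<otimes>\<^bsub>A\<^esub> t \<in> nzd A" if "s \<in> nzd A" "t \<in> nzd A" for s t
  proof -
    have st: "s \<in> carrier A" "t \<in> carrier A" using that unfolding nzd_def by auto
    have "a = \<zero>\<^bsub>A\<^esub>" if a: "a \<in> carrier A" "a \<otimes>\<^bsub>A\<^esub> (s \<otimes>\<^bsub>A\<^esub> t) = \<zero>\<^bsub>A\<^esub>" for a
    proof -
      have "(a \<otimes>\<^bsub>A\<^esub> s) \<otimes>\<^bsub>A\<^esub> t = \<zero>\<^bsub>A\<^esub>" using a st by (simp add: A.m_assoc)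
      then have "a \<otimes>\<^bsub>A\<^esub> s = \<zero>\<^bsub>A\<^esub>" using \<open>t \<in> nzd A\<close> a st unfolding nzd_def by auto
      then show ?thesis using \<open>s \<in> nzd A\<close> a unfolding nzd_def by auto
    qed
    then show ?thesis using st unfolding nzd_def by auto
  qed
  show "s [^]\<^bsub>A\<^esub> (m::nat) \<in> nzd A" if "s \<in> nzd A" for s m
  proof (induction m)
    case 0 then show ?case using one by simp
  next
    case (Suc m) then show ?case using mult[OF Suc that] by simp
  qed
qed

lemma red_facts:
  assumes A: "cring A"
  defines "N \<equiv> nilradical A"
  shows "ideal N A" "cring (reduced_ring A)"
    "(\<lambda>a. N +>\<^bsub>A\<^esub> a) \<in> ring_hom A (reduced_ring A)"
    "\<zero>\<^bsub>reduced_ring A\<^esub> = N"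
    "carrier (reduced_ring A) = (\<lambda>a. N +>\<^bsub>A\<^esub> a) ` carrier A"
    "\<And>a. a \<in> carrier A \<Longrightarrow> N +>\<^bsub>A\<^esub> a = N \<longleftrightarrow> a \<in> N"
proof -
  interpret A: cring A by fact
  show I: "ideal N A" unfolding N_def by (rule A.nilradical_ideal)
  show "cring (reduced_ring A)" unfolding reduced_ring_def N_def[symmetric] using ideal.quotient_is_cring[OF I A] .
  show "(\<lambda>a. N +>\<^bsub>A\<^esub> a) \<in> ring_hom A (reduced_ring A)" unfolding reduced_ring_def N_def[symmetric]
    using ideal.rcos_ring_hom[OF I] by simp
  show "\<zero>\<^bsub>reduced_ring A\<^esub> = N" unfolding reduced_ring_def N_def[symmetric] FactRing_def by simp
  show "carrier (reduced_ring A) = (\<lambda>a. N +>\<^bsub>A\<^esub> a) ` carrier A" unfolding reduced_ring_def N_def[symmetric] FactRing_def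
    by (simp add: A_RCOSETS_def' image_def) blast
  show "N +>\<^bsub>A\<^esub> a = N \<longleftrightarrow> a \<in> N" if a: "a \<in> carrier A" for a
    using ideal.rcos_const_imp_mem[OF I a] A.a_rcos_zero[OF I] by blast
qed

lemma red_nzd:
  assumes A: "cring A" and s: "s \<in> nzd A"
  shows "nilradical A +>\<^bsub>A\<^esub> s \<in> nzd (reduced_ring A)"
proof -
  interpret A: cring A by fact
  let ?N = "nilradical A" and ?Q = "reduced_ring A"
  note rf = red_facts[OF A]
  note hE = ring_hom_memE[OF rf(3)]
  have sc: "s \<in> carrier A" using s nzd_facts(1)[OF A] by auto
  have "x = \<zero>\<^bsub>?Q\<^esub>" if x: "x \<in> carrier ?Q" "x \<otimes>\<^bsub>?Q\<^esub> (?N +>\<^bsub>A\<^esub> s) = \<zero>\<^bsub>?Q\<^esub>" for x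
  proof -
    obtain a where a: "a \<in> carrier A" "x = ?N +>\<^bsub>A\<^esub> a" using x rf(5) by auto
    have "?N +>\<^bsub>A\<^esub> (a \<otimes>\<^bsub>A\<^esub> s) = ?N" using x a hE(2)[OF a(1) sc] rf(4) by simp
    then have "a \<otimes>\<^bsub>A\<^esub> s \<in> ?N" using rf(6) a sc by simp
    then obtain m where m: "(a \<otimes>\<^bsub>A\<^esub> s) [^]\<^bsub>A\<^esub> (m::nat) = \<zero>\<^bsub>A\<^esub>" unfolding nilradical_def by auto
    then have "a [^]\<^bsub>A\<^esub> m \<otimes>\<^bsub>A\<^esub> s [^]\<^bsub>A\<^esub> m = \<zero>\<^bsub>A\<^esub>" using A.pow_mult_distrib[of a s m] a sc A.m_comm by simp
    then have "a [^]\<^bsub>A\<^esub> m = \<zero>\<^bsub>A\<^esub>" using nzd_facts(4)[OF A s, of m] a unfolding nzd_def by auto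
    then have "a \<in> ?N" using a unfolding nilradical_def by auto
    then show ?thesis using a rf(6) rf(4) by simp
  qed
  moreover have "?N +>\<^bsub>A\<^esub> s \<in> carrier ?Q" using hE(1) sc by simp
  ultimately show ?thesis unfolding nzd_def by auto
qed

lemma phi_exists:
  assumes A: "cring A" and tA: "total_ring_of_fractions A TA i"
    and tR: "total_ring_of_fractions (reduced_ring A) TAred j"
  shows "\<exists>\<phi>. \<phi> \<in> ring_hom TA TAred \<and> (\<forall>a \<in> carrier A. \<phi> (i a) = j (nilradical A +>\<^bsub>A\<^esub> a))"
proof -
  note rf = red_facts[OF A]
  have psi: "(\<lambda>a. j (nilradical A +>\<^bsub>A\<^esub> a)) \<in> ring_hom A TAred"
    using ring_hom_trans[OF rf(3), of j TAred] tR unfolding total_ring_of_fractions_def by (simp add: comp_def)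
  show ?thesis
  proof (rule loc_univ[OF A _ _ _ _ nzd_facts(1-3)[OF A] _ _ psi])
    show "cring TA" "i \<in> ring_hom A TA" "inj_on i (carrier A)" using tA unfolding total_ring_of_fractions_def by auto
    show "cring TAred" using tR unfolding total_ring_of_fractions_def by auto
    show "\<And>s. s \<in> nzd A \<Longrightarrow> i s \<in> Units TA" using tA unfolding total_ring_of_fractions_def by auto
    show "\<And>x. x \<in> carrier TA \<Longrightarrow> \<exists>a\<in>carrier A. \<exists>s\<in>nzd A. x = i a \<otimes>\<^bsub>TA\<^esub> inv\<^bsub>TA\<^esub> i s"
      using tA unfolding total_ring_of_fractions_def by auto
    show "\<And>s. s \<in> nzd A \<Longrightarrow> j (nilradical A +>\<^bsub>A\<^esub> s) \<in> Units TAred"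
      using tR red_nzd[OF A] unfolding total_ring_of_fractions_def by auto
  qed (auto intro: nzd_facts[OF A])
qed


locale mainctx =
  fixes A :: "('a, 'm) ring_scheme" and TA :: "('b, 'n) ring_scheme" and i :: "'a \<Rightarrow> 'b"
    and TAred :: "('c, 'o) ring_scheme" and j :: "'a set \<Rightarrow> 'c" and \<phi> :: "'b \<Rightarrow> 'c"
  assumes A: "cring A" and tA: "total_ring_of_fractions A TA i"
    and tR: "total_ring_of_fractions (reduced_ring A) TAred j"
    and phi: "\<phi> \<in> ring_hom TA TAred"
    and phii: "\<forall>a \<in> carrier A. \<phi> (i a) = j (nilradical A +>\<^bsub>A\<^esub> a)"

sublocale mainctx \<subseteq> A: cring A by (rule A)
sublocale mainctx \<subseteq> T: cring TA using tA unfolding total_ring_of_fractions_def by auto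
sublocale mainctx \<subseteq> T': cring TAred using tR unfolding total_ring_of_fractions_def by auto
sublocale mainctx \<subseteq> Q: cring "reduced_ring A" using red_facts(2)[OF A] .

context mainctx begin

abbreviation "N \<equiv> nilradical A"
abbreviation "\<pi> \<equiv> (\<lambda>a. N +>\<^bsub>A\<^esub> a)"
abbreviation "Rs \<equiv> i ` carrier A"
abbreviation "Rr \<equiv> j ` carrier (reduced_ring A)"
abbreviation "Bs \<equiv> \<phi> ` carrier TA"

lemma i_hom: "i \<in> ring_hom A TA" and i_inj: "inj_on i (carrier A)"
  and j_hom: "j \<in> ring_hom (reduced_ring A) TAred" and j_inj: "inj_on j (carrier (reduced_ring A))"
  and i_nzd: "\<And>s. s \<in> nzd A \<Longrightarrow> i s \<in> Units TA"
  and i_rep: "\<And>x. x \<in> carrier TA \<Longrightarrow> \<exists>a\<in>carrier A. \<exists>s\<in>nzd A. x = i a \<otimes>\<^bsub>TA\<^esub> inv\<^bsub>TA\<^esub> (i s)"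
  using tA tR unfolding total_ring_of_fractions_def by auto

lemma pi_hom: "\<pi> \<in> ring_hom A (reduced_ring A)" using red_facts(3)[OF A] .

interpretation hi: ring_hom_ring A TA i using ring_hom_ringI2[OF A.ring_axioms T.ring_axioms i_hom] .
interpretation hphi: ring_hom_ring TA TAred \<phi> using ring_hom_ringI2[OF T.ring_axioms T'.ring_axioms phi] .
interpretation hj: ring_hom_ring "reduced_ring A" TAred j using ring_hom_ringI2[OF Q.ring_axioms T'.ring_axioms j_hom] .

lemma Rs_sub: "subring Rs TA" using hi.img_is_subring[OF A.carrier_is_subring] .
lemma Bs_sub: "subring Bs TAred" using hphi.img_is_subring[OF T.carrier_is_subring] .
lemma Rr_eq: "Rr = \<phi> ` Rs"
proof -
  have "Rr = j ` \<pi> ` carrier A" using red_facts(5)[OF A] by simp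
  also have "\<dots> = \<phi> ` Rs" using phii by (auto simp: image_image)
  finally show ?thesis .
qed
lemma Rr_sub: "subring Rr TAred" unfolding Rr_eq using hphi.img_is_subring[OF Rs_sub] .
lemma Rs_c: "Rs \<subseteq> carrier TA" using subringE(1)[OF Rs_sub] .
lemma Rr_c: "Rr \<subseteq> carrier TAred" using subringE(1)[OF Rr_sub] .
lemma Bs_c: "Bs \<subseteq> carrier TAred" using subringE(1)[OF Bs_sub] .
lemma Rr_Bs: "Rr \<subseteq> Bs" unfolding Rr_eq using Rs_c by auto

lemma phi_i_zero: assumes a: "a \<in> carrier A" shows "\<phi> (i a) = \<zero>\<^bsub>TAred\<^esub> \<longleftrightarrow> a \<in> N"
proof -
  have pa: "\<pi> a \<in> carrier (reduced_ring A)" using ring_hom_memE(1)[OF pi_hom a] .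
  have z: "N \<in> carrier (reduced_ring A)" "j N = \<zero>\<^bsub>TAred\<^esub>"
    using red_facts(4)[OF A] Q.zero_closed hj.hom_zero by auto
  have "\<phi> (i a) = \<zero>\<^bsub>TAred\<^esub> \<longleftrightarrow> j (\<pi> a) = j N" using phii a z by simp
  also have "\<dots> \<longleftrightarrow> \<pi> a = N" using j_inj pa z(1) inj_onD by fastforce
  also have "\<dots> \<longleftrightarrow> a \<in> N" using red_facts(6)[OF A a] .
  finally show ?thesis .
qed

lemma ker_nilp:
  assumes x: "x \<in> carrier TA" and z: "\<phi> x = \<zero>\<^bsub>TAred\<^esub>"
  shows "\<exists>m::nat. x [^]\<^bsub>TA\<^esub> m = \<zero>\<^bsub>TA\<^esub>"
proof -
  obtain a s where as: "a \<in> carrier A" "s \<in> nzd A" "x = i a \<otimes>\<^bsub>TA\<^esub> inv\<^bsub>TA\<^esub> (i s)" using i_rep[OF x] by blast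
  have su: "i s \<in> Units TA" using i_nzd as by simp
  have ic: "i a \<in> carrier TA" "inv\<^bsub>TA\<^esub> (i s) \<in> carrier TA" using as su by auto
  have pu: "\<phi> (inv\<^bsub>TA\<^esub> (i s)) \<in> Units TAred" using hom_units[OF T.is_cring T'.is_cring phi] su by simp
  have "\<phi> (i a) \<otimes>\<^bsub>TAred\<^esub> \<phi> (inv\<^bsub>TA\<^esub> (i s)) = \<zero>\<^bsub>TAred\<^esub>" using z as ic by simp
  then have "\<phi> (i a) \<otimes>\<^bsub>TAred\<^esub> \<phi> (inv\<^bsub>TA\<^esub> (i s)) \<otimes>\<^bsub>TAred\<^esub> inv\<^bsub>TAred\<^esub> (\<phi> (inv\<^bsub>TA\<^esub> (i s))) = \<zero>\<^bsub>TAred\<^esub>"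
    using pu by simp
  then have "\<phi> (i a) = \<zero>\<^bsub>TAred\<^esub>" using pu ic by (simp add: T'.m_assoc)
  then have "a \<in> N" using phi_i_zero as by simp
  then obtain m where m: "a [^]\<^bsub>A\<^esub> (m::nat) = \<zero>\<^bsub>A\<^esub>" unfolding nilradical_def by auto
  have "(i a) [^]\<^bsub>TA\<^esub> m = \<zero>\<^bsub>TA\<^esub>" using hi.hom_nat_pow[OF as(1), of m] m by simp
  then have "x [^]\<^bsub>TA\<^esub> m = \<zero>\<^bsub>TA\<^esub>"
    using T.nilp_mult[OF ic(1) _ ic(2)] as(3) T.m_comm ic by simp
  then show ?thesis by blast
qed

lemma Rs_nilp_unit:
  assumes r: "r \<in> Rs" and m: "r [^]\<^bsub>TA\<^esub> (m::nat) = \<zero>\<^bsub>TA\<^esub>"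
  shows "\<one>\<^bsub>TA\<^esub> \<oplus>\<^bsub>TA\<^esub> r \<in> Units TA \<and> inv\<^bsub>TA\<^esub> (\<one>\<^bsub>TA\<^esub> \<oplus>\<^bsub>TA\<^esub> r) \<in> Rs"
proof -
  obtain a where a: "a \<in> carrier A" "r = i a" using r by auto
  have "i (a [^]\<^bsub>A\<^esub> m) = i \<zero>\<^bsub>A\<^esub>" using hi.hom_nat_pow[OF a(1), of m] m a by simp
  then have am: "a [^]\<^bsub>A\<^esub> m = \<zero>\<^bsub>A\<^esub>" using i_inj a inj_onD by fastforce
  have u: "\<one>\<^bsub>A\<^esub> \<oplus>\<^bsub>A\<^esub> a \<in> Units A" using A.nilp_one_plus_unit[OF a(1) am] .
  have e: "i (\<one>\<^bsub>A\<^esub> \<oplus>\<^bsub>A\<^esub> a) = \<one>\<^bsub>TA\<^esub> \<oplus>\<^bsub>TA\<^esub> r" using a by simp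
  have "i (\<one>\<^bsub>A\<^esub> \<oplus>\<^bsub>A\<^esub> a) \<in> Units TA" "i (inv\<^bsub>A\<^esub> (\<one>\<^bsub>A\<^esub> \<oplus>\<^bsub>A\<^esub> a)) = inv\<^bsub>TA\<^esub> (i (\<one>\<^bsub>A\<^esub> \<oplus>\<^bsub>A\<^esub> a))"
    using hom_units[OF A T.is_cring i_hom u] by auto
  moreover have "inv\<^bsub>A\<^esub> (\<one>\<^bsub>A\<^esub> \<oplus>\<^bsub>A\<^esub> a) \<in> carrier A" using u by auto
  ultimately show ?thesis using e by (metis image_eqI)
qed

end

lemma (in cring) prin_IP_sub:
  assumes K: "subring K R" and K': "subring K' R" and KK: "K \<subseteq> K'" and y: "y \<in> carrier R"
  shows "ideal_prod R (prin K y) K' = prin K' y"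
proof
  note KE = subringE[OF K] and KE' = subringE[OF K']
  have c: "prin K y \<subseteq> carrier R" using prin_carrier[OF K y] .
  have rs: "rsubmodule R K' (prin K' y)" using prin_rsub[OF K' y] .
  show "ideal_prod R (prin K y) K' \<subseteq> prin K' y"
  proof (rule IP_minimal2[OF c KE'(1)])
    show "\<zero> \<in> prin K' y" using rs unfolding rsubmodule_def by auto
    show "a \<oplus> b \<in> prin K' y" if "a \<in> prin K' y" "b \<in> prin K' y" for a b
      using rs that unfolding rsubmodule_def by auto
    show "a \<otimes> b \<in> prin K' y" if ab: "a \<in> prin K y" "b \<in> K'" for a b
    proof -
      obtain r where r: "r \<in> K" "a = r \<otimes> y" using ab unfolding prin_def by auto
      have rc: "r \<in> carrier R" "b \<in> carrier R" using r ab KE KE' by auto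
      have "a \<otimes> b = (r \<otimes> b) \<otimes> y" using r rc y by (simp add: m_ac)
      moreover have "r \<otimes> b \<in> K'" using KK r ab KE'(6) by auto
      ultimately show ?thesis unfolding prin_def by auto
    qed
  qed
  show "prin K' y \<subseteq> ideal_prod R (prin K y) K'"
  proof
    fix z assume "z \<in> prin K' y"
    then obtain b where b: "b \<in> K'" "z = b \<otimes> y" unfolding prin_def by auto
    have "\<one> \<otimes> y \<in> prin K y" using KE unfolding prin_def by auto
    moreover have "z = (\<one> \<otimes> y) \<otimes> b" using b KE' y by (simp add: m_comm subsetD)
    ultimately show "z \<in> ideal_prod R (prin K y) K'" using IP_prod[OF c KE'(1)] b by simp
  qed
qed

lemma (in cring) subring_rsub_over: "subring K R \<Longrightarrow> subring K' R \<Longrightarrow> K \<subseteq> K' \<Longrightarrow> rsubmodule R K K'"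
  using subringE[of K' R] unfolding rsubmodule_def by (auto simp: subsetD)

context mainctx begin

interpretation hc: ring_hom_cring TA TAred \<phi>
  by (intro ring_hom_cring.intro ring_hom_cring_axioms.intro T.is_cring T'.is_cring phi)

abbreviation "G1 \<equiv> inv_group TA Rs"
abbreviation "H1 \<equiv> principal_ideals TA Rs"
abbreviation "G2 \<equiv> inv_group TAred Rr"
abbreviation "H2 \<equiv> principal_ideals TAred Rr"
abbreviation "G3 \<equiv> inv_group TAred Bs"
abbreviation "H3 \<equiv> principal_ideals TAred Bs"
abbreviation "\<psi>1 \<equiv> induced_ideal TAred Rr \<phi>"
abbreviation "\<psi>2 \<equiv> induced_ideal TAred Bs id"

lemma groups: "comm_group G1" "comm_group G2" "comm_group G3"
  "subgroup H1 G1" "subgroup H2 G2" "subgroup H3 G3"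
  using T.inv_group_comm[OF Rs_sub] T'.inv_group_comm[OF Rr_sub] T'.inv_group_comm[OF Bs_sub]
    T.principal_subgroup[OF Rs_sub] T'.principal_subgroup[OF Rr_sub] T'.principal_subgroup[OF Bs_sub]
  by auto

lemma rsub_image: assumes L: "rsubmodule TA Rs L" shows "rsubmodule TAred Rr (\<phi> ` L)"
proof -
  have Lc: "L \<subseteq> carrier TA" using L unfolding rsubmodule_def by auto
  have "\<zero>\<^bsub>TAred\<^esub> \<in> \<phi> ` L" using L by (auto simp: rsubmodule_def intro!: image_eqI[of _ _ "\<zero>\<^bsub>TA\<^esub>"])
  moreover have "a \<oplus>\<^bsub>TAred\<^esub> b \<in> \<phi> ` L" if ab: "a \<in> \<phi> ` L" "b \<in> \<phi> ` L" for a b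
  proof -
    obtain x y where xy: "x \<in> L" "y \<in> L" "a = \<phi> x" "b = \<phi> y" using ab by auto
    then have "a \<oplus>\<^bsub>TAred\<^esub> b = \<phi> (x \<oplus>\<^bsub>TA\<^esub> y)" using Lc by (simp add: subsetD)
    moreover have "x \<oplus>\<^bsub>TA\<^esub> y \<in> L" using L xy unfolding rsubmodule_def by auto
    ultimately show ?thesis by blast
  qed
  moreover have "\<ominus>\<^bsub>TAred\<^esub> a \<in> \<phi> ` L" if ab: "a \<in> \<phi> ` L" for a
  proof -
    obtain x where xy: "x \<in> L" "a = \<phi> x" using ab by auto
    then have "\<ominus>\<^bsub>TAred\<^esub> a = \<phi> (\<ominus>\<^bsub>TA\<^esub> x)" using Lc by (simp add: subsetD)
    moreover have "\<ominus>\<^bsub>TA\<^esub> x \<in> L" using L xy unfolding rsubmodule_def by auto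
    ultimately show ?thesis by blast
  qed
  moreover have "r \<otimes>\<^bsub>TAred\<^esub> a \<in> \<phi> ` L" if ab: "r \<in> Rr" "a \<in> \<phi> ` L" for r a
  proof -
    obtain x r0 where xy: "x \<in> L" "a = \<phi> x" "r0 \<in> Rs" "r = \<phi> r0" using ab unfolding Rr_eq by auto
    then have "r \<otimes>\<^bsub>TAred\<^esub> a = \<phi> (r0 \<otimes>\<^bsub>TA\<^esub> x)" using Lc Rs_c by (simp add: subsetD)
    moreover have "r0 \<otimes>\<^bsub>TA\<^esub> x \<in> L" using L xy unfolding rsubmodule_def by auto
    ultimately show ?thesis by blast
  qed
  moreover have "\<phi> ` L \<subseteq> carrier TAred" using Lc by auto
  ultimately show ?thesis unfolding rsubmodule_def by blast
qed

lemma psi1_eq: assumes L: "L \<in> invertible_ideals TA Rs" shows "\<psi>1 L = \<phi> ` L"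
proof -
  have Lr: "rsubmodule TA Rs L" using L T.invertible_rsub by blast
  have Lc: "L \<subseteq> carrier TA" using Lr T.rsub_carrier by blast
  have "\<psi>1 L = ideal_prod TAred (\<phi> ` L) (\<phi> ` Rs)" unfolding induced_ideal_def Rr_eq ..
  also have "\<dots> = \<phi> ` ideal_prod TA L Rs" using T.IP_image[OF T'.is_cring phi Lc Rs_c] by simp
  also have "ideal_prod TA L Rs = L" using T.IP_comm[OF Lc Rs_c] T.rsub_IP[OF Rs_sub Lr] by simp
  finally show ?thesis .
qed

lemma psi1_hom: "\<psi>1 \<in> hom G1 G2"
proof (rule homI)
  fix L assume "L \<in> carrier G1"
  then have L: "L \<in> invertible_ideals TA Rs" by simp
  obtain L' where L': "rsubmodule TA Rs L'" "ideal_prod TA L L' = Rs" using L unfolding invertible_ideals_def by auto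
  have Lr: "rsubmodule TA Rs L" using L T.invertible_rsub by blast
  have c: "L \<subseteq> carrier TA" "L' \<subseteq> carrier TA" using Lr L' T.rsub_carrier by auto
  have "ideal_prod TAred (\<phi> ` L) (\<phi> ` L') = \<phi> ` ideal_prod TA L L'" using T.IP_image[OF T'.is_cring phi c] by simp
  also have "\<dots> = Rr" using L' Rr_eq by simp
  finally have e: "ideal_prod TAred (\<phi> ` L) (\<phi> ` L') = Rr" .
  have "\<phi> ` L \<in> invertible_ideals TAred Rr"
    unfolding invertible_ideals_def using rsub_image[OF Lr] rsub_image[OF L'(1)] e by blast
  then show "\<psi>1 L \<in> carrier G2" using psi1_eq[OF L] by simp
next
  fix L M assume "L \<in> carrier G1" "M \<in> carrier G1"
  then have L: "L \<in> invertible_ideals TA Rs" and M: "M \<in> invertible_ideals TA Rs" by auto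
  interpret G1g: comm_group G1 by (rule groups(1))
  have "L \<otimes>\<^bsub>G1\<^esub> M \<in> carrier G1" using L M by (intro G1g.m_closed) auto
  then have LM: "ideal_prod TA L M \<in> invertible_ideals TA Rs" by simp
  have c: "L \<subseteq> carrier TA" "M \<subseteq> carrier TA" using L M T.inv_carrier by auto
  show "\<psi>1 (L \<otimes>\<^bsub>G1\<^esub> M) = \<psi>1 L \<otimes>\<^bsub>G2\<^esub> \<psi>1 M"
    using psi1_eq[OF LM] psi1_eq[OF L] psi1_eq[OF M] T.IP_image[OF T'.is_cring phi c] by simp
qed

lemma phi_prin: assumes x: "x \<in> carrier TA" shows "\<phi> ` T.prin Rs x = T'.prin Rr (\<phi> x)"
  unfolding T.prin_def T'.prin_def Rr_eq image_image using x Rs_c by (auto simp: subsetD)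

lemma psi1_H: "\<psi>1 ` H1 \<subseteq> H2"
proof
  fix P assume "P \<in> \<psi>1 ` H1"
  then obtain x where x: "x \<in> Units TA" "P = \<psi>1 (T.prin Rs x)" unfolding T.principal_ideals_eq by auto
  have xc: "x \<in> carrier TA" using x by auto
  have "P = T'.prin Rr (\<phi> x)" using x psi1_eq[OF T.prin_inv[OF Rs_sub x(1)]] phi_prin[OF xc] by simp
  moreover have "\<phi> x \<in> Units TAred" using hom_units[OF T.is_cring T'.is_cring phi x(1)] by simp
  ultimately show "P \<in> H2" unfolding T'.principal_ideals_eq by auto
qed

lemma Bs_rsub: "rsubmodule TAred Bs Bs" using T'.subring_rsub[OF Bs_sub] .
lemma Bs_rsub_Rr: "rsubmodule TAred Rr Bs" using T'.subring_rsub_over[OF Rr_sub Bs_sub Rr_Bs] .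
lemma BB: "ideal_prod TAred Bs Bs = Bs" using T'.rsub_IP[OF Bs_sub Bs_rsub] .
lemma RrB: "ideal_prod TAred Rr Bs = Bs" using T'.rsub_IP[OF Rr_sub Bs_rsub_Rr] .

lemma psi2_eq: "\<psi>2 L = ideal_prod TAred L Bs" unfolding induced_ideal_def by simp

lemma psi2_hom: "\<psi>2 \<in> hom G2 G3"
proof (rule homI)
  fix L assume "L \<in> carrier G2"
  then have L: "L \<in> invertible_ideals TAred Rr" by simp
  obtain L' where L': "rsubmodule TAred Rr L'" "ideal_prod TAred L L' = Rr" using L unfolding invertible_ideals_def by auto
  have c: "L \<subseteq> carrier TAred" "L' \<subseteq> carrier TAred" using L L' T'.inv_carrier T'.rsub_carrier by auto
  have "ideal_prod TAred (ideal_prod TAred L Bs) (ideal_prod TAred L' Bs) = ideal_prod TAred (ideal_prod TAred L L') (ideal_prod TAred Bs Bs)"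
    using T'.IP_swap[OF c(1) Bs_c c(2) Bs_c] .
  also have "\<dots> = Bs" using L' BB RrB by simp
  finally have e: "ideal_prod TAred (ideal_prod TAred L Bs) (ideal_prod TAred L' Bs) = Bs" .
  have "ideal_prod TAred L Bs \<in> invertible_ideals TAred Bs"
    unfolding invertible_ideals_def using T'.IP_rsub2[OF Bs_c c(1) Bs_rsub] T'.IP_rsub2[OF Bs_c c(2) Bs_rsub] e by blast
  then show "\<psi>2 L \<in> carrier G3" unfolding psi2_eq by simp
next
  fix L M assume "L \<in> carrier G2" "M \<in> carrier G2"
  then have c: "L \<subseteq> carrier TAred" "M \<subseteq> carrier TAred" using T'.inv_carrier by auto
  have "ideal_prod TAred (ideal_prod TAred L Bs) (ideal_prod TAred M Bs) = ideal_prod TAred (ideal_prod TAred L M) (ideal_prod TAred Bs Bs)"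
    using T'.IP_swap[OF c(1) Bs_c c(2) Bs_c] .
  then show "\<psi>2 (L \<otimes>\<^bsub>G2\<^esub> M) = \<psi>2 L \<otimes>\<^bsub>G3\<^esub> \<psi>2 M" unfolding psi2_eq using BB by simp
qed

lemma psi2_H: "\<psi>2 ` H2 \<subseteq> H3"
proof
  fix P assume "P \<in> \<psi>2 ` H2"
  then obtain y where y: "y \<in> Units TAred" "P = \<psi>2 (T'.prin Rr y)" unfolding T'.principal_ideals_eq by auto
  have "P = T'.prin Bs y" using y T'.prin_IP_sub[OF Rr_sub Bs_sub Rr_Bs] unfolding psi2_eq by auto
  then show "P \<in> H3" using y unfolding T'.principal_ideals_eq by auto
qed

end

lemma (in cring) common_exp:
  assumes "finite E" "E \<subseteq> carrier R" "\<And>e. e \<in> E \<Longrightarrow> \<exists>m::nat. e [^] m = \<zero>"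
  shows "\<exists>p::nat. \<forall>e\<in>E. e [^] p = \<zero>"
  using assms
proof (induction E rule: finite_induct)
  case empty then show ?case by simp
next
  case (insert x F)
  have "\<exists>p::nat. \<forall>e\<in>F. e [^] p = \<zero>" using insert.IH insert.prems by blast
  then obtain p :: nat where p: "\<forall>e\<in>F. e [^] p = \<zero>" by blast
  obtain m where m: "x [^] (m::nat) = \<zero>" using insert.prems by blast
  have "e [^] (p + m) = \<zero>" if e: "e \<in> insert x F" for e
  proof (cases "e = x")
    case True
    then show ?thesis using nilp_pow_ge[of x m "p + m"] m insert.prems(1) by simp
  next
    case False
    then have "e \<in> F" using e by simp
    then show ?thesis using nilp_pow_ge[of e p "p + m"] p insert.prems(1) by auto
  qed
  then have "\<forall>e\<in>insert x F. e [^] (p + m) = \<zero>" by blast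
  then show ?case by blast
qed

context mainctx begin

interpretation hc: ring_hom_cring TA TAred \<phi>
  by (intro ring_hom_cring.intro ring_hom_cring_axioms.intro T.is_cring T'.is_cring phi)

lemma inj_core:
  assumes L: "L \<in> invertible_ideals TA Rs" and P: "\<psi>1 L \<in> H2"
  shows "L \<in> H1"
proof -
  have Lr: "rsubmodule TA Rs L" using L T.invertible_rsub by blast
  have Lc: "L \<subseteq> carrier TA" using Lr T.rsub_carrier by blast
  obtain L' where L': "rsubmodule TA Rs L'" "ideal_prod TA L L' = Rs" using L unfolding invertible_ideals_def by auto
  have L'c: "L' \<subseteq> carrier TA" using L' T.rsub_carrier by blast
  obtain y where y: "y \<in> Units TAred" "\<phi> ` L = T'.prin Rr y"
    using P psi1_eq[OF L] unfolding T'.principal_ideals_eq by auto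
  have yc: "y \<in> carrier TAred" using y by auto
  have one_Rr: "\<one>\<^bsub>TAred\<^esub> \<in> Rr" using subringE(3)[OF Rr_sub] .
  have "y = \<one>\<^bsub>TAred\<^esub> \<otimes>\<^bsub>TAred\<^esub> y" using yc by simp
  then have "y \<in> T'.prin Rr y" unfolding T'.prin_def using one_Rr by (rule image_eqI)
  then have "y \<in> \<phi> ` L" using y(2) by simp
  then obtain l0 where l0: "l0 \<in> L" "\<phi> l0 = y" by (metis imageE)
  have l0c: "l0 \<in> carrier TA" using l0 Lc by auto
  have "\<one>\<^bsub>TA\<^esub> \<in> ideal_prod TA L L'" using L'(2) subringE(3)[OF Rs_sub] by simp
  then obtain n f g where fg: "\<one>\<^bsub>TA\<^esub> = finsum TA (\<lambda>k. f k \<otimes>\<^bsub>TA\<^esub> g k) {..<(n::nat)}" "\<forall>k<n. f k \<in> L \<and> g k \<in> L'"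
    unfolding T.IP_mem by blast
  have fc: "\<And>k. k < n \<Longrightarrow> f k \<in> carrier TA" and gc: "\<And>k. k < n \<Longrightarrow> g k \<in> carrier TA"
    using fg(2) Lc L'c by auto
  have exa: "\<exists>a. a \<in> Rs \<and> \<phi> (f k) = \<phi> a \<otimes>\<^bsub>TAred\<^esub> y" if k: "k < n" for k
  proof -
    have "\<phi> (f k) \<in> T'.prin Rr y" using y fg(2) k by auto
    then obtain r where "r \<in> Rr" "\<phi> (f k) = r \<otimes>\<^bsub>TAred\<^esub> y" unfolding T'.prin_def by auto
    then show ?thesis unfolding Rr_eq by auto
  qed
  define a where "a k = (SOME a. a \<in> Rs \<and> \<phi> (f k) = \<phi> a \<otimes>\<^bsub>TAred\<^esub> y)" for k
  have a: "a k \<in> Rs \<and> \<phi> (f k) = \<phi> (a k) \<otimes>\<^bsub>TAred\<^esub> y" if k: "k < n" for k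
    unfolding a_def using someI_ex[OF exa[OF k]] .
  have ac: "\<And>k. k < n \<Longrightarrow> a k \<in> carrier TA" using a Rs_c by blast
  define z where "z k = f k \<ominus>\<^bsub>TA\<^esub> a k \<otimes>\<^bsub>TA\<^esub> l0" for k
  have zL: "z k \<in> L" if k: "k < n" for k
  proof -
    have "a k \<otimes>\<^bsub>TA\<^esub> l0 \<in> L" using Lr a[OF k] l0 unfolding rsubmodule_def by auto
    then have "\<ominus>\<^bsub>TA\<^esub> (a k \<otimes>\<^bsub>TA\<^esub> l0) \<in> L" using Lr unfolding rsubmodule_def by auto
    then show ?thesis unfolding z_def a_minus_def using Lr fg(2) k unfolding rsubmodule_def by auto
  qed
  have zc: "\<And>k. k < n \<Longrightarrow> z k \<in> carrier TA" using zL Lc by auto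
  have z0: "\<phi> (z k) = \<zero>\<^bsub>TAred\<^esub>" if k: "k < n" for k
  proof -
    have "\<phi> (z k) = \<phi> (f k) \<ominus>\<^bsub>TAred\<^esub> \<phi> (a k) \<otimes>\<^bsub>TAred\<^esub> \<phi> l0"
      unfolding z_def using fc[OF k] ac[OF k] l0c by (simp add: a_minus_def)
    moreover have "\<phi> (a k) \<otimes>\<^bsub>TAred\<^esub> y \<in> carrier TAred" using ac[OF k] yc by simp
    ultimately show ?thesis using a[OF k] l0 by (simp add: T'.r_neg a_minus_def)
  qed
  define s where "s = finsum TA (\<lambda>k. z k \<otimes>\<^bsub>TA\<^esub> g k) {..<n}"
  have sR: "s \<in> Rs"
  proof -
    have "s \<in> ideal_prod TA L L'" unfolding s_def T.IP_mem using zL fg(2) by blast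
    then show ?thesis using L'(2) by simp
  qed
  have sc: "s \<in> carrier TA" using sR Rs_c by auto
  have s0: "\<phi> s = \<zero>\<^bsub>TAred\<^esub>"
  proof -
    have "\<phi> s = finsum TAred (\<phi> \<circ> (\<lambda>k. z k \<otimes>\<^bsub>TA\<^esub> g k)) {..<n}"
      unfolding s_def using zc gc by (intro hc.hom_finsum) auto
    also have "\<dots> = finsum TAred (\<lambda>k. \<zero>\<^bsub>TAred\<^esub>) {..<n}"
      by (rule T'.finsum_cong') (use zc gc z0 in auto)
    finally show ?thesis by simp
  qed
  define w where "w = finsum TA (\<lambda>k. a k \<otimes>\<^bsub>TA\<^esub> g k) {..<n}"
  have wL: "w \<in> L'"
  proof -
    have "w \<in> ideal_prod TA Rs L'" unfolding w_def T.IP_mem using a fg(2) by blast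
    then show ?thesis using T.rsub_IP[OF Rs_sub L'(1)] by simp
  qed
  have wc: "w \<in> carrier TA" using wL L'c by auto
  have eq: "l0 \<otimes>\<^bsub>TA\<^esub> w \<oplus>\<^bsub>TA\<^esub> s = \<one>\<^bsub>TA\<^esub>"
  proof -
    have "finsum TA (\<lambda>k. f k \<otimes>\<^bsub>TA\<^esub> g k) {..<n} =
        finsum TA (\<lambda>k. l0 \<otimes>\<^bsub>TA\<^esub> (a k \<otimes>\<^bsub>TA\<^esub> g k) \<oplus>\<^bsub>TA\<^esub> z k \<otimes>\<^bsub>TA\<^esub> g k) {..<n}"
    proof (rule T.finsum_cong'[OF refl])
      show "(\<lambda>k. l0 \<otimes>\<^bsub>TA\<^esub> (a k \<otimes>\<^bsub>TA\<^esub> g k) \<oplus>\<^bsub>TA\<^esub> z k \<otimes>\<^bsub>TA\<^esub> g k) \<in> {..<n} \<rightarrow> carrier TA"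
        using ac gc zc l0c by auto
      fix k assume "k \<in> {..<n}"
      then have k: "k < n" by simp
      have c: "f k \<in> carrier TA" "a k \<in> carrier TA" "g k \<in> carrier TA" using fc ac gc k by auto
      show "f k \<otimes>\<^bsub>TA\<^esub> g k = l0 \<otimes>\<^bsub>TA\<^esub> (a k \<otimes>\<^bsub>TA\<^esub> g k) \<oplus>\<^bsub>TA\<^esub> z k \<otimes>\<^bsub>TA\<^esub> g k"
        unfolding z_def using c l0c by algebra
    qed
    also have "\<dots> = finsum TA (\<lambda>k. l0 \<otimes>\<^bsub>TA\<^esub> (a k \<otimes>\<^bsub>TA\<^esub> g k)) {..<n} \<oplus>\<^bsub>TA\<^esub> s"
      unfolding s_def using ac gc zc l0c by (intro T.finsum_addf) auto
    also have "finsum TA (\<lambda>k. l0 \<otimes>\<^bsub>TA\<^esub> (a k \<otimes>\<^bsub>TA\<^esub> g k)) {..<n} = l0 \<otimes>\<^bsub>TA\<^esub> w"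
      unfolding w_def using ac gc l0c by (intro T.finsum_rdistr[symmetric]) auto
    finally show ?thesis using fg(1) by simp
  qed
  obtain m where m: "s [^]\<^bsub>TA\<^esub> (m::nat) = \<zero>\<^bsub>TA\<^esub>" using ker_nilp[OF sc s0] by blast
  have ns: "\<ominus>\<^bsub>TA\<^esub> s \<in> Rs" using subringE(5)[OF Rs_sub sR] .
  have "(\<ominus>\<^bsub>TA\<^esub> \<one>\<^bsub>TA\<^esub> \<otimes>\<^bsub>TA\<^esub> s) [^]\<^bsub>TA\<^esub> m = \<zero>\<^bsub>TA\<^esub>" using T.nilp_mult[OF sc m] by simp
  then have nm: "(\<ominus>\<^bsub>TA\<^esub> s) [^]\<^bsub>TA\<^esub> m = \<zero>\<^bsub>TA\<^esub>" using sc by (simp add: T.l_minus)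
  define u where "u = \<one>\<^bsub>TA\<^esub> \<oplus>\<^bsub>TA\<^esub> \<ominus>\<^bsub>TA\<^esub> s"
  have u: "u \<in> Units TA" "inv\<^bsub>TA\<^esub> u \<in> Rs" using Rs_nilp_unit[OF ns nm] unfolding u_def by auto
  have iuc: "inv\<^bsub>TA\<^esub> u \<in> carrier TA" using u by auto
  have l0w: "l0 \<otimes>\<^bsub>TA\<^esub> w = u"
  proof -
    have "l0 \<otimes>\<^bsub>TA\<^esub> w = (l0 \<otimes>\<^bsub>TA\<^esub> w \<oplus>\<^bsub>TA\<^esub> s) \<oplus>\<^bsub>TA\<^esub> \<ominus>\<^bsub>TA\<^esub> s" using l0c wc sc by algebra
    then show ?thesis using eq unfolding u_def by simp
  qed
  define w' where "w' = inv\<^bsub>TA\<^esub> u \<otimes>\<^bsub>TA\<^esub> w"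
  have w'L: "w' \<in> L'" unfolding w'_def using L'(1) u(2) wL unfolding rsubmodule_def by auto
  have w'c: "w' \<in> carrier TA" using w'L L'c by auto
  have lw': "l0 \<otimes>\<^bsub>TA\<^esub> w' = \<one>\<^bsub>TA\<^esub>"
  proof -
    have "l0 \<otimes>\<^bsub>TA\<^esub> w' = inv\<^bsub>TA\<^esub> u \<otimes>\<^bsub>TA\<^esub> (l0 \<otimes>\<^bsub>TA\<^esub> w)" unfolding w'_def using l0c wc iuc by algebra
    then show ?thesis using l0w u by simp
  qed
  have l0u: "l0 \<in> Units TA" using T.unit_char(1)[OF l0c w'c lw'] .
  have "L = T.prin Rs l0"
  proof
    show "L \<subseteq> T.prin Rs l0"
    proof
      fix x assume x: "x \<in> L"
      have xc: "x \<in> carrier TA" using x Lc by auto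
      have "x \<otimes>\<^bsub>TA\<^esub> w' \<in> Rs" using T.IP_prod[OF Lc L'c x w'L] L'(2) by simp
      moreover have "x = (x \<otimes>\<^bsub>TA\<^esub> w') \<otimes>\<^bsub>TA\<^esub> l0"
      proof -
        have "(x \<otimes>\<^bsub>TA\<^esub> w') \<otimes>\<^bsub>TA\<^esub> l0 = x \<otimes>\<^bsub>TA\<^esub> (l0 \<otimes>\<^bsub>TA\<^esub> w')" using xc w'c l0c by algebra
        then show ?thesis using lw' xc by simp
      qed
      ultimately show "x \<in> T.prin Rs l0" unfolding T.prin_def by auto
    qed
    show "T.prin Rs l0 \<subseteq> L" unfolding T.prin_def using Lr l0 unfolding rsubmodule_def by auto
  qed
  then show ?thesis using l0u unfolding T.principal_ideals_eq by auto
qed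

lemma comp_core:
  assumes M: "M \<in> invertible_ideals TA Rs"
  shows "\<psi>2 (\<psi>1 M) = Bs"
proof -
  have Mr: "rsubmodule TA Rs M" using M T.invertible_rsub by blast
  have Mc: "M \<subseteq> carrier TA" using Mr T.rsub_carrier by blast
  obtain M' where M': "rsubmodule TA Rs M'" "ideal_prod TA M M' = Rs" using M unfolding invertible_ideals_def by auto
  have M'c: "M' \<subseteq> carrier TA" using M' T.rsub_carrier by blast
  have pMc: "\<phi> ` M \<subseteq> carrier TAred" "\<phi> ` M \<subseteq> Bs" using Mc by auto
  have e1: "\<psi>2 (\<psi>1 M) = ideal_prod TAred (\<phi> ` M) Bs" using psi1_eq[OF M] psi2_eq by simp
  have sub: "ideal_prod TAred (\<phi> ` M) Bs \<subseteq> Bs"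
  proof (rule T'.IP_minimal2[OF pMc(1) Bs_c])
    show "\<zero>\<^bsub>TAred\<^esub> \<in> Bs" using subringE(2)[OF Bs_sub] .
    show "a \<oplus>\<^bsub>TAred\<^esub> b \<in> Bs" if "a \<in> Bs" "b \<in> Bs" for a b using subringE(7)[OF Bs_sub] that .
    show "x \<otimes>\<^bsub>TAred\<^esub> y \<in> Bs" if "x \<in> \<phi> ` M" "y \<in> Bs" for x y using subringE(6)[OF Bs_sub] that pMc(2) by auto
  qed
  have "\<phi> ` ideal_prod TA M M' = ideal_prod TAred (\<phi> ` M) (\<phi> ` M')" using T.IP_image[OF T'.is_cring phi Mc M'c] .
  then have "Rr = ideal_prod TAred (\<phi> ` M) (\<phi> ` M')" using M'(2) Rr_eq by simp
  also have "\<dots> \<subseteq> ideal_prod TAred (\<phi> ` M) Bs" using M'c by (intro T'.IP_mono) auto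
  finally have one: "\<one>\<^bsub>TAred\<^esub> \<in> ideal_prod TAred (\<phi> ` M) Bs" using subringE(3)[OF Rr_sub] by auto
  have rs: "rsubmodule TAred Bs (ideal_prod TAred (\<phi> ` M) Bs)" using T'.IP_rsub2[OF Bs_c pMc(1) Bs_rsub] .
  have "Bs \<subseteq> ideal_prod TAred (\<phi> ` M) Bs"
  proof
    fix b assume b: "b \<in> Bs"
    have "b \<otimes>\<^bsub>TAred\<^esub> \<one>\<^bsub>TAred\<^esub> \<in> ideal_prod TAred (\<phi> ` M) Bs" using rs b one unfolding rsubmodule_def by auto
    then show "b \<in> ideal_prod TAred (\<phi> ` M) Bs" using b Bs_c by (auto simp: subsetD)
  qed
  then show ?thesis using e1 sub by auto
qed

end

context mainctx begin

interpretation hc: ring_hom_cring TA TAred \<phi>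
  by (intro ring_hom_cring.intro ring_hom_cring_axioms.intro T.is_cring T'.is_cring phi)

lemma phi_eq_of_diff: assumes "x \<in> carrier TA" "y \<in> carrier TA" "\<phi> (x \<ominus>\<^bsub>TA\<^esub> y) = \<zero>\<^bsub>TAred\<^esub>"
  shows "\<phi> x = \<phi> y"
proof -
  have c: "\<phi> x \<in> carrier TAred" "\<phi> y \<in> carrier TAred" using assms by auto
  have d: "\<phi> x \<ominus>\<^bsub>TAred\<^esub> \<phi> y = \<zero>\<^bsub>TAred\<^esub>" using assms by (simp add: a_minus_def)
  have "\<phi> x = (\<phi> x \<ominus>\<^bsub>TAred\<^esub> \<phi> y) \<oplus>\<^bsub>TAred\<^esub> \<phi> y" using c by algebra
  then show ?thesis using d c by simp
qed

lemma filt_ker: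
  assumes E: "E \<subseteq> carrier TA" and E0: "\<And>e. e \<in> E \<Longrightarrow> \<phi> e = \<zero>\<^bsub>TAred\<^esub>" and d: "d \<in> filt TA E 1"
  shows "\<phi> d = \<zero>\<^bsub>TAred\<^esub>"
proof -
  have K: "ideal (a_kernel TA TAred \<phi>) TA" using ring_hom_ring.kernel_is_ideal[OF ring_hom_ringI2[OF T.ring_axioms T'.ring_axioms phi]] .
  have ak: "a_kernel TA TAred \<phi> = {x \<in> carrier TA. \<phi> x = \<zero>\<^bsub>TAred\<^esub>}"
    unfolding a_kernel_def kernel_def by simp
  have "{lprod TA xs | xs. set xs \<subseteq> E \<and> 1 \<le> length xs} \<subseteq> a_kernel TA TAred \<phi>"
  proof
    fix x assume "x \<in> {lprod TA xs | xs. set xs \<subseteq> E \<and> 1 \<le> length xs}"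
    then obtain xs where xs: "x = lprod TA xs" "set xs \<subseteq> E" "1 \<le> length xs" by blast
    then obtain e ys where ys: "xs = e # ys" by (cases xs) auto
    have c: "e \<in> carrier TA" "set ys \<subseteq> carrier TA" using xs ys E by auto
    have "x = e \<otimes>\<^bsub>TA\<^esub> lprod TA ys" using xs ys by simp
    moreover have "\<phi> e = \<zero>\<^bsub>TAred\<^esub>" using E0 xs ys by simp
    ultimately have "\<phi> x = \<zero>\<^bsub>TAred\<^esub>" using c by simp
    moreover have "x \<in> carrier TA" using xs E by (auto intro!: T.lprod_carrier)
    ultimately show "x \<in> a_kernel TA TAred \<phi>" unfolding ak by simp
  qed
  then have "filt TA E 1 \<subseteq> a_kernel TA TAred \<phi>" unfolding filt_def by (rule T.genideal_minimal[OF K])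
  then show ?thesis using d unfolding ak by auto
qed

lemma lift_main:
  assumes L1: "L1 \<in> invertible_ideals TAred Rr" and LB: "ideal_prod TAred L1 Bs = Bs"
  shows "\<exists>M \<in> invertible_ideals TA Rs. \<phi> ` M = L1"
proof -
  have L1r: "rsubmodule TAred Rr L1" using L1 T'.invertible_rsub by blast
  have L1c: "L1 \<subseteq> carrier TAred" using L1r T'.rsub_carrier by blast
  obtain L1' where L1': "rsubmodule TAred Rr L1'" "ideal_prod TAred L1 L1' = Rr" using L1 unfolding invertible_ideals_def by auto
  have L1'c: "L1' \<subseteq> carrier TAred" using L1' T'.rsub_carrier by blast
  have L1'B: "ideal_prod TAred L1' Bs = Bs"
  proof -
    have "ideal_prod TAred L1' Bs = ideal_prod TAred L1' (ideal_prod TAred L1 Bs)" using LB by simp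
    also have "\<dots> = ideal_prod TAred (ideal_prod TAred L1' L1) Bs" using T'.IP_assoc[OF L1'c L1c Bs_c] by simp
    also have "ideal_prod TAred L1' L1 = Rr" using T'.IP_comm[OF L1'c L1c] L1'(2) by simp
    finally show ?thesis using RrB by simp
  qed
  have one_B: "\<one>\<^bsub>TAred\<^esub> \<in> Bs" using subringE(3)[OF Bs_sub] .
  have inB: "U \<subseteq> Bs" if U: "U \<subseteq> carrier TAred" "ideal_prod TAred U Bs = Bs" for U
  proof
    fix x assume x: "x \<in> U"
    have "x \<otimes>\<^bsub>TAred\<^esub> \<one>\<^bsub>TAred\<^esub> \<in> ideal_prod TAred U Bs" using T'.IP_prod[OF U(1) Bs_c x one_B] .
    then show "x \<in> Bs" using U x by (auto simp: subsetD)
  qed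
  have L1B: "L1 \<subseteq> Bs" using inB[OF L1c LB] .
  have L1'Bs: "L1' \<subseteq> Bs" using inB[OF L1'c L1'B] .
  have "\<one>\<^bsub>TAred\<^esub> \<in> ideal_prod TAred L1 L1'" using L1'(2) subringE(3)[OF Rr_sub] by simp
  then obtain n f g where fg: "\<one>\<^bsub>TAred\<^esub> = finsum TAred (\<lambda>k. f k \<otimes>\<^bsub>TAred\<^esub> g k) {..<(n::nat)}" "\<forall>k<n. f k \<in> L1 \<and> g k \<in> L1'"
    unfolding T'.IP_mem by blast
  have fc: "\<And>k. k < n \<Longrightarrow> f k \<in> carrier TAred" and gc: "\<And>k. k < n \<Longrightarrow> g k \<in> carrier TAred"
    using fg(2) L1c L1'c by auto
  define xt where "xt k = (SOME x. x \<in> carrier TA \<and> \<phi> x = f k)" for k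
  define yt where "yt k = (SOME x. x \<in> carrier TA \<and> \<phi> x = g k)" for k
  have xt: "xt k \<in> carrier TA \<and> \<phi> (xt k) = f k" if k: "k < n" for k
  proof -
    have "f k \<in> \<phi> ` carrier TA" using L1B fg(2) k by auto
    then have "\<exists>x. x \<in> carrier TA \<and> \<phi> x = f k" by (metis imageE)
    then show ?thesis unfolding xt_def by (rule someI_ex)
  qed
  have yt: "yt k \<in> carrier TA \<and> \<phi> (yt k) = g k" if k: "k < n" for k
  proof -
    have "g k \<in> \<phi> ` carrier TA" using L1'Bs fg(2) k by auto
    then have "\<exists>x. x \<in> carrier TA \<and> \<phi> x = g k" by (metis imageE)
    then show ?thesis unfolding yt_def by (rule someI_ex)
  qed
  have xtc: "\<And>k. k < n \<Longrightarrow> xt k \<in> carrier TA" and ytc: "\<And>k. k < n \<Longrightarrow> yt k \<in> carrier TA"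
    using xt yt by auto
  define ar where "ar l k = (SOME a. a \<in> Rs \<and> \<phi> a = \<phi> (xt l \<otimes>\<^bsub>TA\<^esub> yt k))" for l k
  have ar: "ar l k \<in> Rs \<and> \<phi> (ar l k) = \<phi> (xt l \<otimes>\<^bsub>TA\<^esub> yt k)" if lk: "l < n" "k < n" for l k
  proof -
    have "\<phi> (xt l \<otimes>\<^bsub>TA\<^esub> yt k) = f l \<otimes>\<^bsub>TAred\<^esub> g k" using xt yt lk by simp
    also have "\<dots> \<in> ideal_prod TAred L1 L1'" using T'.IP_prod[OF L1c L1'c] fg(2) lk by auto
    finally have "\<phi> (xt l \<otimes>\<^bsub>TA\<^esub> yt k) \<in> \<phi> ` Rs" using L1'(2) Rr_eq by simp
    then have "\<exists>a. a \<in> Rs \<and> \<phi> a = \<phi> (xt l \<otimes>\<^bsub>TA\<^esub> yt k)" by (metis imageE)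
    then show ?thesis unfolding ar_def by (rule someI_ex)
  qed
  have arc: "\<And>l k. l < n \<Longrightarrow> k < n \<Longrightarrow> ar l k \<in> carrier TA" using ar Rs_c by blast
  define \<epsilon> where "\<epsilon> l k = xt l \<otimes>\<^bsub>TA\<^esub> yt k \<ominus>\<^bsub>TA\<^esub> ar l k" for l k
  define \<delta> where "\<delta> = finsum TA (\<lambda>k. xt k \<otimes>\<^bsub>TA\<^esub> yt k) {..<n} \<ominus>\<^bsub>TA\<^esub> \<one>\<^bsub>TA\<^esub>"
  define E where "E = (\<lambda>q. \<epsilon> (fst q) (snd q)) ` ({..<n} \<times> {..<n}) \<union> {\<delta>}"
  have sc: "finsum TA (\<lambda>k. xt k \<otimes>\<^bsub>TA\<^esub> yt k) {..<n} \<in> carrier TA" using xtc ytc by (intro T.finsum_closed) auto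
  have Ec: "E \<subseteq> carrier TA" unfolding E_def \<epsilon>_def \<delta>_def using xtc ytc arc sc by auto
  have Ef: "finite E" unfolding E_def by simp
  have \<epsilon>0: "\<phi> (\<epsilon> l k) = \<zero>\<^bsub>TAred\<^esub>" if lk: "l < n" "k < n" for l k
  proof -
    have "\<phi> (\<epsilon> l k) = \<phi> (xt l \<otimes>\<^bsub>TA\<^esub> yt k) \<ominus>\<^bsub>TAred\<^esub> \<phi> (ar l k)"
      unfolding \<epsilon>_def using xtc ytc arc lk by (simp add: a_minus_def)
    then show ?thesis using ar[OF lk] xtc ytc lk by (simp add: a_minus_def T'.r_neg)
  qed
  have \<delta>0: "\<phi> \<delta> = \<zero>\<^bsub>TAred\<^esub>"
  proof -
    have "\<phi> (finsum TA (\<lambda>k. xt k \<otimes>\<^bsub>TA\<^esub> yt k) {..<n}) = finsum TAred (\<phi> \<circ> (\<lambda>k. xt k \<otimes>\<^bsub>TA\<^esub> yt k)) {..<n}"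
      using xtc ytc by (intro hc.hom_finsum) auto
    also have "\<dots> = finsum TAred (\<lambda>k. f k \<otimes>\<^bsub>TAred\<^esub> g k) {..<n}"
      by (rule T'.finsum_cong'[OF refl]) (use xt yt fc gc in auto)
    finally have "\<phi> (finsum TA (\<lambda>k. xt k \<otimes>\<^bsub>TA\<^esub> yt k) {..<n}) = \<one>\<^bsub>TAred\<^esub>" using fg(1) by simp
    then show ?thesis unfolding \<delta>_def using sc by (simp add: a_minus_def T'.r_neg)
  qed
  have E0: "\<And>e. e \<in> E \<Longrightarrow> \<phi> e = \<zero>\<^bsub>TAred\<^esub>" unfolding E_def using \<epsilon>0 \<delta>0 by auto
  have "\<exists>m::nat. e [^]\<^bsub>TA\<^esub> m = \<zero>\<^bsub>TA\<^esub>" if e: "e \<in> E" for e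
    using ker_nilp[OF _ E0[OF e]] Ec e by auto
  then obtain p :: nat where p: "\<forall>e\<in>E. e [^]\<^bsub>TA\<^esub> p = \<zero>\<^bsub>TA\<^esub>" using T.common_exp[OF Ef Ec] by blast
  have LC: "liftctx TA Rs E p"
  proof (intro liftctx.intro liftctx_axioms.intro)
    show "cring TA" by (rule T.is_cring)
    show "subring Rs TA" by (rule Rs_sub)
    show "E \<subseteq> carrier TA" "finite E" by (fact Ec) (fact Ef)
    show "\<And>e. e \<in> E \<Longrightarrow> e [^]\<^bsub>TA\<^esub> p = \<zero>\<^bsub>TA\<^esub>" using p by auto
    show "\<one>\<^bsub>TA\<^esub> \<oplus>\<^bsub>TA\<^esub> r \<in> Units TA \<and> inv\<^bsub>TA\<^esub> (\<one>\<^bsub>TA\<^esub> \<oplus>\<^bsub>TA\<^esub> r) \<in> Rs"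
      if r: "r \<in> Rs" "r \<in> filt TA E 1" for r
      using Rs_nilp_unit[OF r(1) T.filt_nilp[OF Ec Ef _ r(2)]] p by auto
  qed
  interpret LC: liftctx TA Rs E p by (rule LC)
  have fE: "\<And>e. e \<in> E \<Longrightarrow> e \<in> filt TA E 1" using T.filt_self[OF Ec] .
  have pr: "xt l \<otimes>\<^bsub>TA\<^esub> yt k \<in> LC.RD 1" if lk: "l < n" "k < n" for l k
  proof -
    have "xt l \<otimes>\<^bsub>TA\<^esub> yt k = ar l k \<oplus>\<^bsub>TA\<^esub> \<epsilon> l k"
    proof -
      have c: "xt l \<in> carrier TA" "yt k \<in> carrier TA" "ar l k \<in> carrier TA" using xtc ytc arc lk by auto
      then show ?thesis unfolding \<epsilon>_def by algebra
    qed
    moreover have "\<epsilon> l k \<in> E" unfolding E_def using lk by (auto intro!: image_eqI[of _ _ "(l, k)"])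
    then have "\<epsilon> l k \<in> filt TA E 1" using fE by blast
    ultimately show ?thesis unfolding LC.RD_def using ar[OF lk] by blast
  qed
  have c1: "finsum TA (\<lambda>k. xt k \<otimes>\<^bsub>TA\<^esub> yt k) {..<n} \<ominus>\<^bsub>TA\<^esub> \<one>\<^bsub>TA\<^esub> \<in> filt TA E 1"
    using fE unfolding E_def \<delta>_def by auto
  obtain X1 Y1 where XY: "\<forall>k<n. X1 k \<in> carrier TA \<and> Y1 k \<in> carrier TA \<and> X1 k \<ominus>\<^bsub>TA\<^esub> xt k \<in> filt TA E 1 \<and> Y1 k \<ominus>\<^bsub>TA\<^esub> yt k \<in> filt TA E 1"
    and XYR: "\<forall>l<n. \<forall>k<n. X1 l \<otimes>\<^bsub>TA\<^esub> Y1 k \<in> Rs" and XY1: "finsum TA (\<lambda>k. X1 k \<otimes>\<^bsub>TA\<^esub> Y1 k) {..<n} = \<one>\<^bsub>TA\<^esub>"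
    using LC.lift_exists[of n xt yt, OF xtc ytc pr c1] by blast
  have phiX: "\<phi> (X1 k) = f k" if k: "k < n" for k
  proof -
    have "X1 k \<ominus>\<^bsub>TA\<^esub> xt k \<in> filt TA E 1" using XY k by auto
    then have "\<phi> (X1 k \<ominus>\<^bsub>TA\<^esub> xt k) = \<zero>\<^bsub>TAred\<^esub>" using filt_ker[OF Ec E0] by blast
    then have "\<phi> (X1 k) = \<phi> (xt k)" by (rule phi_eq_of_diff[rotated 2]) (use XY xt k in auto)
    then show ?thesis using xt k by simp
  qed
  have Xc: "X1 ` {..<n} \<subseteq> carrier TA" and Yc: "Y1 ` {..<n} \<subseteq> carrier TA" using XY by auto
  define M where "M = ideal_prod TA Rs (X1 ` {..<n})"
  define M' where "M' = ideal_prod TA Rs (Y1 ` {..<n})"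
  have Rsr: "rsubmodule TA Rs Rs" using T.subring_rsub[OF Rs_sub] .
  have Mr: "rsubmodule TA Rs M" unfolding M_def using T.IP_rsub[OF Rs_c Rsr Xc] .
  have M'r: "rsubmodule TA Rs M'" unfolding M'_def using T.IP_rsub[OF Rs_c Rsr Yc] .
  have XYsub: "ideal_prod TA (X1 ` {..<n}) (Y1 ` {..<n}) \<subseteq> Rs"
  proof (rule T.IP_minimal2[OF Xc Yc])
    show "\<zero>\<^bsub>TA\<^esub> \<in> Rs" using subringE(2)[OF Rs_sub] .
    show "a \<oplus>\<^bsub>TA\<^esub> b \<in> Rs" if "a \<in> Rs" "b \<in> Rs" for a b using subringE(7)[OF Rs_sub] that .
    show "x \<otimes>\<^bsub>TA\<^esub> y \<in> Rs" if "x \<in> X1 ` {..<n}" "y \<in> Y1 ` {..<n}" for x y using that XYR by auto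
  qed
  have oneXY: "\<one>\<^bsub>TA\<^esub> \<in> ideal_prod TA (X1 ` {..<n}) (Y1 ` {..<n})"
    unfolding T.IP_mem using XY1[symmetric] by blast
  have XYc: "ideal_prod TA (X1 ` {..<n}) (Y1 ` {..<n}) \<subseteq> carrier TA" using T.IP_carrier[OF Xc Yc] .
  have "ideal_prod TA M M' = ideal_prod TA (ideal_prod TA Rs Rs) (ideal_prod TA (X1 ` {..<n}) (Y1 ` {..<n}))"
    unfolding M_def M'_def using T.IP_swap[OF Rs_c Xc Rs_c Yc] .
  also have "ideal_prod TA Rs Rs = Rs" using T.rsub_IP[OF Rs_sub Rsr] .
  finally have MM: "ideal_prod TA M M' = ideal_prod TA Rs (ideal_prod TA (X1 ` {..<n}) (Y1 ` {..<n}))" .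
  have "ideal_prod TA M M' = Rs"
  proof
    show "ideal_prod TA M M' \<subseteq> Rs" unfolding MM
      using T.IP_mono[OF order_refl XYsub] T.rsub_IP[OF Rs_sub Rsr] by auto
    show "Rs \<subseteq> ideal_prod TA M M'"
    proof
      fix r assume r: "r \<in> Rs"
      have "r \<otimes>\<^bsub>TA\<^esub> \<one>\<^bsub>TA\<^esub> \<in> ideal_prod TA Rs (ideal_prod TA (X1 ` {..<n}) (Y1 ` {..<n}))"
        using T.IP_prod[OF Rs_c XYc r oneXY] .
      then show "r \<in> ideal_prod TA M M'" unfolding MM using r Rs_c by (auto simp: subsetD)
    qed
  qed
  then have Minv: "M \<in> invertible_ideals TA Rs" using Mr M'r unfolding invertible_ideals_def by blast
  have fL: "f ` {..<n} \<subseteq> L1" using fg(2) by auto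
  have fLc: "f ` {..<n} \<subseteq> carrier TAred" using fL L1c by auto
  have "\<phi> ` M = ideal_prod TAred (\<phi> ` Rs) (\<phi> ` X1 ` {..<n})" unfolding M_def using T.IP_image[OF T'.is_cring phi Rs_c Xc] .
  also have "\<phi> ` X1 ` {..<n} = f ` {..<n}" using phiX by (auto simp: image_image)
  finally have pM: "\<phi> ` M = ideal_prod TAred Rr (f ` {..<n})" unfolding Rr_eq .
  have "\<phi> ` M = L1"
  proof
    show "\<phi> ` M \<subseteq> L1" unfolding pM using T'.IP_mono[OF order_refl fL] T'.rsub_IP[OF Rr_sub L1r] by auto
    show "L1 \<subseteq> \<phi> ` M"
    proof
      fix l assume l: "l \<in> L1"
      have lc: "l \<in> carrier TAred" using l L1c by auto
      have "l = l \<otimes>\<^bsub>TAred\<^esub> finsum TAred (\<lambda>k. f k \<otimes>\<^bsub>TAred\<^esub> g k) {..<n}" using lc by (simp add: fg(1)[symmetric])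
      also have "\<dots> = finsum TAred (\<lambda>k. l \<otimes>\<^bsub>TAred\<^esub> (f k \<otimes>\<^bsub>TAred\<^esub> g k)) {..<n}"
        using fc gc lc by (intro T'.finsum_rdistr) auto
      also have "\<dots> = finsum TAred (\<lambda>k. (l \<otimes>\<^bsub>TAred\<^esub> g k) \<otimes>\<^bsub>TAred\<^esub> f k) {..<n}"
      proof (rule T'.finsum_cong'[OF refl])
        show "(\<lambda>k. (l \<otimes>\<^bsub>TAred\<^esub> g k) \<otimes>\<^bsub>TAred\<^esub> f k) \<in> {..<n} \<rightarrow> carrier TAred" using fc gc lc by auto
        fix k assume "k \<in> {..<n}"
        then have c: "f k \<in> carrier TAred" "g k \<in> carrier TAred" using fc gc by auto
        show "l \<otimes>\<^bsub>TAred\<^esub> (f k \<otimes>\<^bsub>TAred\<^esub> g k) = (l \<otimes>\<^bsub>TAred\<^esub> g k) \<otimes>\<^bsub>TAred\<^esub> f k"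
          using c lc by algebra
      qed
      finally have le: "l = finsum TAred (\<lambda>k. (l \<otimes>\<^bsub>TAred\<^esub> g k) \<otimes>\<^bsub>TAred\<^esub> f k) {..<n}" .
      have "\<forall>k<n. l \<otimes>\<^bsub>TAred\<^esub> g k \<in> Rr \<and> f k \<in> f ` {..<n}"
      proof (intro allI impI conjI)
        fix k assume k: "k < n"
        have "g k \<in> L1'" using fg(2) k by simp
        then show "l \<otimes>\<^bsub>TAred\<^esub> g k \<in> Rr" using T'.IP_prod[OF L1c L1'c l] L1'(2) by simp
        show "f k \<in> f ` {..<n}" using k by simp
      qed
      then have "l \<in> ideal_prod TAred Rr (f ` {..<n})" unfolding T'.IP_mem
        by (intro exI[of _ n] exI[of _ "\<lambda>k. l \<otimes>\<^bsub>TAred\<^esub> g k"] exI[of _ f] conjI le)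
      then show "l \<in> \<phi> ` M" unfolding pM .
    qed
  qed
  then show ?thesis using Minv by blast
qed

end

context mainctx begin

lemma lift_core:
  assumes L: "L \<in> invertible_ideals TAred Rr" and P: "\<psi>2 L \<in> H3"
  shows "\<exists>M \<in> invertible_ideals TA Rs. H2 #>\<^bsub>G2\<^esub> L = H2 #>\<^bsub>G2\<^esub> \<psi>1 M"
proof -
  interpret G2: comm_group G2 by (rule groups(2))
  have Lc: "L \<subseteq> carrier TAred" using L T'.inv_carrier by blast
  have Lr: "rsubmodule TAred Rr L" using L T'.invertible_rsub by blast
  obtain y where y: "y \<in> Units TAred" "ideal_prod TAred L Bs = T'.prin Bs y"
    using P unfolding psi2_eq T'.principal_ideals_eq by auto
  define z where "z = inv\<^bsub>TAred\<^esub> y"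
  have z: "z \<in> Units TAred" unfolding z_def using y by simp
  have yc: "y \<in> carrier TAred" and zc: "z \<in> carrier TAred" using y z by auto
  have yz: "y \<otimes>\<^bsub>TAred\<^esub> z = \<one>\<^bsub>TAred\<^esub>" "z \<otimes>\<^bsub>TAred\<^esub> y = \<one>\<^bsub>TAred\<^esub>" unfolding z_def using y by auto
  define P where "P = T'.prin Rr z"
  have Pinv: "P \<in> invertible_ideals TAred Rr" unfolding P_def using T'.prin_inv[OF Rr_sub z] .
  have Pc: "P \<subseteq> carrier TAred" using T'.inv_carrier[OF Pinv] .
  define L1 where "L1 = ideal_prod TAred L P"
  have "L \<otimes>\<^bsub>G2\<^esub> P \<in> carrier G2" using L Pinv by (intro G2.m_closed) auto
  then have L1inv: "L1 \<in> invertible_ideals TAred Rr" unfolding L1_def by simp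
  have "ideal_prod TAred L1 Bs = ideal_prod TAred (ideal_prod TAred L P) (ideal_prod TAred Bs Bs)"
    unfolding L1_def using BB by simp
  also have "\<dots> = ideal_prod TAred (ideal_prod TAred L Bs) (ideal_prod TAred P Bs)"
    using T'.IP_swap[OF Lc Pc Bs_c Bs_c] .
  also have "ideal_prod TAred P Bs = T'.prin Bs z" unfolding P_def using T'.prin_IP_sub[OF Rr_sub Bs_sub Rr_Bs zc] .
  also have "ideal_prod TAred (ideal_prod TAred L Bs) (T'.prin Bs z) = T'.prin Bs (y \<otimes>\<^bsub>TAred\<^esub> z)"
    using y(2) T'.prin_mult[OF Bs_sub yc zc] by simp
  also have "\<dots> = Bs" using yz T'.prin_one[OF Bs_sub] by simp
  finally have L1B: "ideal_prod TAred L1 Bs = Bs" .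
  obtain M where M: "M \<in> invertible_ideals TA Rs" "\<phi> ` M = L1" using lift_main[OF L1inv L1B] by blast
  have psiM: "\<psi>1 M = L1" using psi1_eq[OF M(1)] M(2) by simp
  have Yc: "T'.prin Rr y \<subseteq> carrier TAred" using T'.prin_carrier[OF Rr_sub yc] .
  have "ideal_prod TAred L1 (T'.prin Rr y) = ideal_prod TAred L (ideal_prod TAred P (T'.prin Rr y))"
    unfolding L1_def using T'.IP_assoc[OF Lc Pc Yc] .
  also have "ideal_prod TAred P (T'.prin Rr y) = Rr"
    unfolding P_def using T'.prin_mult[OF Rr_sub zc yc] yz T'.prin_one[OF Rr_sub] by simp
  also have "ideal_prod TAred L Rr = L" using T'.IP_comm[OF Lc Rr_c] T'.rsub_IP[OF Rr_sub Lr] by simp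
  finally have "L = ideal_prod TAred L1 (T'.prin Rr y)" by simp
  also have "\<dots> = ideal_prod TAred (T'.prin Rr y) L1" using T'.IP_comm[OF T'.inv_carrier[OF L1inv] Yc] .
  finally have Leq: "L = T'.prin Rr y \<otimes>\<^bsub>G2\<^esub> \<psi>1 M" using psiM by simp
  have "T'.prin Rr y \<in> H2" using y unfolding T'.principal_ideals_eq by auto
  then have "L \<in> H2 #>\<^bsub>G2\<^esub> \<psi>1 M" unfolding Leq r_coset_def by blast
  moreover have "\<psi>1 M \<in> carrier G2" using psiM L1inv by simp
  ultimately have "H2 #>\<^bsub>G2\<^esub> \<psi>1 M = H2 #>\<^bsub>G2\<^esub> L" using G2.repr_independence groups(5) by blast
  then show ?thesis using M(1) by auto
qed

lemma final_part:
  shows "(let C1 = class_group TA (i ` carrier A);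
               C2 = class_group TAred (j ` carrier (reduced_ring A));
               C3 = class_group TAred (\<phi> ` carrier TA)
           in \<exists>f g.
                f \<in> hom C1 C2 \<and> g \<in> hom C2 C3 \<and>
                (\<forall>L \<in> invertible_ideals TA (i ` carrier A).
                   f (ideal_class TA (i ` carrier A) L) =
                   ideal_class TAred (j ` carrier (reduced_ring A))
                     (induced_ideal TAred (j ` carrier (reduced_ring A)) \<phi> L)) \<and>
                (\<forall>L \<in> invertible_ideals TAred (j ` carrier (reduced_ring A)).
                   g (ideal_class TAred (j ` carrier (reduced_ring A)) L) =
                   ideal_class TAred (\<phi> ` carrier TA)
                     (induced_ideal TAred (\<phi> ` carrier TA) id L)) \<and>
                inj_on f (carrier C1) \<and>
                f ` carrier C1 = kernel C2 C3 g)"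
proof -
  interpret G1: comm_group G1 by (rule groups(1))
  interpret G2: comm_group G2 by (rule groups(2))
  interpret G3: comm_group G3 by (rule groups(3))
  define f where "f = qmap G1 H1 G2 H2 \<psi>1"
  define g where "g = qmap G2 H2 G3 H3 \<psi>2"
  have fhom: "f \<in> hom (G1 Mod H1) (G2 Mod H2)"
    unfolding f_def using qmap_hom[OF groups(1,2,4,5) psi1_hom psi1_H] .
  have ghom: "g \<in> hom (G2 Mod H2) (G3 Mod H3)"
    unfolding g_def using qmap_hom[OF groups(2,3,5,6) psi2_hom psi2_H] .
  have fev: "f (H1 #>\<^bsub>G1\<^esub> L) = H2 #>\<^bsub>G2\<^esub> \<psi>1 L" if "L \<in> carrier G1" for L
    unfolding f_def using qmap_eval[OF G1.is_group G2.is_group groups(4,5) psi1_hom psi1_H that] .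
  have gev: "g (H2 #>\<^bsub>G2\<^esub> L) = H3 #>\<^bsub>G3\<^esub> \<psi>2 L" if "L \<in> carrier G2" for L
    unfolding g_def using qmap_eval[OF G2.is_group G3.is_group groups(5,6) psi2_hom psi2_H that] .
  have finj: "inj_on f (carrier (G1 Mod H1))"
    unfolding f_def using qmap_inj[OF groups(1,2,4,5) psi1_hom psi1_H] inj_core by simp
  have H3c: "subgroup H3 G3" by (rule groups(6))
  have img: "f ` carrier (G1 Mod H1) = kernel (G2 Mod H2) (G3 Mod H3) g"
  proof
    show "f ` carrier (G1 Mod H1) \<subseteq> kernel (G2 Mod H2) (G3 Mod H3) g"
    proof
      fix Y assume "Y \<in> f ` carrier (G1 Mod H1)"
      then obtain Q where Q: "Q \<in> carrier (G1 Mod H1)" "Y = f Q" by auto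
      then obtain M where M: "M \<in> carrier G1" "Q = H1 #>\<^bsub>G1\<^esub> M" unfolding FactGroup_def RCOSETS_def by auto
      have Yc: "Y \<in> carrier (G2 Mod H2)" using Q fhom unfolding hom_def by auto
      have psi1M: "\<psi>1 M \<in> carrier G2" using psi1_hom M(1) unfolding hom_def by auto
      have "g Y = H3 #>\<^bsub>G3\<^esub> \<psi>2 (\<psi>1 M)" using Q M fev gev psi1M by simp
      also have "\<psi>2 (\<psi>1 M) = Bs" using comp_core M(1) by simp
      also have "H3 #>\<^bsub>G3\<^esub> Bs = H3"
      proof -
        have "Bs = T'.prin Bs \<one>\<^bsub>TAred\<^esub>" using T'.prin_one[OF Bs_sub] by simp
        then have BH: "Bs \<in> H3" unfolding T'.principal_ideals_eq by auto
        moreover have "Bs \<in> carrier G3" using subgroup.subset[OF H3c] BH by blast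
        ultimately show ?thesis using rcos_eq_H[OF G3.is_group H3c] by simp
      qed
      finally show "Y \<in> kernel (G2 Mod H2) (G3 Mod H3) g" using Yc unfolding kernel_def FactGroup_def by simp
    qed
    show "kernel (G2 Mod H2) (G3 Mod H3) g \<subseteq> f ` carrier (G1 Mod H1)"
    proof
      fix Y assume "Y \<in> kernel (G2 Mod H2) (G3 Mod H3) g"
      then have Yc: "Y \<in> carrier (G2 Mod H2)" and gY: "g Y = H3" unfolding kernel_def FactGroup_def by auto
      then obtain L where L: "L \<in> carrier G2" "Y = H2 #>\<^bsub>G2\<^esub> L" unfolding FactGroup_def RCOSETS_def by auto
      have psi2L: "\<psi>2 L \<in> carrier G3" using psi2_hom L(1) unfolding hom_def by auto
      have "H3 #>\<^bsub>G3\<^esub> \<psi>2 L = H3" using gY gev L by simp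
      then have "\<psi>2 L \<in> H3" using rcos_eq_H[OF G3.is_group H3c psi2L] by simp
      then obtain M where M: "M \<in> invertible_ideals TA Rs" "H2 #>\<^bsub>G2\<^esub> L = H2 #>\<^bsub>G2\<^esub> \<psi>1 M"
        using lift_core L(1) by auto
      have "f (H1 #>\<^bsub>G1\<^esub> M) = Y" using fev M L by simp
      moreover have "H1 #>\<^bsub>G1\<^esub> M \<in> carrier (G1 Mod H1)"
        using M(1) G1.rcosetsI[OF subgroup.subset[OF groups(4)]] unfolding FactGroup_def by simp
      ultimately show "Y \<in> f ` carrier (G1 Mod H1)" by blast
    qed
  qed
  show ?thesis
    unfolding Let_def class_group_def ideal_class_def
    apply (rule exI[of _ f], rule exI[of _ g])
    using fhom ghom finj img fev gev by simp
qed

end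

theorem corollary5p6:
  fixes A :: "('a, 'm) ring_scheme"
    and TA :: "('b, 'n) ring_scheme" and i :: "'a \<Rightarrow> 'b"
    and TAred :: "('c, 'o) ring_scheme" and j :: "'a set \<Rightarrow> 'c"
  assumes "cring A"
    and "total_ring_of_fractions A TA i"
    and "total_ring_of_fractions (reduced_ring A) TAred j"
  shows "(\<exists>\<phi>. \<phi> \<in> ring_hom TA TAred \<and>
            (\<forall>a \<in> carrier A. \<phi> (i a) = j (nilradical A +>\<^bsub>A\<^esub> a)))
       \<and> (\<forall>\<phi>. \<phi> \<in> ring_hom TA TAred \<and>
            (\<forall>a \<in> carrier A. \<phi> (i a) = j (nilradical A +>\<^bsub>A\<^esub> a)) \<longrightarrow>
          (let C1 = class_group TA (i ` carrier A);
               C2 = class_group TAred (j ` carrier (reduced_ring A));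
               C3 = class_group TAred (\<phi> ` carrier TA)
           in \<exists>f g.
                f \<in> hom C1 C2 \<and> g \<in> hom C2 C3 \<and>
                (\<forall>L \<in> invertible_ideals TA (i ` carrier A).
                   f (ideal_class TA (i ` carrier A) L) =
                   ideal_class TAred (j ` carrier (reduced_ring A))
                     (induced_ideal TAred (j ` carrier (reduced_ring A)) \<phi> L)) \<and>
                (\<forall>L \<in> invertible_ideals TAred (j ` carrier (reduced_ring A)).
                   g (ideal_class TAred (j ` carrier (reduced_ring A)) L) =
                   ideal_class TAred (\<phi> ` carrier TA)
                     (induced_ideal TAred (\<phi> ` carrier TA) id L)) \<and>
                inj_on f (carrier C1) \<and>
                f ` carrier C1 = kernel C2 C3 g))"
proof (intro conjI allI impI)
  show "\<exists>\<phi>. \<phi> \<in> ring_hom TA TAred \<and> (\<forall>a \<in> carrier A. \<phi> (i a) = j (nilradical A +>\<^bsub>A\<^esub> a))"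
    using phi_exists[OF assms] .
next
  fix \<phi> assume h: "\<phi> \<in> ring_hom TA TAred \<and> (\<forall>a \<in> carrier A. \<phi> (i a) = j (nilradical A +>\<^bsub>A\<^esub> a))"
  have "mainctx A TA i TAred j \<phi>" unfolding mainctx_def using assms h by auto
  then show "(let C1 = class_group TA (i ` carrier A);
               C2 = class_group TAred (j ` carrier (reduced_ring A));
               C3 = class_group TAred (\<phi> ` carrier TA)
           in \<exists>f g.
                f \<in> hom C1 C2 \<and> g \<in> hom C2 C3 \<and>
                (\<forall>L \<in> invertible_ideals TA (i ` carrier A).
                   f (ideal_class TA (i ` carrier A) L) =
                   ideal_class TAred (j ` carrier (reduced_ring A))
                     (induced_ideal TAred (j ` carrier (reduced_ring A)) \<phi> L)) \<and>
                (\<forall>L \<in> invertible_ideals TAred (j ` carrier (reduced_ring A)).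
                   g (ideal_class TAred (j ` carrier (reduced_ring A)) L) =
                   ideal_class TAred (\<phi> ` carrier TA)
                     (induced_ideal TAred (\<phi> ` carrier TA) id L)) \<and>
                inj_on f (carrier C1) \<and>
                f ` carrier C1 = kernel C2 C3 g)" by (rule mainctx.final_part)
qed


end
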